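(* Suppose Assumptions (A1), (A2), (A5) and (A7) hold, and that $L$ is strictly convex in $v$. Let $x_0\in\mathbb{R}$, $\varpi\in\mathbb{H}_{\mathbb{F}}$, and let $(X^*,P,Z)$, with $X^*,P,Z\in\mathbb{H}_{\mathbb{F}}$, solve on $[0,T]$ $$dX_t=-H_p(X_t,P_t+\varpi_t)\,dt,\quad X_0=x_0,\qquad dP_t=H_x(X_t,P_t+\varpi_t)\,dt+Z_t\,dW_t,\quad P_T=\Psi'(X_T).$$ Define $v^*=-H_p(X^*,P+\varpi)$. Then $v^*$ attains $$\inf_{v\in\mathbb{H}_{\mathbb{F}}} \mathbb{E}\left[\int_0^T \big(L(X_t,v_t)+\varpi_t v_t\big)\,dt+\Psi(X_T)\right],\qquad X_t=x_0+\int_0^t v_s\,ds.$$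
   Context: Fix $T>0$ and a complete filtered probability space $(\Omega,\mathcal{F},\mathbb{F},\mathbb{P})$, where $\mathbb{F}$ is the standard filtration generated by a one-dimensional Brownian motion $W$. $\mathbb{H}_{\mathbb{F}}$ denotes the Hilbert space of measurable, $\mathbb{F}$-adapted processes $v:[0,T]\times\Omega\to\mathbb{R}$ with $\mathbb{E}[\int_0^T v_t^2dt]<\infty$. The Hamiltonian is $H(x,p)=\sup_{v\in\mathbb{R}}\{-pv-L(x,v)\}$. (A1) $L\in C^1(\mathbb{R}^2;[0,\infty))$ and $(x,v)\mapsto L(x,v)$ is convex. (A2) $\Psi\in C^1(\mathbb{R};[0,\infty))$ is convex. (A5) There are $\alpha>0$, $\beta\ge0$ with $\alpha|v|^2-\beta\le L(x,v)$ for all $x,v$. (A7) There is $C>0$ with $|H_p(x,p)|\le C(1+|p|)$ for all $(x,p)$. *)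

theory Defs
  imports "HOL-Probability.Probability"
begin

definition gen_sets :: "'a measure \<Rightarrow> (real \<Rightarrow> 'a \<Rightarrow> real) \<Rightarrow> real \<Rightarrow> 'a set set" where
  "gen_sets M W t = sigma_sets (space M)
     (\<Union>r\<in>{0..t}. {W r -` B \<inter> space M | B. B \<in> sets (borel :: real measure)})"

definition std_filtration :: "'a measure \<Rightarrow> (real \<Rightarrow> 'a \<Rightarrow> real) \<Rightarrow> real \<Rightarrow> 'a set set" where
  "std_filtration M W t = {A \<in> sets M. \<exists>B \<in> gen_sets M W t. (A - B) \<union> (B - A) \<in> null_sets M}"

definition brownian_motion :: "'a measure \<Rightarrow> (real \<Rightarrow> 'a \<Rightarrow> real) \<Rightarrow> bool" where
  "brownian_motion M W \<longleftrightarrow> prob_space M \<and>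
     (\<forall>t. W t \<in> borel_measurable M) \<and>
     (AE \<omega> in M. W 0 \<omega> = 0 \<and> continuous_on {0..} (\<lambda>t. W t \<omega>)) \<and>
     (\<forall>s t. 0 \<le> s \<longrightarrow> s < t \<longrightarrow>
        distributed M lborel (\<lambda>\<omega>. W t \<omega> - W s \<omega>) (\<lambda>x. ennreal (normal_density 0 (sqrt (t - s)) x)) \<and>
        prob_space.indep_set M (gen_sets M W s)
          {(\<lambda>\<omega>. W t \<omega> - W s \<omega>) -` B \<inter> space M | B. B \<in> sets (borel :: real measure)})"

definition adapted_to :: "'a measure \<Rightarrow> (real \<Rightarrow> 'a \<Rightarrow> real) \<Rightarrow> real \<Rightarrow> (real \<Rightarrow> 'a \<Rightarrow> real) \<Rightarrow> bool" where
  "adapted_to M W T v \<longleftrightarrow>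
     (\<forall>t\<in>{0..T}. \<forall>B \<in> sets (borel :: real measure). v t -` B \<inter> space M \<in> std_filtration M W t)"

definition HF :: "'a measure \<Rightarrow> (real \<Rightarrow> 'a \<Rightarrow> real) \<Rightarrow> real \<Rightarrow> (real \<Rightarrow> 'a \<Rightarrow> real) set" where
  "HF M W T = {v. (\<lambda>(t, \<omega>). v t \<omega>) \<in> borel_measurable (restrict_space lborel {0..T} \<Otimes>\<^sub>M M)
      \<and> adapted_to M W T v
      \<and> (\<integral>\<^sup>+ \<omega>. (\<integral>\<^sup>+ t. ennreal ((v t \<omega>)\<^sup>2) * indicator {0..T} t \<partial>lborel) \<partial>M) < \<infinity>}"

definition simple_ito :: "'a measure \<Rightarrow> (real \<Rightarrow> 'a \<Rightarrow> real) \<Rightarrow> real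
      \<Rightarrow> (real \<Rightarrow> 'a \<Rightarrow> real) \<Rightarrow> (real \<Rightarrow> 'a \<Rightarrow> real) \<Rightarrow> bool" where
  "simple_ito M W T S I \<longleftrightarrow>
     (\<exists>(k::nat) (tt::nat \<Rightarrow> real) (\<xi>::nat \<Rightarrow> 'a \<Rightarrow> real).
        tt 0 = 0 \<and> tt k = T \<and> (\<forall>i<k. tt i < tt (Suc i)) \<and>
        (\<forall>i<k. \<xi> i \<in> borel_measurable M \<and>
           (\<forall>B \<in> sets (borel :: real measure). \<xi> i -` B \<inter> space M \<in> std_filtration M W (tt i)) \<and>
           (\<integral>\<^sup>+ \<omega>. ennreal ((\<xi> i \<omega>)\<^sup>2) \<partial>M) < \<infinity>) \<and>
        S = (\<lambda>t \<omega>. \<Sum>i<k. \<xi> i \<omega> * indicator {tt i<..tt (Suc i)} t) \<and>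
        I = (\<lambda>t \<omega>. \<Sum>i<k. \<xi> i \<omega> * (W (min t (tt (Suc i))) \<omega> - W (min t (tt i)) \<omega>)))"

definition ito_integral :: "'a measure \<Rightarrow> (real \<Rightarrow> 'a \<Rightarrow> real) \<Rightarrow> real
      \<Rightarrow> (real \<Rightarrow> 'a \<Rightarrow> real) \<Rightarrow> (real \<Rightarrow> 'a \<Rightarrow> real) \<Rightarrow> bool" where
  "ito_integral M W T Z I \<longleftrightarrow>
     (\<exists>Sn In. (\<forall>n. simple_ito M W T (Sn n) (In n)) \<and>
        ((\<lambda>n. \<integral>\<^sup>+ \<omega>. (\<integral>\<^sup>+ t. ennreal ((Sn n t \<omega> - Z t \<omega>)\<^sup>2) * indicator {0..T} t \<partial>lborel) \<partial>M)
           \<longlonglongrightarrow> 0) \<and>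
        (\<forall>t\<in>{0..T}. (\<lambda>n. \<integral>\<^sup>+ \<omega>. ennreal ((In n t \<omega> - I t \<omega>)\<^sup>2) \<partial>M) \<longlonglongrightarrow> 0))"

definition Ham :: "(real \<Rightarrow> real \<Rightarrow> real) \<Rightarrow> real \<Rightarrow> real \<Rightarrow> real" where
  "Ham L x p = (SUP v\<in>(UNIV::real set). - p * v - L x v)"

definition Ham_p :: "(real \<Rightarrow> real \<Rightarrow> real) \<Rightarrow> real \<Rightarrow> real \<Rightarrow> real" where
  "Ham_p L x p = deriv (\<lambda>q. Ham L x q) p"

definition Ham_x :: "(real \<Rightarrow> real \<Rightarrow> real) \<Rightarrow> real \<Rightarrow> real \<Rightarrow> real" where
  "Ham_x L x p = deriv (\<lambda>y. Ham L y p) x"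

definition state :: "real \<Rightarrow> (real \<Rightarrow> 'a \<Rightarrow> real) \<Rightarrow> real \<Rightarrow> 'a \<Rightarrow> real" where
  "state x0 v t \<omega> = x0 + (LINT s:{0..t}|lborel. v s \<omega>)"

definition cost :: "'a measure \<Rightarrow> real \<Rightarrow> (real \<Rightarrow> real \<Rightarrow> real) \<Rightarrow> (real \<Rightarrow> real) \<Rightarrow> real
     \<Rightarrow> (real \<Rightarrow> 'a \<Rightarrow> real) \<Rightarrow> (real \<Rightarrow> 'a \<Rightarrow> real) \<Rightarrow> ereal" where
  "cost M T L \<Psi> x0 \<theta> v =
     enn2ereal (\<integral>\<^sup>+ \<omega>. ((\<integral>\<^sup>+ t. ennreal (L (state x0 v t \<omega>) (v t \<omega>)) * indicator {0..T} t \<partial>lborel)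
                        + ennreal (\<Psi> (state x0 v T \<omega>))) \<partial>M)
     + ereal (\<integral> \<omega>. (LINT t:{0..T}|lborel. \<theta> t \<omega> * v t \<omega>) \<partial>M)"

end

theory Submission
  imports Defs
begin

locale lag =
  fixes L :: "real \<Rightarrow> real \<Rightarrow> real" and L' :: "real \<times> real \<Rightarrow> ((real \<times> real) \<Rightarrow>\<^sub>L real)"
    and \<alpha> \<beta> :: real
  assumes Lder: "\<And>z. ((\<lambda>z. L (fst z) (snd z)) has_derivative blinfun_apply (L' z)) (at z)"
    and L'cont: "continuous_on UNIV L'"
    and Lnn: "\<And>x v. L x v \<ge> 0"
    and Lconv: "convex_on UNIV (\<lambda>z. L (fst z) (snd z))"
    and apos: "\<alpha> > 0" and bnn: "\<beta> \<ge> 0" and coer: "\<And>x v. \<alpha> * v\<^sup>2 - \<beta> \<le> L x v"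
    and strict: "\<And>x u w t. u \<noteq> w \<Longrightarrow> 0 < t \<Longrightarrow> t < 1 \<Longrightarrow>
                   L x (t * u + (1 - t) * w) < t * L x u + (1 - t) * L x w"
begin

definition f :: "real \<Rightarrow> real \<Rightarrow> real \<Rightarrow> real" where
  "f x p v = - p * v - L x v"

lemma Lcont2: "continuous_on UNIV (\<lambda>z. L (fst z) (snd z))"
  by (rule continuous_at_imp_continuous_on) (use Lder has_derivative_continuous in blast)

lemma Lcont_v: "continuous_on S (L x)"
proof -
  have "continuous_on S ((\<lambda>z. L (fst z) (snd z)) \<circ> (\<lambda>v. (x, v)))"
    by (intro continuous_on_compose continuous_intros continuous_on_subset[OF Lcont2]) auto
  then show ?thesis by (simp add: o_def)
qed

lemma Lcont_x: "continuous_on S (\<lambda>y. L y v)"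
proof -
  have "continuous_on S ((\<lambda>z. L (fst z) (snd z)) \<circ> (\<lambda>y. (y, v)))"
    by (intro continuous_on_compose continuous_intros continuous_on_subset[OF Lcont2]) auto
  then show ?thesis by (simp add: o_def)
qed

lemma f_upper: "f x p v \<le> \<beta> + p\<^sup>2 / (4 * \<alpha>)"
proof -
  have "0 \<le> (2 * \<alpha> * v + p)\<^sup>2" by simp
  then have "- p * v - \<alpha> * v\<^sup>2 \<le> p\<^sup>2 / (4 * \<alpha>)"
    using apos by (simp add: field_simps power2_eq_square)
  then show ?thesis using coer[of v x] unfolding f_def by linarith
qed

lemma f_far: 
  assumes "\<bar>w\<bar> \<ge> 1" "\<bar>w\<bar> > (\<bar>p\<bar> + \<beta> + c) / \<alpha>" "c \<ge> 0"
  shows "f x p w < - c"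
proof -
  have "(\<bar>p\<bar> + \<beta> + c) < \<alpha> * \<bar>w\<bar>" using assms apos by (simp add: field_simps)
  then have "(\<bar>p\<bar> + \<beta> + c) * \<bar>w\<bar> < \<alpha> * \<bar>w\<bar> * \<bar>w\<bar>" using assms by (intro mult_strict_right_mono) auto
  moreover have "\<beta> + c \<le> (\<beta> + c) * \<bar>w\<bar>" using assms bnn by (simp add: mult_le_cancel_left1)
  moreover have "- p * w \<le> \<bar>p\<bar> * \<bar>w\<bar>" by (metis abs_ge_self abs_minus abs_mult minus_mult_left)
  moreover have "\<alpha> * \<bar>w\<bar> * \<bar>w\<bar> = \<alpha> * w\<^sup>2" by (simp add: power2_eq_square abs_mult_self)
  ultimately have "- p * w - \<alpha> * w\<^sup>2 + \<beta> < - c" by (simp add: algebra_simps power2_eq_square)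
  then show ?thesis using coer[of w x] unfolding f_def by linarith
qed

lemma max_exists: "\<exists>v. \<forall>w. f x p w \<le> f x p v"
proof -
  define c where "c = L x 0"
  have c0: "c \<ge> 0" using Lnn c_def by auto
  define R where "R = max 1 ((\<bar>p\<bar> + \<beta> + c) / \<alpha>)"
  have "continuous_on (cball 0 R) (f x p)"
    unfolding f_def by (intro continuous_intros Lcont_v)
  then obtain v where v: "v \<in> cball 0 R" "\<And>y. y \<in> cball 0 R \<Longrightarrow> f x p y \<le> f x p v"
    using continuous_attains_sup[of "cball 0 R" "f x p"] R_def by fastforce
  have "f x p 0 = - c" unfolding f_def c_def by simp
  moreover have "0 \<in> cball (0::real) R" using R_def by simp
  ultimately have v0: "- c \<le> f x p v" using v by metis
  show ?thesis
  proof (intro exI allI)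
    fix w show "f x p w \<le> f x p v"
    proof (cases "w \<in> cball 0 R")
      case True then show ?thesis using v by auto
    next
      case False
      then have "\<bar>w\<bar> > R" by (simp add: dist_real_def)
      then have "f x p w < - c" using c0 by (intro f_far) (auto simp: R_def)
      then show ?thesis using v0 by linarith
    qed
  qed
qed

definition vo :: "real \<Rightarrow> real \<Rightarrow> real" where
  "vo x p = (SOME v. \<forall>w. f x p w \<le> f x p v)"

lemma vo_max: "f x p w \<le> f x p (vo x p)"
  using someI_ex[OF max_exists[of x p]] unfolding vo_def by blast

lemma f_strict_concave:
  assumes "u \<noteq> w"
  shows "f x p ((u + w) / 2) > (f x p u + f x p w) / 2"
proof -
  have "L x ((1/2) * u + (1 - 1/2) * w) < (1/2) * L x u + (1 - 1/2) * L x w"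
    by (rule strict) (use assms in auto)
  then show ?thesis unfolding f_def by (simp add: field_simps)
qed

lemma max_unique:
  assumes "\<forall>w. f x p w \<le> f x p v"
  shows "v = vo x p"
proof (rule ccontr)
  assume "v \<noteq> vo x p"
  then have "f x p ((v + vo x p) / 2) > (f x p v + f x p (vo x p)) / 2" by (rule f_strict_concave)
  moreover have "f x p ((v + vo x p) / 2) \<le> f x p v" using assms by blast
  moreover have "f x p (vo x p) \<le> f x p v" using assms by blast
  moreover have "f x p v \<le> f x p (vo x p)" by (rule vo_max)
  ultimately have "f x p v = f x p (vo x p)" "f x p ((v + vo x p) / 2) > f x p v" by simp_all
  then show False using \<open>f x p ((v + vo x p) / 2) \<le> f x p v\<close> by simp
qed

lemma Ham_eq: "Ham L x p = f x p (vo x p)"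
proof -
  have "Ham L x p = Sup (range (f x p))" unfolding Ham_def f_def by simp
  also have "\<dots> = f x p (vo x p)"
    by (rule cSup_eq_maximum) (auto intro: vo_max)
  finally show ?thesis .
qed

lemma Ham_ge: "f x p v \<le> Ham L x p"
  using Ham_eq vo_max by simp

lemma f_concave_line:
  assumes "t \<in> {0..1}"
  shows "f x p (t * u + (1 - t) * w) \<ge> t * f x p u + (1 - t) * f x p w"
proof (cases "u = w \<or> t = 0 \<or> t = 1")
  case True then show ?thesis by (auto simp: algebra_simps)
next
  case False
  then have "L x (t * u + (1 - t) * w) < t * L x u + (1 - t) * L x w"
    using assms by (intro strict) auto
  then show ?thesis unfolding f_def by (simp add: algebra_simps)
qed

lemma vo_bound: "\<bar>vo x p\<bar> \<le> max 1 ((\<bar>p\<bar> + \<beta> + L x 0) / \<alpha>)"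
proof (rule ccontr)
  assume "\<not> ?thesis"
  then have "f x p (vo x p) < - L x 0" by (intro f_far) (auto simp: Lnn)
  moreover have "f x p 0 = - L x 0" unfolding f_def by simp
  ultimately show False using vo_max[of x p 0] by linarith
qed

end

context lag begin

lemma gap_pos: "\<epsilon> > 0 \<Longrightarrow> f x p (vo x p + \<epsilon>) < f x p (vo x p)" "\<epsilon> > 0 \<Longrightarrow> f x p (vo x p - \<epsilon>) < f x p (vo x p)"
proof -
  assume e: "\<epsilon> > 0"
  show "f x p (vo x p + \<epsilon>) < f x p (vo x p)"
  proof (rule ccontr)
    assume "\<not> ?thesis"
    then have "\<forall>w. f x p w \<le> f x p (vo x p + \<epsilon>)" using vo_max by (meson not_less order_trans)
    then have "vo x p + \<epsilon> = vo x p" by (rule max_unique)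
    then show False using e by simp
  qed
  show "f x p (vo x p - \<epsilon>) < f x p (vo x p)"
  proof (rule ccontr)
    assume "\<not> ?thesis"
    then have "\<forall>w. f x p w \<le> f x p (vo x p - \<epsilon>)" using vo_max by (meson not_less order_trans)
    then have "vo x p - \<epsilon> = vo x p" by (rule max_unique)
    then show False using e by simp
  qed
qed

lemma far_le:
  assumes e: "\<epsilon> > 0" and w: "\<bar>w - vo x p\<bar> \<ge> \<epsilon>"
  shows "f x p w \<le> max (f x p (vo x p + \<epsilon>)) (f x p (vo x p - \<epsilon>))"
proof -
  define v0 where "v0 = vo x p"
  have fw: "f x p w \<le> f x p v0" unfolding v0_def by (rule vo_max)
  show ?thesis
  proof (cases "w \<ge> v0 + \<epsilon>")
    case True
    define t where "t = \<epsilon> / (w - v0)"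
    have t01: "t \<in> {0..1}" using True e unfolding t_def by (auto simp: field_simps)
    have "t * (w - v0) = \<epsilon>" using True e unfolding t_def by simp
    then have eq: "t * w + (1 - t) * v0 = v0 + \<epsilon>" by (simp add: algebra_simps)
    have "t * f x p w + (1 - t) * f x p v0 \<le> f x p (v0 + \<epsilon>)"
      using f_concave_line[OF t01, of x p w v0] eq by simp
    moreover have "t * f x p w + (1 - t) * f x p w \<le> t * f x p w + (1 - t) * f x p v0"
      using t01 fw by (intro add_left_mono mult_left_mono) auto
    ultimately show ?thesis unfolding v0_def by (simp add: algebra_simps)
  next
    case False
    then have F: "w \<le> v0 - \<epsilon>" using w unfolding v0_def by auto
    define t where "t = \<epsilon> / (v0 - w)"
    have t01: "t \<in> {0..1}" using F e unfolding t_def by (auto simp: field_simps)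
    have "t * (v0 - w) = \<epsilon>" using F e unfolding t_def by simp
    then have eq: "t * w + (1 - t) * v0 = v0 - \<epsilon>" by (simp add: algebra_simps)
    have "t * f x p w + (1 - t) * f x p v0 \<le> f x p (v0 - \<epsilon>)"
      using f_concave_line[OF t01, of x p w v0] eq by simp
    moreover have "t * f x p w + (1 - t) * f x p w \<le> t * f x p w + (1 - t) * f x p v0"
      using t01 fw by (intro add_left_mono mult_left_mono) auto
    ultimately show ?thesis unfolding v0_def by (simp add: algebra_simps)
  qed
qed

lemma vo_cont_at: "isCont (\<lambda>z. vo (fst z) (snd z)) z0"
proof -
  obtain x p where z0: "z0 = (x, p)" by (cases z0)
  define v0 where "v0 = vo x p"
  obtain ys where ys: "ys \<in> cball x 1" "\<And>y. y \<in> cball x 1 \<Longrightarrow> L y 0 \<le> L ys 0"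
    using continuous_attains_sup[of "cball x 1" "\<lambda>y. L y 0"] Lcont_x by fastforce
  define M0 where "M0 = L ys 0"
  define R where "R = max 1 ((\<bar>p\<bar> + 1 + \<beta> + M0) / \<alpha>)"
  have R1: "R \<ge> 1" unfolding R_def by simp
  have Rb: "\<bar>vo y q\<bar> \<le> R" if "dist y x \<le> 1" "dist q p \<le> 1" for y q
  proof -
    have "y \<in> cball x 1" using that by (simp add: dist_commute)
    then have "L y 0 \<le> M0" using ys M0_def by auto
    moreover have "\<bar>q\<bar> \<le> \<bar>p\<bar> + 1" using that by (simp add: dist_real_def)
    ultimately have "(\<bar>q\<bar> + \<beta> + L y 0) / \<alpha> \<le> (\<bar>p\<bar> + 1 + \<beta> + M0) / \<alpha>"
      using apos by (intro divide_right_mono) auto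
    then show ?thesis using vo_bound[of y q] unfolding R_def by linarith
  qed
  have v0R: "\<bar>v0\<bar> \<le> R" unfolding v0_def by (rule Rb) auto
  show ?thesis
    unfolding continuous_at_eps_delta
  proof (intro allI impI)
    fix \<epsilon> :: real assume e: "\<epsilon> > 0"
    define g where "g = f x p v0 - max (f x p (v0 + \<epsilon>)) (f x p (v0 - \<epsilon>))"
    have g0: "g > 0" using gap_pos[OF e, of x p] unfolding g_def v0_def by simp
    define K where "K = cball x 1 \<times> cball (0::real) R"
    have "compact K" unfolding K_def by (intro compact_Times) auto
    then have "uniformly_continuous_on K (\<lambda>z. L (fst z) (snd z))"
      by (intro compact_uniformly_continuous continuous_on_subset[OF Lcont2]) auto
    then obtain d1 where d1: "d1 > 0" "\<And>z z'. z \<in> K \<Longrightarrow> z' \<in> K \<Longrightarrow> dist z' z < d1 \<Longrightarrow>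
        dist (L (fst z') (snd z')) (L (fst z) (snd z)) < g / 4"
      unfolding uniformly_continuous_on_def using g0 by (metis divide_pos_pos zero_less_numeral)
    define d where "d = min (min 1 d1) (g / (4 * R + 4))"
    have d0: "d > 0" unfolding d_def using d1 g0 R1 by auto
    show "\<exists>d>0. \<forall>z'. dist z' z0 < d \<longrightarrow> dist (vo (fst z') (snd z')) (vo (fst z0) (snd z0)) < \<epsilon>"
    proof (intro exI conjI allI impI, rule d0)
      fix z' :: "real \<times> real" assume dz: "dist z' z0 < d"
      obtain y q where z': "z' = (y, q)" by (cases z')
      have dy: "dist y x < d" using dz z' z0 dist_fst_le[of z' z0] by auto
      have dq: "dist q p < d" using dz z' z0 dist_snd_le[of z' z0] by auto
      have close: "\<bar>f y q v - f x p v\<bar> < g / 2" if v: "\<bar>v\<bar> \<le> R" for v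
      proof -
        have "(x, v) \<in> K" "(y, v) \<in> K" unfolding K_def using v dy d_def by (auto simp: dist_commute)
        moreover have "dist (y, v) (x, v) < d1" using dy d_def by (simp add: dist_Pair_Pair)
        ultimately have A: "\<bar>L y v - L x v\<bar> < g / 4" using d1(2)[of "(x,v)" "(y,v)"] by (simp add: dist_real_def)
        have "\<bar>q - p\<bar> * \<bar>v\<bar> \<le> \<bar>q - p\<bar> * R" using v by (simp add: mult_left_mono)
        also have "\<dots> \<le> g / (4 * R + 4) * R" using dq d_def R1 by (intro mult_right_mono) (auto simp: dist_real_def)
        also have "\<dots> \<le> g / 4" using g0 R1 by (simp add: field_simps)
        finally have B: "\<bar>q * v - p * v\<bar> \<le> g / 4" by (simp add: abs_mult[symmetric] left_diff_distrib)
        have "f y q v - f x p v = -(q * v - p * v) - (L y v - L x v)" unfolding f_def by (simp add: algebra_simps)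
        then show ?thesis using A B by arith
      qed
      define v1 where "v1 = vo y q"
      have v1R: "\<bar>v1\<bar> \<le> R" unfolding v1_def using dy dq d_def by (intro Rb) auto
      have "f x p v1 > f y q v1 - g / 2" using close[OF v1R] by linarith
      moreover have "f y q v1 \<ge> f y q v0" unfolding v1_def by (rule vo_max)
      moreover have "f y q v0 > f x p v0 - g / 2" using close[OF v0R] by linarith
      ultimately have "f x p v1 > f x p v0 - g" by linarith
      then have "f x p v1 > max (f x p (v0 + \<epsilon>)) (f x p (v0 - \<epsilon>))" unfolding g_def by simp
      then have "\<not> \<bar>v1 - vo x p\<bar> \<ge> \<epsilon>" using far_le[OF e, of v1 x p] unfolding v0_def by linarith
      then show "dist (vo (fst z') (snd z')) (vo (fst z0) (snd z0)) < \<epsilon>"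
        using z' z0 v1_def by (simp add: dist_real_def)
    qed
  qed
qed

lemma vo_cont: "continuous_on UNIV (\<lambda>z. vo (fst z) (snd z))"
  by (simp add: continuous_at_imp_continuous_on vo_cont_at)

end

context lag begin

lemma vo_cont_p: "isCont (vo x) p"
proof -
  have "isCont (\<lambda>q. (x, q)) p" by (intro continuous_intros)
  from isCont_o2[OF this vo_cont_at] show ?thesis by simp
qed

lemma Ham_p_deriv: "((\<lambda>q. Ham L x q) has_real_derivative (- vo x p)) (at p)"
proof -
  define v0 where "v0 = vo x p"
  have bnd: "norm ((Ham L x y - Ham L x p) / (y - p) - (- v0)) \<le> \<bar>vo x y - vo x p\<bar>" if "y \<noteq> p" for y
  proof -
    define vy where "vy = vo x y"
    have H1: "Ham L x y \<ge> Ham L x p - (y - p) * v0"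
      using Ham_ge[of x y v0] Ham_eq[of x p] unfolding f_def v0_def by (simp add: algebra_simps)
    have H2: "Ham L x p \<ge> Ham L x y + (y - p) * vy"
      using Ham_ge[of x p vy] Ham_eq[of x y] unfolding f_def vy_def by (simp add: algebra_simps)
    have "\<bar>Ham L x y - Ham L x p + (y - p) * v0\<bar> \<le> \<bar>y - p\<bar> * \<bar>vy - v0\<bar>"
    proof (cases "y > p")
      case True
      then have "(y - p) * vy \<le> (y - p) * v0" using H1 H2 by linarith
      then have "vy \<le> v0" using True by (simp add: mult_le_cancel_left)
      then show ?thesis using H1 H2 True by (simp add: abs_le_iff algebra_simps abs_mult)
    next
      case False
      then have F: "y < p" using that by simp
      then have "(y - p) * vy \<le> (y - p) * v0" using H1 H2 by linarith
      then have "vy \<ge> v0" using F by (simp add: mult_le_cancel_left)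
      then show ?thesis using H1 H2 F by (simp add: abs_le_iff algebra_simps abs_mult)
    qed
    then have "\<bar>Ham L x y - Ham L x p + (y - p) * v0\<bar> / \<bar>y - p\<bar> \<le> \<bar>vy - v0\<bar>"
      using that by (subst pos_divide_le_eq) (auto simp: mult_ac)
    then have "\<bar>(Ham L x y - Ham L x p + (y - p) * v0) / (y - p)\<bar> \<le> \<bar>vy - v0\<bar>"
      by (simp add: abs_divide)
    moreover have "(Ham L x y - Ham L x p + (y - p) * v0) / (y - p) = (Ham L x y - Ham L x p) / (y - p) - (- v0)"
      using that by (simp add: field_simps)
    ultimately show ?thesis unfolding vy_def v0_def by simp
  qed
  have "((\<lambda>y. \<bar>vo x y - vo x p\<bar>) \<longlongrightarrow> 0) (at p)"
    using vo_cont_p[where x=x and p=p] unfolding isCont_def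
    by (intro tendsto_rabs_zero) (simp add: LIM_zero_iff)
  then have "((\<lambda>y. (Ham L x y - Ham L x p) / (y - p) - (- v0)) \<longlongrightarrow> 0) (at p)"
  proof (rule Lim_null_comparison[rotated])
    show "\<forall>\<^sub>F y in at p. norm ((Ham L x y - Ham L x p) / (y - p) - - v0) \<le> \<bar>vo x y - vo x p\<bar>"
      unfolding eventually_at_filter by (intro always_eventually allI impI bnd)
  qed
  then show ?thesis unfolding has_field_derivative_iff v0_def by (simp only: LIM_zero_iff)
qed

lemma Ham_p_eq: "Ham_p L x p = - vo x p"
  unfolding Ham_p_def using Ham_p_deriv by (rule DERIV_imp_deriv)

end

context lag begin

definition Lx :: "real \<Rightarrow> real \<Rightarrow> real" where
  "Lx x v = blinfun_apply (L' (x, v)) (1, 0)"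

lemma Lx_deriv: "((\<lambda>y. L y v) has_real_derivative Lx x v) (at x)"
proof -
  have d1: "((\<lambda>y. (y, v)) has_derivative (\<lambda>h. (h, 0))) (at x)"
    by (intro has_derivative_Pair has_derivative_ident has_derivative_const)
  have "((\<lambda>y. L (fst (y, v)) (snd (y, v))) has_derivative (\<lambda>h. blinfun_apply (L' (x, v)) (h, 0))) (at x)"
    using has_derivative_compose[OF d1 Lder[of "(x, v)"]] by simp
  moreover have "(\<lambda>h. blinfun_apply (L' (x, v)) (h, 0)) = (*) (Lx x v)"
  proof
    fix h :: real
    have "(h, 0::real) = h *\<^sub>R (1, 0)" by simp
    then have "blinfun_apply (L' (x, v)) (h, 0) = blinfun_apply (L' (x, v)) (h *\<^sub>R (1, 0))" by simp
    also have "\<dots> = h * blinfun_apply (L' (x, v)) (1, 0)" by (simp only: blinfun.scaleR_right) simp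
    finally show "blinfun_apply (L' (x, v)) (h, 0) = Lx x v * h"
      unfolding Lx_def by simp
  qed
  ultimately show ?thesis by (simp add: has_field_derivative_def)
qed

lemma Lx_cont: "continuous_on UNIV (\<lambda>z. Lx (fst z) (snd z))"
  unfolding Lx_def
  by (intro blinfun.continuous_on continuous_on_compose2[OF L'cont] continuous_intros) auto

lemma Ham_concave:
  assumes t: "0 \<le> t" "t \<le> 1"
  shows "t * Ham L x1 p + (1 - t) * Ham L x2 p \<le> Ham L (t * x1 + (1 - t) * x2) p"
proof -
  define v1 where "v1 = vo x1 p"
  define v2 where "v2 = vo x2 p"
  have c: "L (fst ((1 - (1 - t)) *\<^sub>R (x1, v1) + (1 - t) *\<^sub>R (x2, v2))) (snd ((1 - (1 - t)) *\<^sub>R (x1, v1) + (1 - t) *\<^sub>R (x2, v2)))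
     \<le> (1 - (1 - t)) * L (fst (x1, v1)) (snd (x1, v1)) + (1 - t) * L (fst (x2, v2)) (snd (x2, v2))"
    by (rule convex_onD[OF Lconv]) (use t in auto)
  then have c': "L (t * x1 + (1 - t) * x2) (t * v1 + (1 - t) * v2) \<le> t * L x1 v1 + (1 - t) * L x2 v2"
    by simp
  have "t * Ham L x1 p + (1 - t) * Ham L x2 p = t * f x1 p v1 + (1 - t) * f x2 p v2"
    using Ham_eq v1_def v2_def by simp
  also have "\<dots> = - p * (t * v1 + (1 - t) * v2) - (t * L x1 v1 + (1 - t) * L x2 v2)"
    unfolding f_def by (simp add: algebra_simps)
  also have "\<dots> \<le> f (t * x1 + (1 - t) * x2) p (t * v1 + (1 - t) * v2)"
    unfolding f_def using c' by simp
  also have "\<dots> \<le> Ham L (t * x1 + (1 - t) * x2) p" by (rule Ham_ge)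
  finally show ?thesis .
qed

lemma Ham_x_deriv: "((\<lambda>y. Ham L y p) has_real_derivative (- Lx x (vo x p))) (at x)"
proof -
  define v0 where "v0 = vo x p"
  define \<phi> where "\<phi> y = f y p v0" for y
  define D where "D = - Lx x v0"
  have phid: "(\<phi> has_real_derivative D) (at x)"
    unfolding \<phi>_def f_def D_def by (auto intro!: derivative_eq_intros Lx_deriv)
  define A where "A y = (\<phi> y - \<phi> x) / (y - x)" for y
  have A: "(A \<longlongrightarrow> D) (at x)" using phid unfolding has_field_derivative_iff A_def by simp
  have fl: "filterlim (\<lambda>y. 2 * x - y) (at x) (at x)"
    unfolding filterlim_at
  proof
    show "\<forall>\<^sub>F y in at x. 2 * x - y \<in> UNIV \<and> 2 * x - y \<noteq> x"
      unfolding eventually_at_filter by (intro always_eventually) auto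
    have "((\<lambda>y. 2 * x - y) \<longlongrightarrow> 2 * x - x) (at x)" by (intro tendsto_intros)
    then show "((\<lambda>y. 2 * x - y) \<longlongrightarrow> x) (at x)" by simp
  qed
  have B: "((\<lambda>y. A (2 * x - y)) \<longlongrightarrow> D) (at x)"
    using filterlim_compose[OF A fl] .
  have Hx: "Ham L x p = \<phi> x" unfolding \<phi>_def v0_def by (rule Ham_eq)
  have bnd: "norm ((Ham L y p - Ham L x p) / (y - x) - D) \<le> \<bar>A y - D\<bar> + \<bar>A (2 * x - y) - D\<bar>"
    if "y \<noteq> x" for y
  proof -
    have lo: "\<phi> y - \<phi> x \<le> Ham L y p - Ham L x p" using Ham_ge[of y p v0] Hx unfolding \<phi>_def by simp
    have "(1/2) * Ham L y p + (1 - 1/2) * Ham L (2 * x - y) p \<le> Ham L ((1/2) * y + (1 - 1/2) * (2 * x - y)) p"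
      by (rule Ham_concave) auto
    moreover have "(1/2) * y + (1 - 1/2) * (2 * x - y) = x" by (simp add: field_simps)
    moreover have "\<phi> (2 * x - y) \<le> Ham L (2 * x - y) p" unfolding \<phi>_def by (rule Ham_ge)
    ultimately have up: "Ham L y p - Ham L x p \<le> \<phi> x - \<phi> (2 * x - y)" using Hx by simp
    have Ay: "A (2 * x - y) = (\<phi> x - \<phi> (2 * x - y)) / (y - x)"
      unfolding A_def using that by (simp add: field_simps)
    define Q where "Q = (Ham L y p - Ham L x p) / (y - x)"
    have "(A y \<le> Q \<and> Q \<le> A (2 * x - y)) \<or> (A (2 * x - y) \<le> Q \<and> Q \<le> A y)"
    proof (cases "y > x")
      case True
      then have "A y \<le> Q" "Q \<le> A (2 * x - y)" unfolding Q_def Ay unfolding A_def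
        using divide_right_mono[OF lo, of "y - x"] divide_right_mono[OF up, of "y - x"] by auto
      then show ?thesis by simp
    next
      case False
      then have "y - x \<le> 0" using that by simp
      then have "Q \<le> A y" "A (2 * x - y) \<le> Q" unfolding Q_def Ay unfolding A_def
        using divide_right_mono_neg[OF lo, of "y - x"] divide_right_mono_neg[OF up, of "y - x"] by auto
      then show ?thesis by simp
    qed
    then show ?thesis unfolding Q_def[symmetric] by auto
  qed
  have "((\<lambda>y. \<bar>A y - D\<bar> + \<bar>A (2 * x - y) - D\<bar>) \<longlongrightarrow> 0) (at x)"
  proof -
    have "((\<lambda>y. \<bar>A y - D\<bar> + \<bar>A (2 * x - y) - D\<bar>) \<longlongrightarrow> \<bar>D - D\<bar> + \<bar>D - D\<bar>) (at x)"
      by (intro tendsto_intros A B)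
    then show ?thesis by simp
  qed
  then have "((\<lambda>y. (Ham L y p - Ham L x p) / (y - x) - D) \<longlongrightarrow> 0) (at x)"
  proof (rule Lim_null_comparison[rotated])
    show "\<forall>\<^sub>F y in at x. norm ((Ham L y p - Ham L x p) / (y - x) - D) \<le> \<bar>A y - D\<bar> + \<bar>A (2 * x - y) - D\<bar>"
      unfolding eventually_at_filter by (intro always_eventually allI impI bnd)
  qed
  then show ?thesis unfolding has_field_derivative_iff D_def v0_def by (simp only: LIM_zero_iff)
qed

lemma Ham_x_eq: "Ham_x L x p = - Lx x (vo x p)"
  unfolding Ham_x_def using Ham_x_deriv by (rule DERIV_imp_deriv)

lemma Ham_super: "Ham L y p \<le> Ham L x p + Ham_x L x p * (y - x)"
proof -
  have cv: "convex_on UNIV (\<lambda>y. - Ham L y p)"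
  proof (rule convex_onI)
    fix t :: real and a b :: real assume "0 < t" "t < 1"
    then have "(1 - t) * Ham L a p + (1 - (1 - t)) * Ham L b p \<le> Ham L ((1 - t) * a + (1 - (1 - t)) * b) p"
      by (intro Ham_concave) auto
    then show "- Ham L ((1 - t) *\<^sub>R a + t *\<^sub>R b) p \<le> (1 - t) * - Ham L a p + t * - Ham L b p"
      by simp
  qed simp
  have "((\<lambda>y. - Ham L y p) has_real_derivative - (- Lx x (vo x p))) (at x)"
    by (rule DERIV_minus[OF Ham_x_deriv])
  then have "((\<lambda>y. - Ham L y p) has_real_derivative - Ham_x L x p) (at x within UNIV)"
    unfolding Ham_x_eq by simp
  from convex_on_imp_above_tangent[OF cv _ _ _ this]
  have "- Ham_x L x p * (y - x) \<le> - Ham L y p - - Ham L x p" by simp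
  then show ?thesis by linarith
qed

lemma key_ineq: "L x (vo x p) + p * vo x p - Ham_x L x p * (y - x) \<le> L y v + p * v"
proof -
  have "L y v + p * v = - f y p v" unfolding f_def by simp
  moreover have "f y p v \<le> Ham L y p" by (rule Ham_ge)
  moreover note Ham_super[of y p x]
  moreover have "Ham L x p = - p * vo x p - L x (vo x p)" using Ham_eq unfolding f_def by simp
  ultimately show ?thesis by linarith
qed

lemma Ham_p_cont: "continuous_on UNIV (\<lambda>z. Ham_p L (fst z) (snd z))"
  unfolding Ham_p_eq by (intro continuous_intros vo_cont)

lemma Ham_x_cont: "continuous_on UNIV (\<lambda>z. Ham_x L (fst z) (snd z))"
proof -
  have "continuous_on UNIV (\<lambda>z. (fst z, vo (fst z) (snd z)))" by (intro continuous_intros vo_cont)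
  from continuous_on_compose2[OF Lx_cont this subset_UNIV] show ?thesis
    unfolding Ham_x_eq by (simp add: continuous_on_minus)
qed

end

locale bm =
  fixes M :: "'a measure" and W :: "real \<Rightarrow> 'a \<Rightarrow> real"
  assumes BM: "brownian_motion M W"
begin

sublocale prob_space M using BM unfolding brownian_motion_def by blast

lemma W_meas[measurable]: "W t \<in> borel_measurable M"
  using BM unfolding brownian_motion_def by blast

lemma gen_sub: "gen_sets M W t \<subseteq> sets M"
  unfolding gen_sets_def by (rule sets.sigma_sets_subset) (auto)

lemma std_sub: "std_filtration M W t \<subseteq> sets M"
  unfolding std_filtration_def by auto

lemma gen_in_std: "gen_sets M W t \<subseteq> std_filtration M W t"
proof
  fix A assume A: "A \<in> gen_sets M W t"
  then have "A \<in> sets M" using gen_sub by blast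
  with A show "A \<in> std_filtration M W t" unfolding std_filtration_def by (auto intro!: bexI[of _ A])
qed

lemma std_sigma: "sigma_algebra (space M) (std_filtration M W t)"
  unfolding sigma_algebra_iff2
proof (intro conjI ballI allI impI)
  show "std_filtration M W t \<subseteq> Pow (space M)"
    using std_sub sets.sets_into_space by blast
  show "{} \<in> std_filtration M W t"
    unfolding std_filtration_def gen_sets_def by (auto intro!: bexI[of _ "{}"] sigma_sets.Empty)
next
  fix A assume A: "A \<in> std_filtration M W t"
  then obtain B where B: "B \<in> gen_sets M W t" "(A - B) \<union> (B - A) \<in> null_sets M" "A \<in> sets M"
    unfolding std_filtration_def by auto
  have "space M - B \<in> gen_sets M W t" using B(1) unfolding gen_sets_def by (rule sigma_sets.Compl)
  moreover have "B \<subseteq> space M" using B(1) gen_sub sets.sets_into_space by blast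
  moreover have "A \<subseteq> space M" using B(3) sets.sets_into_space by blast
  ultimately have eq: "((space M - A) - (space M - B)) \<union> ((space M - B) - (space M - A)) = (A - B) \<union> (B - A)"
    by blast
  have "space M - A \<in> sets M" using B(3) by auto
  then show "space M - A \<in> std_filtration M W t"
    unfolding std_filtration_def using B(2) \<open>space M - B \<in> gen_sets M W t\<close> eq
    by (intro CollectI conjI bexI[of _ "space M - B"]) simp_all
next
  fix A :: "nat \<Rightarrow> 'a set" assume A: "range A \<subseteq> std_filtration M W t"
  then have "\<forall>i. \<exists>B. B \<in> gen_sets M W t \<and> (A i - B) \<union> (B - A i) \<in> null_sets M"
    unfolding std_filtration_def by auto
  then obtain B where B: "\<And>i. B i \<in> gen_sets M W t" "\<And>i. (A i - B i) \<union> (B i - A i) \<in> null_sets M"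
    by metis
  have As: "\<And>i. A i \<in> sets M" using A std_sub by blast
  have "(\<Union>i. B i) \<in> gen_sets M W t" using B(1) unfolding gen_sets_def by (intro sigma_sets.Union) auto
  moreover have "(\<Union>i. (A i - B i) \<union> (B i - A i)) \<in> null_sets M" using B(2) by (intro null_sets_UN) auto
  moreover have "((\<Union>i. A i) - (\<Union>i. B i)) \<union> ((\<Union>i. B i) - (\<Union>i. A i)) \<in> sets M"
    using As B(1) gen_sub by (intro sets.Un sets.Diff sets.countable_UN) auto
  moreover have "((\<Union>i. A i) - (\<Union>i. B i)) \<union> ((\<Union>i. B i) - (\<Union>i. A i)) \<subseteq> (\<Union>i. (A i - B i) \<union> (B i - A i))"
    by blast
  ultimately have "((\<Union>i. A i) - (\<Union>i. B i)) \<union> ((\<Union>i. B i) - (\<Union>i. A i)) \<in> null_sets M"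
    by (blast intro: null_sets_subset)
  moreover have "(\<Union>i. A i) \<in> sets M" using As by auto
  ultimately show "(\<Union>i. A i) \<in> std_filtration M W t"
    unfolding std_filtration_def using \<open>(\<Union>i. B i) \<in> gen_sets M W t\<close> by blast
qed

definition Fm :: "real \<Rightarrow> 'a measure" where
  "Fm t = measure_of (space M) (std_filtration M W t) (\<lambda>_. 0)"

lemma sets_Fm[simp]: "sets (Fm t) = std_filtration M W t"
  unfolding Fm_def using std_sigma by (rule sigma_algebra.sets_measure_of_eq)

lemma space_Fm[simp]: "space (Fm t) = space M"
  unfolding Fm_def by (rule space_measure_of_conv)

lemma Fm_meas_iff: "Y \<in> borel_measurable (Fm t) \<longleftrightarrow> (\<forall>B\<in>sets borel. Y -` B \<inter> space M \<in> std_filtration M W t)"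
  unfolding measurable_def by auto

lemma Fm_sub_M: "Y \<in> borel_measurable (Fm t) \<Longrightarrow> Y \<in> borel_measurable M"
  by (rule measurable_from_subalg[of M "Fm t"]) (auto simp: subalgebra_def std_sub)

lemma gen_mono: "s \<le> t \<Longrightarrow> gen_sets M W s \<subseteq> gen_sets M W t"
  unfolding gen_sets_def by (intro sigma_sets_mono' UN_mono) auto

lemma std_mono: "s \<le> t \<Longrightarrow> std_filtration M W s \<subseteq> std_filtration M W t"
  unfolding std_filtration_def using gen_mono by blast

lemma Fm_mono: "s \<le> t \<Longrightarrow> Y \<in> borel_measurable (Fm s) \<Longrightarrow> Y \<in> borel_measurable (Fm t)"
  by (rule measurable_from_subalg[of "Fm t" "Fm s"]) (auto simp: subalgebra_def std_mono)

lemma W_Fm: "0 \<le> r \<Longrightarrow> r \<le> t \<Longrightarrow> W r \<in> borel_measurable (Fm t)"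
  unfolding Fm_meas_iff
proof
  fix B :: "real set" assume "0 \<le> r" "r \<le> t" "B \<in> sets borel"
  then have "W r -` B \<inter> space M \<in> gen_sets M W t"
    unfolding gen_sets_def by (intro sigma_sets.Basic UN_I[of r]) auto
  then show "W r -` B \<inter> space M \<in> std_filtration M W t" using gen_in_std by blast
qed

definition Inc :: "real \<Rightarrow> real \<Rightarrow> 'a set set" where
  "Inc a b = {(\<lambda>\<omega>. W b \<omega> - W a \<omega>) -` B \<inter> space M | B. B \<in> sets (borel :: real measure)}"

lemma indep_std:
  assumes "0 \<le> a" "a < b"
  shows "indep_set (std_filtration M W a) (Inc a b)"
proof -
  have I: "indep_set (gen_sets M W a) (Inc a b)"
    using BM assms unfolding brownian_motion_def Inc_def by blast
  have IncE: "Inc a b \<subseteq> events" unfolding Inc_def by auto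
  show ?thesis
    unfolding indep_sets2_eq
  proof (intro conjI ballI)
    show "std_filtration M W a \<subseteq> events" by (rule std_sub)
    show "Inc a b \<subseteq> events" by (rule IncE)
    fix A C assume A: "A \<in> std_filtration M W a" and C: "C \<in> Inc a b"
    then obtain B where B: "B \<in> gen_sets M W a" "(A - B) \<union> (B - A) \<in> null_sets M" "A \<in> sets M"
      unfolding std_filtration_def by auto
    have Bs: "B \<in> sets M" using B(1) gen_sub by blast
    have Cs: "C \<in> sets M" using C IncE by blast
    have ae: "AE \<omega> in M. \<omega> \<notin> (A - B) \<union> (B - A)" using B(2) by (rule AE_not_in)
    have "prob A = prob B"
      using ae by (intro measure_eq_AE) (auto simp: B(3) Bs)
    moreover have "prob (A \<inter> C) = prob (B \<inter> C)"
      using ae by (intro measure_eq_AE) (auto simp: B(3) Bs Cs)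
    moreover have "prob (B \<inter> C) = prob B * prob C"
      using I B(1) C by (rule indep_setD)
    ultimately show "prob (A \<inter> C) = prob A * prob C" by simp
  qed
qed

lemma indep_incr:
  assumes "0 \<le> a" "a < b" and Y: "Y \<in> borel_measurable (Fm a)"
  shows "indep_var borel Y borel (\<lambda>\<omega>. W b \<omega> - W a \<omega>)"
  unfolding indep_var_eq
proof (intro conjI)
  show "random_variable borel Y" using Fm_sub_M[OF Y] by simp
  show "random_variable borel (\<lambda>\<omega>. W b \<omega> - W a \<omega>)" by measurable
  have st1: "Int_stable (std_filtration M W a)"
  proof -
    interpret S: sigma_algebra "space M" "std_filtration M W a" by (rule std_sigma)
    show ?thesis by (rule S.Int_stable)
  qed
  have st2: "Int_stable (Inc a b)"
    unfolding Inc_def Int_stable_def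
  proof (intro ballI)
    fix X Y assume "X \<in> {(\<lambda>\<omega>. W b \<omega> - W a \<omega>) -` B \<inter> space M | B. B \<in> sets (borel :: real measure)}"
      "Y \<in> {(\<lambda>\<omega>. W b \<omega> - W a \<omega>) -` B \<inter> space M | B. B \<in> sets (borel :: real measure)}"
    then obtain B1 B2 where "X = (\<lambda>\<omega>. W b \<omega> - W a \<omega>) -` B1 \<inter> space M" "B1 \<in> sets borel"
      "Y = (\<lambda>\<omega>. W b \<omega> - W a \<omega>) -` B2 \<inter> space M" "B2 \<in> sets borel" by auto
    then show "X \<inter> Y \<in> {(\<lambda>\<omega>. W b \<omega> - W a \<omega>) -` B \<inter> space M | B. B \<in> sets (borel :: real measure)}"
      by (intro CollectI exI[of _ "B1 \<inter> B2"]) auto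
  qed
  have "indep_sets (case_bool (std_filtration M W a) (Inc a b)) UNIV"
    using indep_std[OF assms(1,2)] unfolding indep_set_def .
  then have "indep_sets (\<lambda>i. sigma_sets (space M) (case_bool (std_filtration M W a) (Inc a b) i)) UNIV"
    using st1 st2 by (subst indep_sets_sigma_sets_iff) (auto split: bool.split)
  then show "indep_set (sigma_sets (space M) {Y -` A \<inter> space M |A. A \<in> sets borel})
     (sigma_sets (space M) {(\<lambda>\<omega>. W b \<omega> - W a \<omega>) -` A \<inter> space M |A. A \<in> sets borel})"
    unfolding indep_set_def
  proof (rule indep_sets_mono_sets)
    fix i :: bool
    have "{Y -` A \<inter> space M |A. A \<in> sets borel} \<subseteq> sigma_sets (space M) (std_filtration M W a)"
      using Y unfolding Fm_meas_iff by (auto intro: sigma_sets.Basic)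
    then have "sigma_sets (space M) {Y -` A \<inter> space M |A. A \<in> sets borel} \<subseteq> sigma_sets (space M) (std_filtration M W a)"
      by (rule sigma_sets_mono)
    then show "case_bool (sigma_sets (space M) {Y -` A \<inter> space M |A. A \<in> sets borel})
          (sigma_sets (space M) {(\<lambda>\<omega>. W b \<omega> - W a \<omega>) -` A \<inter> space M |A. A \<in> sets borel}) i
         \<subseteq> sigma_sets (space M) (case_bool (std_filtration M W a) (Inc a b) i)"
      by (cases i) (auto simp: Inc_def)
  qed
qed

end

lemma L2_mult_integrable:
  fixes f g :: "'a \<Rightarrow> real"
  assumes "f \<in> borel_measurable M" "g \<in> borel_measurable M"
    "integrable M (\<lambda>x. (f x)\<^sup>2)" "integrable M (\<lambda>x. (g x)\<^sup>2)"
  shows "integrable M (\<lambda>x. f x * g x)"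
proof (rule Bochner_Integration.integrable_bound[of _ "\<lambda>x. (f x)\<^sup>2 + (g x)\<^sup>2"])
  show "integrable M (\<lambda>x. (f x)\<^sup>2 + (g x)\<^sup>2)" using assms by auto
  show "(\<lambda>x. f x * g x) \<in> borel_measurable M" using assms by auto
  show "AE x in M. norm (f x * g x) \<le> norm ((f x)\<^sup>2 + (g x)\<^sup>2)"
  proof (intro AE_I2)
    fix x
    have "2 * \<bar>f x\<bar> * \<bar>g x\<bar> \<le> (f x)\<^sup>2 + (g x)\<^sup>2"
      using sum_squares_bound[of "\<bar>f x\<bar>" "\<bar>g x\<bar>"] by (simp add: power2_eq_square)
    moreover have "0 \<le> \<bar>f x\<bar> * \<bar>g x\<bar>" by simp
    ultimately have "\<bar>f x\<bar> * \<bar>g x\<bar> \<le> (f x)\<^sup>2 + (g x)\<^sup>2" by linarith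
    moreover have "norm ((f x)\<^sup>2 + (g x)\<^sup>2) = (f x)\<^sup>2 + (g x)\<^sup>2" by simp
    ultimately show "norm (f x * g x) \<le> norm ((f x)\<^sup>2 + (g x)\<^sup>2)"
      by (simp add: abs_mult)
  qed
qed

context bm begin

lemma incr_dist:
  assumes "0 \<le> a" "a < b"
  shows "distributed M lborel (\<lambda>\<omega>. W b \<omega> - W a \<omega>) (\<lambda>x. ennreal (normal_density 0 (sqrt (b - a)) x))"
  using BM assms unfolding brownian_motion_def by blast

lemma incr_moments:
  assumes "0 \<le> a" "a \<le> b"
  shows "integrable M (\<lambda>\<omega>. W b \<omega> - W a \<omega>)" "expectation (\<lambda>\<omega>. W b \<omega> - W a \<omega>) = 0"
    "integrable M (\<lambda>\<omega>. (W b \<omega> - W a \<omega>)\<^sup>2)" "expectation (\<lambda>\<omega>. (W b \<omega> - W a \<omega>)\<^sup>2) = b - a"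
proof -
  have "(integrable M (\<lambda>\<omega>. W b \<omega> - W a \<omega>) \<and> expectation (\<lambda>\<omega>. W b \<omega> - W a \<omega>) = 0) \<and>
        (integrable M (\<lambda>\<omega>. (W b \<omega> - W a \<omega>)\<^sup>2) \<and> expectation (\<lambda>\<omega>. (W b \<omega> - W a \<omega>)\<^sup>2) = b - a)"
  proof (cases "a = b")
    case True then show ?thesis by simp
  next
    case False
    then have ab: "a < b" using assms by simp
    define \<sigma> where "\<sigma> = sqrt (b - a)"
    have s0: "\<sigma> > 0" unfolding \<sigma>_def using ab by simp
    have D: "distributed M lborel (\<lambda>\<omega>. W b \<omega> - W a \<omega>) (\<lambda>x. ennreal (normal_density 0 \<sigma> x))"
      unfolding \<sigma>_def by (rule incr_dist[OF assms(1) ab])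
    have i1: "integrable M (\<lambda>\<omega>. W b \<omega> - W a \<omega>)"
      by (rule distributed_integrable_var[OF D]) (use integrable_normal_moment_nz_1[OF s0] in simp_all)
    have e1: "expectation (\<lambda>\<omega>. W b \<omega> - W a \<omega>) = 0"
      by (rule normal_distributed_expectation[OF s0 D])
    have "integrable lborel (\<lambda>x. normal_density 0 \<sigma> x * (x - 0) ^ 2)" by (rule integrable_normal_moment[OF s0])
    then have "integrable lborel (\<lambda>x. normal_density 0 \<sigma> x * x\<^sup>2)" by simp
    then have i2: "integrable M (\<lambda>\<omega>. (W b \<omega> - W a \<omega>)\<^sup>2)"
      using distributed_integrable[OF D, of "\<lambda>x. x\<^sup>2"] by simp
    have "variance (\<lambda>\<omega>. W b \<omega> - W a \<omega>) = \<sigma>\<^sup>2"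
      by (rule normal_distributed_variance[OF s0 D])
    then have e2: "expectation (\<lambda>\<omega>. (W b \<omega> - W a \<omega>)\<^sup>2) = b - a"
      using e1 ab unfolding \<sigma>_def by simp
    show ?thesis using i1 e1 i2 e2 by blast
  qed
  then show "integrable M (\<lambda>\<omega>. W b \<omega> - W a \<omega>)" "expectation (\<lambda>\<omega>. W b \<omega> - W a \<omega>) = 0"
    "integrable M (\<lambda>\<omega>. (W b \<omega> - W a \<omega>)\<^sup>2)" "expectation (\<lambda>\<omega>. (W b \<omega> - W a \<omega>)\<^sup>2) = b - a"
    by blast+
qed

lemma orth:
  assumes "0 \<le> a" "a \<le> b" and Y: "Y \<in> borel_measurable (Fm a)" "integrable M Y"
  shows "integrable M (\<lambda>\<omega>. Y \<omega> * (W b \<omega> - W a \<omega>))"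
    "expectation (\<lambda>\<omega>. Y \<omega> * (W b \<omega> - W a \<omega>)) = 0"
proof -
  have "integrable M (\<lambda>\<omega>. Y \<omega> * (W b \<omega> - W a \<omega>)) \<and> expectation (\<lambda>\<omega>. Y \<omega> * (W b \<omega> - W a \<omega>)) = 0"
  proof (cases "a = b")
    case True then show ?thesis by simp
  next
    case False
    then have ab: "a < b" using assms by simp
    have I: "indep_var borel Y borel (\<lambda>\<omega>. W b \<omega> - W a \<omega>)" by (rule indep_incr[OF assms(1) ab Y(1)])
    show ?thesis
      using indep_var_integrable[OF I Y(2) incr_moments(1)[OF assms(1,2)]]
        indep_var_lebesgue_integral[OF I Y(2) incr_moments(1)[OF assms(1,2)]]
        incr_moments(2)[OF assms(1,2)] by simp
  qed
  then show "integrable M (\<lambda>\<omega>. Y \<omega> * (W b \<omega> - W a \<omega>))"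
    "expectation (\<lambda>\<omega>. Y \<omega> * (W b \<omega> - W a \<omega>)) = 0" by blast+
qed

lemma orth_sq:
  assumes "0 \<le> a" "a \<le> b" and Y: "Y \<in> borel_measurable (Fm a)" "integrable M Y"
  shows "integrable M (\<lambda>\<omega>. Y \<omega> * (W b \<omega> - W a \<omega>)\<^sup>2)"
    "expectation (\<lambda>\<omega>. Y \<omega> * (W b \<omega> - W a \<omega>)\<^sup>2) = expectation Y * (b - a)"
proof -
  have "integrable M (\<lambda>\<omega>. Y \<omega> * (W b \<omega> - W a \<omega>)\<^sup>2) \<and> expectation (\<lambda>\<omega>. Y \<omega> * (W b \<omega> - W a \<omega>)\<^sup>2) = expectation Y * (b - a)"
  proof (cases "a = b")
    case True then show ?thesis by simp
  next
    case False
    then have ab: "a < b" using assms by simp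
    have I0: "indep_var borel Y borel (\<lambda>\<omega>. W b \<omega> - W a \<omega>)" by (rule indep_incr[OF assms(1) ab Y(1)])
    have I: "indep_var borel Y borel (\<lambda>\<omega>. (W b \<omega> - W a \<omega>)\<^sup>2)"
      using indep_var_compose[unfolded comp_def, OF I0, of "\<lambda>x. x" borel "\<lambda>x. x\<^sup>2" borel] by simp
    show ?thesis
      using indep_var_integrable[OF I Y(2) incr_moments(3)[OF assms(1,2)]]
        indep_var_lebesgue_integral[OF I Y(2) incr_moments(3)[OF assms(1,2)]]
        incr_moments(4)[OF assms(1,2)] by simp
  qed
  then show "integrable M (\<lambda>\<omega>. Y \<omega> * (W b \<omega> - W a \<omega>)\<^sup>2)"
    "expectation (\<lambda>\<omega>. Y \<omega> * (W b \<omega> - W a \<omega>)\<^sup>2) = expectation Y * (b - a)" by blast+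
qed

end

locale simp_proc = bm M W for M :: "'a measure" and W +
  fixes T :: real and k :: nat and tt :: "nat \<Rightarrow> real" and \<xi> :: "nat \<Rightarrow> 'a \<Rightarrow> real"
  assumes tt0: "tt 0 = 0" and ttk: "tt k = T" and ttinc: "\<And>i. i < k \<Longrightarrow> tt i < tt (Suc i)"
    and \<xi>m: "\<And>i. i < k \<Longrightarrow> \<xi> i \<in> borel_measurable M"
    and \<xi>F: "\<And>i B. i < k \<Longrightarrow> B \<in> sets borel \<Longrightarrow> \<xi> i -` B \<inter> space M \<in> std_filtration M W (tt i)"
    and \<xi>2: "\<And>i. i < k \<Longrightarrow> (\<integral>\<^sup>+\<omega>. ennreal ((\<xi> i \<omega>)\<^sup>2) \<partial>M) < \<infinity>"
begin

lemma tt_mono: "i \<le> j \<Longrightarrow> j \<le> k \<Longrightarrow> tt i \<le> tt j"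
proof (induction j)
  case 0 then show ?case by simp
next
  case (Suc j)
  show ?case
  proof (cases "i = Suc j")
    case True then show ?thesis by simp
  next
    case False
    then have "i \<le> j" using Suc.prems by simp
    then have "tt i \<le> tt j" using Suc by simp
    also have "tt j < tt (Suc j)" using Suc.prems by (intro ttinc) simp
    finally show ?thesis by simp
  qed
qed

lemma tt_nonneg: "i \<le> k \<Longrightarrow> 0 \<le> tt i"
  using tt_mono[of 0 i] tt0 by simp

lemma tt_le_T: "i \<le> k \<Longrightarrow> tt i \<le> T"
  using tt_mono[of i k] ttk by simp

lemma \<xi>Fm: "i < k \<Longrightarrow> \<xi> i \<in> borel_measurable (Fm (tt i))"
  unfolding Fm_meas_iff using \<xi>F by blast

lemma \<xi>sq_int: "i < k \<Longrightarrow> integrable M (\<lambda>\<omega>. (\<xi> i \<omega>)\<^sup>2)"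
  using \<xi>2[of i] \<xi>m[of i] by (simp add: integrable_iff_bounded)

definition a :: "nat \<Rightarrow> real \<Rightarrow> 'a \<Rightarrow> real" where
  "a i r \<omega> = \<xi> i \<omega> * (W (min r (tt (Suc i))) \<omega> - W (min r (tt i)) \<omega>)"

lemma a_zero: "r \<le> tt i \<Longrightarrow> i < k \<Longrightarrow> a i r \<omega> = 0"
  unfolding a_def using ttinc[of i] by (simp add: min_def)

lemma a_props:
  assumes i: "i < k" and r: "0 \<le> r"
  shows "a i r \<in> borel_measurable (Fm (min r (tt (Suc i))))"
    "integrable M (\<lambda>\<omega>. (a i r \<omega>)\<^sup>2)"
    "expectation (\<lambda>\<omega>. (a i r \<omega>)\<^sup>2) = expectation (\<lambda>\<omega>. (\<xi> i \<omega>)\<^sup>2) * (min r (tt (Suc i)) - min r (tt i))"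
proof -
  have ti: "0 \<le> tt i" "tt i < tt (Suc i)" using tt_nonneg[of i] ttinc[OF i] i by auto
  have "a i r \<in> borel_measurable (Fm (min r (tt (Suc i)))) \<and>
    integrable M (\<lambda>\<omega>. (a i r \<omega>)\<^sup>2) \<and>
    expectation (\<lambda>\<omega>. (a i r \<omega>)\<^sup>2) = expectation (\<lambda>\<omega>. (\<xi> i \<omega>)\<^sup>2) * (min r (tt (Suc i)) - min r (tt i))"
  proof (cases "tt i \<le> r")
    case True
    define m where "m = min r (tt (Suc i))"
    have m: "tt i \<le> m" "0 \<le> m" unfolding m_def using True ti by auto
    have mi: "min r (tt i) = tt i" using True by simp
    have "\<xi> i \<in> borel_measurable (Fm m)" using Fm_mono[OF m(1) \<xi>Fm[OF i]] .
    moreover have "W m \<in> borel_measurable (Fm m)" "W (tt i) \<in> borel_measurable (Fm m)"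
      using W_Fm m ti by auto
    ultimately have meas: "a i r \<in> borel_measurable (Fm m)"
      unfolding a_def mi m_def[symmetric] by measurable
    have sq: "(\<lambda>\<omega>. (a i r \<omega>)\<^sup>2) = (\<lambda>\<omega>. (\<xi> i \<omega>)\<^sup>2 * (W m \<omega> - W (tt i) \<omega>)\<^sup>2)"
      unfolding a_def mi m_def[symmetric] by (simp add: power_mult_distrib)
    have Ym: "(\<lambda>\<omega>. (\<xi> i \<omega>)\<^sup>2) \<in> borel_measurable (Fm (tt i))" using \<xi>Fm[OF i] by measurable
    show ?thesis
      using meas orth_sq[OF ti(1) m(1) Ym \<xi>sq_int[OF i]] unfolding sq m_def mi by simp
  next
    case False
    then have "a i r = (\<lambda>\<omega>. 0)" using a_zero[of r i] i by (intro ext) simp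
    moreover have "min r (tt (Suc i)) - min r (tt i) = 0" using False ti by simp
    ultimately show ?thesis by simp
  qed
  then show "a i r \<in> borel_measurable (Fm (min r (tt (Suc i))))"
    "integrable M (\<lambda>\<omega>. (a i r \<omega>)\<^sup>2)"
    "expectation (\<lambda>\<omega>. (a i r \<omega>)\<^sup>2) = expectation (\<lambda>\<omega>. (\<xi> i \<omega>)\<^sup>2) * (min r (tt (Suc i)) - min r (tt i))"
    by blast+
qed

lemma a_M: "i < k \<Longrightarrow> 0 \<le> r \<Longrightarrow> a i r \<in> borel_measurable M"
  using a_props(1) Fm_sub_M by blast

definition In :: "real \<Rightarrow> 'a \<Rightarrow> real" where
  "In r \<omega> = (\<Sum>i<k. a i r \<omega>)"

lemma In_M: "0 \<le> r \<Longrightarrow> In r \<in> borel_measurable M"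
  unfolding In_def using a_M by (intro borel_measurable_sum) auto

lemma cross_zero:
  assumes ij: "i < j" "j < k" and r: "0 \<le> r"
  shows "integrable M (\<lambda>\<omega>. a i r \<omega> * a j r \<omega>)" "expectation (\<lambda>\<omega>. a i r \<omega> * a j r \<omega>) = 0"
proof -
  have ik: "i < k" using ij by simp
  have "integrable M (\<lambda>\<omega>. a i r \<omega> * a j r \<omega>) \<and> expectation (\<lambda>\<omega>. a i r \<omega> * a j r \<omega>) = 0"
  proof (cases "tt j < r")
    case False
    then have "\<And>\<omega>. a j r \<omega> = 0" using a_zero[of r j] ij by simp
    then show ?thesis by simp
  next
    case True
    have tj: "0 \<le> tt j" "tt j < tt (Suc j)" using tt_nonneg[of j] ttinc[of j] ij by auto
    define m where "m = min r (tt (Suc j))"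
    have m: "tt j \<le> m" unfolding m_def using True tj by auto
    have mj: "min r (tt j) = tt j" using True by simp
    have le: "min r (tt (Suc i)) \<le> tt j" using tt_mono[of "Suc i" j] ij by (simp add: min.coboundedI2)
    have am: "a i r \<in> borel_measurable (Fm (tt j))" using Fm_mono[OF le a_props(1)[OF ik r]] .
    define Y where "Y \<omega> = a i r \<omega> * \<xi> j \<omega>" for \<omega>
    have Ym: "Y \<in> borel_measurable (Fm (tt j))" unfolding Y_def using am \<xi>Fm[OF ij(2)] by measurable
    have Yi: "integrable M Y" unfolding Y_def
      using a_M[OF ik r] \<xi>m[OF ij(2)] a_props(2)[OF ik r] \<xi>sq_int[OF ij(2)] by (rule L2_mult_integrable)
    have eq: "(\<lambda>\<omega>. a i r \<omega> * a j r \<omega>) = (\<lambda>\<omega>. Y \<omega> * (W m \<omega> - W (tt j) \<omega>))"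
      unfolding Y_def a_def[of j] mj m_def by (simp add: mult_ac)
    show ?thesis unfolding eq using orth[OF tj(1) m Ym Yi] by simp
  qed
  then show "integrable M (\<lambda>\<omega>. a i r \<omega> * a j r \<omega>)" "expectation (\<lambda>\<omega>. a i r \<omega> * a j r \<omega>) = 0"
    by blast+
qed

lemma prod_int: "i < k \<Longrightarrow> j < k \<Longrightarrow> 0 \<le> r \<Longrightarrow> integrable M (\<lambda>\<omega>. a i r \<omega> * a j r \<omega>)"
  using a_M a_props(2) by (intro L2_mult_integrable) auto

lemma iso:
  assumes r: "0 \<le> r"
  shows "integrable M (\<lambda>\<omega>. (In r \<omega>)\<^sup>2)"
    "expectation (\<lambda>\<omega>. (In r \<omega>)\<^sup>2) = (\<Sum>i<k. expectation (\<lambda>\<omega>. (\<xi> i \<omega>)\<^sup>2) * (min r (tt (Suc i)) - min r (tt i)))"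
proof -
  have eq: "(\<lambda>\<omega>. (In r \<omega>)\<^sup>2) = (\<lambda>\<omega>. \<Sum>i<k. \<Sum>j<k. a i r \<omega> * a j r \<omega>)"
    unfolding In_def power2_eq_square by (simp add: sum_product)
  show "integrable M (\<lambda>\<omega>. (In r \<omega>)\<^sup>2)" unfolding eq using r
    by (intro Bochner_Integration.integrable_sum prod_int) auto
  have E0: "expectation (\<lambda>\<omega>. a i r \<omega> * a j r \<omega>) = (if i = j then expectation (\<lambda>\<omega>. (a i r \<omega>)\<^sup>2) else 0)"
    if "i < k" "j < k" for i j
  proof (cases "i = j")
    case True then show ?thesis by (simp add: power2_eq_square)
  next
    case False
    show ?thesis
    proof (cases "i < j")
      case True then show ?thesis using cross_zero[of i j r] that r by simp
    next
      case False
      then have "j < i" using \<open>i \<noteq> j\<close> by simp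
      then show ?thesis using cross_zero[of j i r] that r \<open>i \<noteq> j\<close> by (simp add: mult.commute)
    qed
  qed
  have "expectation (\<lambda>\<omega>. (In r \<omega>)\<^sup>2) = (\<Sum>i<k. expectation (\<lambda>\<omega>. \<Sum>j<k. a i r \<omega> * a j r \<omega>))"
    unfolding eq using r by (intro Bochner_Integration.integral_sum Bochner_Integration.integrable_sum prod_int) auto
  also have "\<dots> = (\<Sum>i<k. \<Sum>j<k. expectation (\<lambda>\<omega>. a i r \<omega> * a j r \<omega>))"
    using r by (intro sum.cong refl Bochner_Integration.integral_sum prod_int) auto
  also have "\<dots> = (\<Sum>i<k. \<Sum>j<k. (if i = j then expectation (\<lambda>\<omega>. (a i r \<omega>)\<^sup>2) else 0))"
    using E0 by (intro sum.cong refl) auto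
  also have "\<dots> = (\<Sum>i<k. expectation (\<lambda>\<omega>. (a i r \<omega>)\<^sup>2))"
    by (simp add: sum.delta)
  also have "\<dots> = (\<Sum>i<k. expectation (\<lambda>\<omega>. (\<xi> i \<omega>)\<^sup>2) * (min r (tt (Suc i)) - min r (tt i)))"
    using a_props(3) r by (intro sum.cong refl) auto
  finally show "expectation (\<lambda>\<omega>. (In r \<omega>)\<^sup>2) = (\<Sum>i<k. expectation (\<lambda>\<omega>. (\<xi> i \<omega>)\<^sup>2) * (min r (tt (Suc i)) - min r (tt i)))" .
qed

lemma iso_le:
  assumes r: "0 \<le> r"
  shows "expectation (\<lambda>\<omega>. (In r \<omega>)\<^sup>2) \<le> (\<Sum>i<k. expectation (\<lambda>\<omega>. (\<xi> i \<omega>)\<^sup>2) * (tt (Suc i) - tt i))"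
  unfolding iso(2)[OF r]
proof (intro sum_mono mult_left_mono)
  fix i assume "i \<in> {..<k}"
  then have "tt i < tt (Suc i)" using ttinc by simp
  then show "min r (tt (Suc i)) - min r (tt i) \<le> tt (Suc i) - tt i" by (simp add: min_def)
  show "0 \<le> expectation (\<lambda>\<omega>. (\<xi> i \<omega>)\<^sup>2)" by simp
qed

end

context simp_proc begin

lemma In_diff:
  assumes r: "0 \<le> r" "r \<le> T"
  shows "In T \<omega> - In r \<omega> = (\<Sum>i<k. \<xi> i \<omega> * (W (tt (Suc i)) \<omega> - W (max (tt i) (min r (tt (Suc i)))) \<omega>))"
  unfolding In_def sum_subtractf[symmetric]
proof (intro sum.cong refl)
  fix i assume "i \<in> {..<k}"
  then have i: "i < k" by simp
  have le: "tt (Suc i) \<le> T" "tt i \<le> T" using tt_le_T[of "Suc i"] tt_le_T[of i] i by auto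
  have lt: "tt i < tt (Suc i)" using ttinc[OF i] .
  show "a i T \<omega> - a i r \<omega> = \<xi> i \<omega> * (W (tt (Suc i)) \<omega> - W (max (tt i) (min r (tt (Suc i)))) \<omega>)"
    unfolding a_def using le lt
    by (cases "r \<le> tt i"; cases "r \<le> tt (Suc i)") (auto simp: min_def max_def algebra_simps)
qed

lemma orth_simple:
  assumes r: "0 \<le> r" "r \<le> T" and Y: "Y \<in> borel_measurable (Fm r)" "integrable M (\<lambda>\<omega>. (Y \<omega>)\<^sup>2)"
  shows "integrable M (\<lambda>\<omega>. Y \<omega> * (In T \<omega> - In r \<omega>))"
    "expectation (\<lambda>\<omega>. Y \<omega> * (In T \<omega> - In r \<omega>)) = 0"
proof -
  define c where "c i = max (tt i) (min r (tt (Suc i)))" for i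
  define g where "g i \<omega> = Y \<omega> * \<xi> i \<omega> * (W (tt (Suc i)) \<omega> - W (c i) \<omega>)" for i \<omega>
  have eq: "(\<lambda>\<omega>. Y \<omega> * (In T \<omega> - In r \<omega>)) = (\<lambda>\<omega>. \<Sum>i<k. g i \<omega>)"
    unfolding In_diff[OF r] g_def c_def by (simp add: sum_distrib_left mult_ac)
  have gi: "integrable M (g i) \<and> expectation (g i) = 0" if i: "i < k" for i
  proof (cases "r \<le> tt (Suc i)")
    case False
    then have "c i = tt (Suc i)" unfolding c_def using ttinc[OF i] by (simp add: min_def max_def)
    then have "g i = (\<lambda>\<omega>. 0)" unfolding g_def by simp
    then show ?thesis by simp
  next
    case True
    have ci: "0 \<le> c i" "c i \<le> tt (Suc i)" "r \<le> c i" "tt i \<le> c i"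
      unfolding c_def using True ttinc[OF i] tt_nonneg[of i] i by (auto simp: min_def max_def)
    have Ym: "(\<lambda>\<omega>. Y \<omega> * \<xi> i \<omega>) \<in> borel_measurable (Fm (c i))"
      using Fm_mono[OF ci(3) Y(1)] Fm_mono[OF ci(4) \<xi>Fm[OF i]] by measurable
    have Yint: "integrable M (\<lambda>\<omega>. Y \<omega> * \<xi> i \<omega>)"
      using Fm_sub_M[OF Y(1)] \<xi>m[OF i] Y(2) \<xi>sq_int[OF i] by (rule L2_mult_integrable)
    show ?thesis unfolding g_def using orth[OF ci(1) ci(2) Ym Yint] by simp
  qed
  show "integrable M (\<lambda>\<omega>. Y \<omega> * (In T \<omega> - In r \<omega>))"
    unfolding eq using gi by (intro Bochner_Integration.integrable_sum) auto
  have "expectation (\<lambda>\<omega>. \<Sum>i<k. g i \<omega>) = (\<Sum>i<k. expectation (g i))"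
    using gi by (intro Bochner_Integration.integral_sum) auto
  also have "\<dots> = 0" using gi by simp
  finally show "expectation (\<lambda>\<omega>. Y \<omega> * (In T \<omega> - In r \<omega>)) = 0" unfolding eq .
qed

definition S :: "real \<Rightarrow> 'a \<Rightarrow> real" where
  "S t \<omega> = (\<Sum>i<k. \<xi> i \<omega> * indicator {tt i<..tt (Suc i)} t)"

lemma disj: "i < k \<Longrightarrow> j < k \<Longrightarrow> t \<in> {tt i<..tt (Suc i)} \<Longrightarrow> t \<in> {tt j<..tt (Suc j)} \<Longrightarrow> i = j"
proof (rule ccontr)
  assume a: "i < k" "j < k" "t \<in> {tt i<..tt (Suc i)}" "t \<in> {tt j<..tt (Suc j)}" "i \<noteq> j"
  show False
  proof (cases "i < j")
    case True
    then have "tt (Suc i) \<le> tt j" using tt_mono[of "Suc i" j] a by simp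
    then show False using a by auto
  next
    case False
    then have "tt (Suc j) \<le> tt i" using tt_mono[of "Suc j" i] a by simp
    then show False using a by auto
  qed
qed

lemma pointwise_S:
  "(\<Sum>i<k. ennreal ((\<xi> i \<omega>)\<^sup>2) * indicator {tt i<..tt (Suc i)} t) \<le> ennreal ((S t \<omega>)\<^sup>2) * indicator {0..T} t"
proof (cases "\<exists>i<k. t \<in> {tt i<..tt (Suc i)}")
  case False
  then have "(\<Sum>i<k. ennreal ((\<xi> i \<omega>)\<^sup>2) * indicator {tt i<..tt (Suc i)} t) = 0"
    by (intro sum.neutral) auto
  then show ?thesis by simp
next
  case True
  then obtain i0 where i0: "i0 < k" "t \<in> {tt i0<..tt (Suc i0)}" by blast
  have oth: "j < k \<Longrightarrow> j \<noteq> i0 \<Longrightarrow> t \<notin> {tt j<..tt (Suc j)}" for j using disj[OF i0(1) _ i0(2)] by blast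
  have "(\<Sum>i<k. ennreal ((\<xi> i \<omega>)\<^sup>2) * indicator {tt i<..tt (Suc i)} t) = ennreal ((\<xi> i0 \<omega>)\<^sup>2)"
    using i0 oth by (subst sum.remove[of _ i0]) (auto intro!: sum.neutral)
  moreover have "S t \<omega> = \<xi> i0 \<omega>"
    unfolding S_def using i0 oth by (subst sum.remove[of _ i0]) (auto intro!: sum.neutral)
  moreover have "t \<in> {0..T}" using i0 tt_nonneg[of i0] tt_le_T[of "Suc i0"] by auto
  ultimately show ?thesis by simp
qed

lemma S_meas: "(\<lambda>(t, \<omega>). S t \<omega>) \<in> borel_measurable (lborel \<Otimes>\<^sub>M M)"
proof -
  have eq: "(\<lambda>(t, \<omega>). S t \<omega>) = (\<lambda>x. \<Sum>i<k. \<xi> i (snd x) * indicator {tt i<..tt (Suc i)} (fst x))"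
    by (auto simp: S_def fun_eq_iff)
  show ?thesis unfolding eq
  proof (intro borel_measurable_sum)
    fix i assume "i \<in> {..<k}"
    then have [measurable]: "\<xi> i \<in> borel_measurable M" by (simp add: \<xi>m)
    show "(\<lambda>x. \<xi> i (snd x) * indicator {tt i<..tt (Suc i)} (fst x)) \<in> borel_measurable (lborel \<Otimes>\<^sub>M M)"
      by measurable
  qed
qed

lemma sum_le_S:
  "(\<Sum>i<k. ennreal (expectation (\<lambda>\<omega>. (\<xi> i \<omega>)\<^sup>2) * (tt (Suc i) - tt i)))
     \<le> (\<integral>\<^sup>+\<omega>. (\<integral>\<^sup>+t. ennreal ((S t \<omega>)\<^sup>2) * indicator {0..T} t \<partial>lborel) \<partial>M)"
proof -
  have "(\<Sum>i<k. ennreal (expectation (\<lambda>\<omega>. (\<xi> i \<omega>)\<^sup>2) * (tt (Suc i) - tt i)))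
      = (\<Sum>i<k. (\<integral>\<^sup>+\<omega>. ennreal ((\<xi> i \<omega>)\<^sup>2) \<partial>M) * ennreal (tt (Suc i) - tt i))"
  proof (intro sum.cong refl)
    fix i assume "i \<in> {..<k}"
    then have i: "i < k" by simp
    have "(\<integral>\<^sup>+\<omega>. ennreal ((\<xi> i \<omega>)\<^sup>2) \<partial>M) = ennreal (expectation (\<lambda>\<omega>. (\<xi> i \<omega>)\<^sup>2))"
      using \<xi>sq_int[OF i] by (intro nn_integral_eq_integral) auto
    moreover have "0 \<le> expectation (\<lambda>\<omega>. (\<xi> i \<omega>)\<^sup>2)" by simp
    moreover have "0 \<le> tt (Suc i) - tt i" using ttinc[OF i] by simp
    ultimately show "ennreal (expectation (\<lambda>\<omega>. (\<xi> i \<omega>)\<^sup>2) * (tt (Suc i) - tt i)) =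
        (\<integral>\<^sup>+\<omega>. ennreal ((\<xi> i \<omega>)\<^sup>2) \<partial>M) * ennreal (tt (Suc i) - tt i)"
      by (simp add: ennreal_mult)
  qed
  also have "\<dots> = (\<Sum>i<k. (\<integral>\<^sup>+\<omega>. (\<integral>\<^sup>+t. ennreal ((\<xi> i \<omega>)\<^sup>2) * indicator {tt i<..tt (Suc i)} t \<partial>lborel) \<partial>M))"
  proof (intro sum.cong refl)
    fix i assume "i \<in> {..<k}"
    then have i: "i < k" by simp
    have "(\<lambda>\<omega>. (\<integral>\<^sup>+t. ennreal ((\<xi> i \<omega>)\<^sup>2) * indicator {tt i<..tt (Suc i)} t \<partial>lborel))
        = (\<lambda>\<omega>. ennreal ((\<xi> i \<omega>)\<^sup>2) * ennreal (tt (Suc i) - tt i))"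
      using ttinc[OF i] by (intro ext) (simp add: nn_integral_cmult_indicator)
    then show "(\<integral>\<^sup>+\<omega>. ennreal ((\<xi> i \<omega>)\<^sup>2) \<partial>M) * ennreal (tt (Suc i) - tt i) =
        (\<integral>\<^sup>+\<omega>. (\<integral>\<^sup>+t. ennreal ((\<xi> i \<omega>)\<^sup>2) * indicator {tt i<..tt (Suc i)} t \<partial>lborel) \<partial>M)"
      using \<xi>m[OF i] by (simp add: nn_integral_multc)
  qed
  also have "\<dots> = (\<integral>\<^sup>+\<omega>. (\<Sum>i<k. (\<integral>\<^sup>+t. ennreal ((\<xi> i \<omega>)\<^sup>2) * indicator {tt i<..tt (Suc i)} t \<partial>lborel)) \<partial>M)"
  proof (rule nn_integral_sum[symmetric])
    fix i assume "i \<in> {..<k}"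
    then have i: "i < k" by simp
    have [measurable]: "\<xi> i \<in> borel_measurable M" using \<xi>m[OF i] .
    show "(\<lambda>\<omega>. \<integral>\<^sup>+ t. ennreal ((\<xi> i \<omega>)\<^sup>2) * indicator {tt i<..tt (Suc i)} t \<partial>lborel) \<in> borel_measurable M"
      by measurable
  qed
  also have "\<dots> = (\<integral>\<^sup>+\<omega>. (\<integral>\<^sup>+t. (\<Sum>i<k. ennreal ((\<xi> i \<omega>)\<^sup>2) * indicator {tt i<..tt (Suc i)} t) \<partial>lborel) \<partial>M)"
    by (intro nn_integral_cong nn_integral_sum[symmetric]) auto
  also have "\<dots> \<le> (\<integral>\<^sup>+\<omega>. (\<integral>\<^sup>+t. ennreal ((S t \<omega>)\<^sup>2) * indicator {0..T} t \<partial>lborel) \<partial>M)"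
    by (intro nn_integral_mono pointwise_S)
  finally show ?thesis .
qed

lemma In_sq_le:
  assumes r: "0 \<le> r"
  shows "(\<integral>\<^sup>+\<omega>. ennreal ((In r \<omega>)\<^sup>2) \<partial>M) \<le> (\<integral>\<^sup>+\<omega>. (\<integral>\<^sup>+t. ennreal ((S t \<omega>)\<^sup>2) * indicator {0..T} t \<partial>lborel) \<partial>M)"
proof -
  have "(\<integral>\<^sup>+\<omega>. ennreal ((In r \<omega>)\<^sup>2) \<partial>M) = ennreal (expectation (\<lambda>\<omega>. (In r \<omega>)\<^sup>2))"
    using iso(1)[OF r] by (intro nn_integral_eq_integral) auto
  also have "\<dots> \<le> ennreal (\<Sum>i<k. expectation (\<lambda>\<omega>. (\<xi> i \<omega>)\<^sup>2) * (tt (Suc i) - tt i))"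
    using iso_le[OF r] by (rule ennreal_leI)
  also have "\<dots> = (\<Sum>i<k. ennreal (expectation (\<lambda>\<omega>. (\<xi> i \<omega>)\<^sup>2) * (tt (Suc i) - tt i)))"
  proof (rule sum_ennreal[symmetric])
    fix i assume "i \<in> {..<k}"
    then have "tt i < tt (Suc i)" using ttinc by simp
    then show "0 \<le> expectation (\<lambda>\<omega>. (\<xi> i \<omega>)\<^sup>2) * (tt (Suc i) - tt i)"
      by (intro mult_nonneg_nonneg) auto
  qed
  also have "\<dots> \<le> (\<integral>\<^sup>+\<omega>. (\<integral>\<^sup>+t. ennreal ((S t \<omega>)\<^sup>2) * indicator {0..T} t \<partial>lborel) \<partial>M)"
    by (rule sum_le_S)
  finally show ?thesis .
qed

end

lemma sq_le_ennreal: "ennreal (a\<^sup>2) \<le> 2 * ennreal ((a - b)\<^sup>2) + 2 * ennreal ((b::real)\<^sup>2)"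
proof -
  have "a\<^sup>2 \<le> 2 * (a - b)\<^sup>2 + 2 * b\<^sup>2"
  proof -
    have "0 \<le> (a - 2 * b)\<^sup>2" by simp
    then show ?thesis by (simp add: power2_eq_square algebra_simps)
  qed
  then have "ennreal (a\<^sup>2) \<le> ennreal (2 * (a - b)\<^sup>2 + 2 * b\<^sup>2)" by (rule ennreal_leI)
  also have "\<dots> = 2 * ennreal ((a - b)\<^sup>2) + 2 * ennreal (b\<^sup>2)"
    by (simp add: ennreal_plus ennreal_mult)
  finally show ?thesis .
qed

context bm begin

interpretation P: pair_sigma_finite lborel M
  by (intro pair_sigma_finite.intro lborel.sigma_finite_measure_axioms sigma_finite_measure_axioms)

lemma simple_bridge:
  assumes "simple_ito M W T S I"
  shows "\<And>r. 0 \<le> r \<Longrightarrow> I r \<in> borel_measurable M"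
    "\<And>r. 0 \<le> r \<Longrightarrow> (\<integral>\<^sup>+\<omega>. ennreal ((I r \<omega>)\<^sup>2) \<partial>M) \<le> (\<integral>\<^sup>+\<omega>. (\<integral>\<^sup>+t. ennreal ((S t \<omega>)\<^sup>2) * indicator {0..T} t \<partial>lborel) \<partial>M)"
    "\<And>r Y. 0 \<le> r \<Longrightarrow> r \<le> T \<Longrightarrow> Y \<in> borel_measurable (Fm r) \<Longrightarrow> integrable M (\<lambda>\<omega>. (Y \<omega>)\<^sup>2) \<Longrightarrow>
        integrable M (\<lambda>\<omega>. Y \<omega> * (I T \<omega> - I r \<omega>)) \<and> expectation (\<lambda>\<omega>. Y \<omega> * (I T \<omega> - I r \<omega>)) = 0"
    "(\<lambda>(t, \<omega>). S t \<omega>) \<in> borel_measurable (lborel \<Otimes>\<^sub>M M)"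
proof -
  obtain k tt \<xi> where H: "tt 0 = 0" "tt k = T" "\<forall>i<k. tt i < tt (Suc i)"
    "\<forall>i<k. \<xi> i \<in> borel_measurable M \<and>
           (\<forall>B \<in> sets (borel :: real measure). \<xi> i -` B \<inter> space M \<in> std_filtration M W (tt i)) \<and>
           (\<integral>\<^sup>+ \<omega>. ennreal ((\<xi> i \<omega>)\<^sup>2) \<partial>M) < \<infinity>"
    "S = (\<lambda>t \<omega>. \<Sum>i<k. \<xi> i \<omega> * indicator {tt i<..tt (Suc i)} t)"
    "I = (\<lambda>t \<omega>. \<Sum>i<k. \<xi> i \<omega> * (W (min t (tt (Suc i))) \<omega> - W (min t (tt i)) \<omega>))"
    using assms unfolding simple_ito_def by blast
  interpret SP: simp_proc M W T k tt \<xi>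
    using H by unfold_locales auto
  have S: "S = SP.S" unfolding H(5) SP.S_def by simp
  have I: "I = SP.In" unfolding H(6) SP.In_def SP.a_def by simp
  show "\<And>r. 0 \<le> r \<Longrightarrow> I r \<in> borel_measurable M" unfolding I by (rule SP.In_M)
  show "\<And>r. 0 \<le> r \<Longrightarrow> (\<integral>\<^sup>+\<omega>. ennreal ((I r \<omega>)\<^sup>2) \<partial>M) \<le> (\<integral>\<^sup>+\<omega>. (\<integral>\<^sup>+t. ennreal ((S t \<omega>)\<^sup>2) * indicator {0..T} t \<partial>lborel) \<partial>M)"
    unfolding I S by (rule SP.In_sq_le)
  show "\<And>r Y. 0 \<le> r \<Longrightarrow> r \<le> T \<Longrightarrow> Y \<in> borel_measurable (Fm r) \<Longrightarrow> integrable M (\<lambda>\<omega>. (Y \<omega>)\<^sup>2) \<Longrightarrow>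
        integrable M (\<lambda>\<omega>. Y \<omega> * (I T \<omega> - I r \<omega>)) \<and> expectation (\<lambda>\<omega>. Y \<omega> * (I T \<omega> - I r \<omega>)) = 0"
    unfolding I using SP.orth_simple by blast
  show "(\<lambda>(t, \<omega>). S t \<omega>) \<in> borel_measurable (lborel \<Otimes>\<^sub>M M)" unfolding S by (rule SP.S_meas)
qed

lemma NN_split:
  fixes f g :: "real \<Rightarrow> 'a \<Rightarrow> real"
  assumes f: "(\<lambda>(t, \<omega>). f t \<omega>) \<in> borel_measurable (lborel \<Otimes>\<^sub>M M)"
    and g: "(\<lambda>(t, \<omega>). g t \<omega>) \<in> borel_measurable (lborel \<Otimes>\<^sub>M M)"
  shows "(\<integral>\<^sup>+\<omega>. (\<integral>\<^sup>+t. ennreal ((f t \<omega>)\<^sup>2) * indicator {0..T} t \<partial>lborel) \<partial>M)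
     \<le> 2 * (\<integral>\<^sup>+\<omega>. (\<integral>\<^sup>+t. ennreal ((f t \<omega> - g t \<omega>)\<^sup>2) * indicator {0..T} t \<partial>lborel) \<partial>M)
       + 2 * (\<integral>\<^sup>+\<omega>. (\<integral>\<^sup>+t. ennreal ((g t \<omega>)\<^sup>2) * indicator {0..T} t \<partial>lborel) \<partial>M)"
proof -
  note [measurable] = f g
  have m1: "(\<lambda>x. ennreal ((f (fst x) (snd x) - g (fst x) (snd x))\<^sup>2) * indicator {0..T} (fst x)) \<in> borel_measurable (lborel \<Otimes>\<^sub>M M)"
    using f g by (simp add: split_beta') measurable
  have m2: "(\<lambda>x. ennreal ((g (fst x) (snd x))\<^sup>2) * indicator {0..T} (fst x)) \<in> borel_measurable (lborel \<Otimes>\<^sub>M M)"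
    using g by (simp add: split_beta') measurable
  have "(\<integral>\<^sup>+\<omega>. (\<integral>\<^sup>+t. ennreal ((f t \<omega>)\<^sup>2) * indicator {0..T} t \<partial>lborel) \<partial>M)
     \<le> (\<integral>\<^sup>+\<omega>. (\<integral>\<^sup>+t. 2 * (ennreal ((f t \<omega> - g t \<omega>)\<^sup>2) * indicator {0..T} t) + 2 * (ennreal ((g t \<omega>)\<^sup>2) * indicator {0..T} t) \<partial>lborel) \<partial>M)"
    by (intro nn_integral_mono) (auto simp: indicator_def sq_le_ennreal)
  also have "\<dots> = (\<integral>\<^sup>+x. 2 * (ennreal ((f (fst x) (snd x) - g (fst x) (snd x))\<^sup>2) * indicator {0..T} (fst x)) + 2 * (ennreal ((g (fst x) (snd x))\<^sup>2) * indicator {0..T} (fst x)) \<partial>(lborel \<Otimes>\<^sub>M M))"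
    using m1 m2 by (subst P.nn_integral_snd[symmetric]) auto
  also have "\<dots> = 2 * (\<integral>\<^sup>+x. ennreal ((f (fst x) (snd x) - g (fst x) (snd x))\<^sup>2) * indicator {0..T} (fst x) \<partial>(lborel \<Otimes>\<^sub>M M))
      + 2 * (\<integral>\<^sup>+x. ennreal ((g (fst x) (snd x))\<^sup>2) * indicator {0..T} (fst x) \<partial>(lborel \<Otimes>\<^sub>M M))"
    using m1 m2 by (simp add: nn_integral_add nn_integral_cmult)
  also have "\<dots> = 2 * (\<integral>\<^sup>+\<omega>. (\<integral>\<^sup>+t. ennreal ((f t \<omega> - g t \<omega>)\<^sup>2) * indicator {0..T} t \<partial>lborel) \<partial>M)
       + 2 * (\<integral>\<^sup>+\<omega>. (\<integral>\<^sup>+t. ennreal ((g t \<omega>)\<^sup>2) * indicator {0..T} t \<partial>lborel) \<partial>M)"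
    using m1 m2 by (simp add: P.nn_integral_snd[symmetric])
  finally show ?thesis .
qed

end

lemma L2_diff_sq_integrable:
  fixes f g :: "'a \<Rightarrow> real"
  assumes "f \<in> borel_measurable M" "g \<in> borel_measurable M"
    "integrable M (\<lambda>x. (f x)\<^sup>2)" "integrable M (\<lambda>x. (g x)\<^sup>2)"
  shows "integrable M (\<lambda>x. (f x - g x)\<^sup>2)"
proof -
  have "integrable M (\<lambda>x. (f x)\<^sup>2 - 2 * (f x * g x) + (g x)\<^sup>2)"
    using assms L2_mult_integrable[OF assms] by auto
  moreover have "(\<lambda>x. (f x - g x)\<^sup>2) = (\<lambda>x. (f x)\<^sup>2 - 2 * (f x * g x) + (g x)\<^sup>2)"
    by (simp add: fun_eq_iff power2_diff algebra_simps)
  ultimately show ?thesis by simp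
qed

context bm begin

lemma ito_L2:
  assumes ito: "ito_integral M W T Z I"
    and Zm: "(\<lambda>(t, \<omega>). Zc t \<omega>) \<in> borel_measurable (lborel \<Otimes>\<^sub>M M)"
    and Zc: "\<And>t \<omega>. t \<in> {0..T} \<Longrightarrow> Zc t \<omega> = Z t \<omega>"
    and Zf: "(\<integral>\<^sup>+\<omega>. (\<integral>\<^sup>+t. ennreal ((Z t \<omega>)\<^sup>2) * indicator {0..T} t \<partial>lborel) \<partial>M) < \<infinity>"
    and Jm: "\<And>t. t \<in> {0..T} \<Longrightarrow> J t \<in> borel_measurable M"
    and JI: "\<And>t. t \<in> {0..T} \<Longrightarrow> AE \<omega> in M. I t \<omega> = J t \<omega>"
  shows "\<exists>B. \<forall>r\<in>{0..T}. integrable M (\<lambda>\<omega>. (J r \<omega>)\<^sup>2) \<and> expectation (\<lambda>\<omega>. (J r \<omega>)\<^sup>2) \<le> B"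
    and "\<And>r (Y :: 'a \<Rightarrow> real). r \<in> {0..T} \<Longrightarrow> Y \<in> borel_measurable (Fm r) \<Longrightarrow> integrable M (\<lambda>\<omega>. (Y \<omega>)\<^sup>2) \<Longrightarrow>
            expectation (\<lambda>\<omega>. Y \<omega> * (J T \<omega> - J r \<omega>)) = 0"
proof -
  obtain Sn In where simp: "\<And>n. simple_ito M W T (Sn n) (In n)"
    and c1: "(\<lambda>n. \<integral>\<^sup>+ \<omega>. (\<integral>\<^sup>+ t. ennreal ((Sn n t \<omega> - Z t \<omega>)\<^sup>2) * indicator {0..T} t \<partial>lborel) \<partial>M) \<longlonglongrightarrow> 0"
    and c2: "\<And>t. t \<in> {0..T} \<Longrightarrow> (\<lambda>n. \<integral>\<^sup>+ \<omega>. ennreal ((In n t \<omega> - I t \<omega>)\<^sup>2) \<partial>M) \<longlonglongrightarrow> 0"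
    using ito unfolding ito_integral_def by blast
  define NN where "NN f = (\<integral>\<^sup>+\<omega>. (\<integral>\<^sup>+t. ennreal ((f t \<omega>)\<^sup>2) * indicator {0..T} t \<partial>lborel) \<partial>M)"
    for f :: "real \<Rightarrow> 'a \<Rightarrow> real"
  have ind_cong: "NN f = NN g" if "\<And>t \<omega>. t \<in> {0..T} \<Longrightarrow> f t \<omega> = g t \<omega>" for f g
    unfolding NN_def using that by (intro nn_integral_cong) (auto simp: indicator_def)
  have QZ: "NN Zc < \<infinity>" using Zf ind_cong[of Zc Z] Zc unfolding NN_def by simp
  have c1': "(\<lambda>n. NN (\<lambda>t \<omega>. Sn n t \<omega> - Zc t \<omega>)) \<longlonglongrightarrow> 0"
  proof -
    have "NN (\<lambda>t \<omega>. Sn n t \<omega> - Zc t \<omega>) = NN (\<lambda>t \<omega>. Sn n t \<omega> - Z t \<omega>)" for n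
      using Zc by (intro ind_cong) simp
    then show ?thesis using c1 unfolding NN_def by simp
  qed
  have c2': "(\<lambda>n. \<integral>\<^sup>+ \<omega>. ennreal ((In n t \<omega> - J t \<omega>)\<^sup>2) \<partial>M) \<longlonglongrightarrow> 0" if t: "t \<in> {0..T}" for t
  proof -
    have "(\<integral>\<^sup>+ \<omega>. ennreal ((In n t \<omega> - J t \<omega>)\<^sup>2) \<partial>M) = (\<integral>\<^sup>+ \<omega>. ennreal ((In n t \<omega> - I t \<omega>)\<^sup>2) \<partial>M)" for n
      using JI[OF t] by (intro nn_integral_cong_AE) auto
    then show ?thesis using c2[OF t] by simp
  qed
  have T0: "0 \<le> T" if "r \<in> {0..T}" for r using that by simp
  obtain N1 where N1: "\<And>n. n \<ge> N1 \<Longrightarrow> NN (\<lambda>t \<omega>. Sn n t \<omega> - Zc t \<omega>) < 1"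
    using order_tendstoD(2)[OF c1', of 1] unfolding eventually_sequentially by auto
  define B0 where "B0 = 2 * 1 + 2 * NN Zc"
  have B0f: "B0 < \<infinity>" unfolding B0_def using QZ by (simp add: ennreal_mult_less_top)
  have SnB: "NN (Sn n) \<le> B0" if "n \<ge> N1" for n
  proof -
    have "NN (Sn n) \<le> 2 * NN (\<lambda>t \<omega>. Sn n t \<omega> - Zc t \<omega>) + 2 * NN Zc"
      unfolding NN_def by (rule NN_split[OF simple_bridge(4)[OF simp] Zm])
    also have "\<dots> \<le> B0" unfolding B0_def using N1[OF that]
      by (intro add_mono mult_left_mono) auto
    finally show ?thesis .
  qed
  define Bn where "Bn = 2 * 1 + 2 * B0"
  have Bnf: "Bn < \<infinity>" unfolding Bn_def using B0f by (simp add: ennreal_mult_less_top)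
  have Jb: "(\<integral>\<^sup>+\<omega>. ennreal ((J r \<omega>)\<^sup>2) \<partial>M) \<le> Bn" if r: "r \<in> {0..T}" for r
  proof -
    obtain N2 where N2: "\<And>n. n \<ge> N2 \<Longrightarrow> (\<integral>\<^sup>+ \<omega>. ennreal ((In n r \<omega> - J r \<omega>)\<^sup>2) \<partial>M) < 1"
      using order_tendstoD(2)[OF c2'[OF r], of 1] unfolding eventually_sequentially by auto
    define n where "n = max N1 N2"
    have Inm: "In n r \<in> borel_measurable M" using simple_bridge(1)[OF simp] r by auto
    have "(\<integral>\<^sup>+\<omega>. ennreal ((J r \<omega>)\<^sup>2) \<partial>M) \<le> (\<integral>\<^sup>+\<omega>. 2 * ennreal ((J r \<omega> - In n r \<omega>)\<^sup>2) + 2 * ennreal ((In n r \<omega>)\<^sup>2) \<partial>M)"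
      by (intro nn_integral_mono sq_le_ennreal)
    also have "\<dots> = 2 * (\<integral>\<^sup>+\<omega>. ennreal ((In n r \<omega> - J r \<omega>)\<^sup>2) \<partial>M) + 2 * (\<integral>\<^sup>+\<omega>. ennreal ((In n r \<omega>)\<^sup>2) \<partial>M)"
      using Inm Jm[OF r] by (simp add: nn_integral_add nn_integral_cmult power2_commute)
    also have "\<dots> \<le> 2 * 1 + 2 * B0"
    proof (intro add_mono mult_left_mono)
      show "(\<integral>\<^sup>+\<omega>. ennreal ((In n r \<omega> - J r \<omega>)\<^sup>2) \<partial>M) \<le> 1" using N2[of n] n_def by simp
      have "(\<integral>\<^sup>+\<omega>. ennreal ((In n r \<omega>)\<^sup>2) \<partial>M) \<le> NN (Sn n)"
        unfolding NN_def using simple_bridge(2)[OF simp] r by auto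
      also have "\<dots> \<le> B0" using SnB[of n] n_def by simp
      finally show "(\<integral>\<^sup>+\<omega>. ennreal ((In n r \<omega>)\<^sup>2) \<partial>M) \<le> B0" .
    qed auto
    finally show ?thesis unfolding Bn_def .
  qed
  have Jint: "integrable M (\<lambda>\<omega>. (J r \<omega>)\<^sup>2)" if r: "r \<in> {0..T}" for r
    using Jb[OF r] Bnf Jm[OF r] by (auto simp: integrable_iff_bounded)
  show "\<exists>B. \<forall>r\<in>{0..T}. integrable M (\<lambda>\<omega>. (J r \<omega>)\<^sup>2) \<and> expectation (\<lambda>\<omega>. (J r \<omega>)\<^sup>2) \<le> B"
  proof (intro exI ballI conjI)
    fix r assume r: "r \<in> {0..T}"
    show "integrable M (\<lambda>\<omega>. (J r \<omega>)\<^sup>2)" by (rule Jint[OF r])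
    have "ennreal (expectation (\<lambda>\<omega>. (J r \<omega>)\<^sup>2)) = (\<integral>\<^sup>+\<omega>. ennreal ((J r \<omega>)\<^sup>2) \<partial>M)"
      using Jint[OF r] by (intro nn_integral_eq_integral[symmetric]) auto
    then have "ennreal (expectation (\<lambda>\<omega>. (J r \<omega>)\<^sup>2)) \<le> Bn" using Jb[OF r] by simp
    then have "enn2real (ennreal (expectation (\<lambda>\<omega>. (J r \<omega>)\<^sup>2))) \<le> enn2real Bn"
      using Bnf by (intro enn2real_mono) auto
    then show "expectation (\<lambda>\<omega>. (J r \<omega>)\<^sup>2) \<le> enn2real Bn" by simp
  qed
  fix r and Y :: "'a \<Rightarrow> real" assume r: "r \<in> {0..T}" and Y: "Y \<in> borel_measurable (Fm r)" "integrable M (\<lambda>\<omega>. (Y \<omega>)\<^sup>2)"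
  have TT: "T \<in> {0..T}" using r by simp
  have YM: "Y \<in> borel_measurable M" using Fm_sub_M[OF Y(1)] .
  define c where "c = expectation (\<lambda>\<omega>. Y \<omega> * (J T \<omega> - J r \<omega>))"
  have cint: "integrable M (\<lambda>\<omega>. Y \<omega> * (J T \<omega> - J r \<omega>))"
    using L2_mult_integrable[OF YM _ Y(2) L2_diff_sq_integrable[OF Jm[OF TT] Jm[OF r] Jint[OF TT] Jint[OF r]]]
      Jm[OF TT] Jm[OF r] by auto
  define D where "D n \<omega> = (J T \<omega> - In n T \<omega>) - (J r \<omega> - In n r \<omega>)" for n \<omega>
  define QY where "QY = (\<integral>\<^sup>+\<omega>. ennreal ((Y \<omega>)\<^sup>2) \<partial>M)"
  have QYf: "QY < \<infinity>" unfolding QY_def using Y(2) by (auto simp: integrable_iff_bounded)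
  define dn where "dn n = (\<integral>\<^sup>+ \<omega>. ennreal ((In n T \<omega> - J T \<omega>)\<^sup>2) \<partial>M) + (\<integral>\<^sup>+ \<omega>. ennreal ((In n r \<omega> - J r \<omega>)\<^sup>2) \<partial>M)" for n
  have bound: "(ennreal \<bar>c\<bar>)\<^sup>2 \<le> QY * (2 * dn n)" for n
  proof -
    have InTm: "In n T \<in> borel_measurable M" "In n r \<in> borel_measurable M"
      using simple_bridge(1)[OF simp] r by auto
    have Dm: "D n \<in> borel_measurable M" unfolding D_def using InTm Jm[OF TT] Jm[OF r] by measurable
    have o: "integrable M (\<lambda>\<omega>. Y \<omega> * (In n T \<omega> - In n r \<omega>)) \<and> expectation (\<lambda>\<omega>. Y \<omega> * (In n T \<omega> - In n r \<omega>)) = 0"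
      using simple_bridge(3)[OF simp] r Y by auto
    have eqc: "c = expectation (\<lambda>\<omega>. Y \<omega> * D n \<omega>)"
    proof -
      have "expectation (\<lambda>\<omega>. Y \<omega> * D n \<omega>) = expectation (\<lambda>\<omega>. Y \<omega> * (J T \<omega> - J r \<omega>) - Y \<omega> * (In n T \<omega> - In n r \<omega>))"
        unfolding D_def by (simp add: algebra_simps)
      also have "\<dots> = c - 0" unfolding c_def using cint o by (subst Bochner_Integration.integral_diff) auto
      finally show ?thesis by simp
    qed
    have YDint: "integrable M (\<lambda>\<omega>. Y \<omega> * D n \<omega>)"
    proof -
      have "integrable M (\<lambda>\<omega>. Y \<omega> * (J T \<omega> - J r \<omega>) - Y \<omega> * (In n T \<omega> - In n r \<omega>))" using cint o by auto
      then show ?thesis unfolding D_def by (simp add: algebra_simps)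
    qed
    have "ennreal \<bar>c\<bar> \<le> (\<integral>\<^sup>+\<omega>. ennreal (norm (Y \<omega> * D n \<omega>)) \<partial>M)"
      unfolding eqc using integral_norm_bound_ennreal[OF YDint] by simp
    also have "\<dots> = (\<integral>\<^sup>+\<omega>. ennreal \<bar>Y \<omega>\<bar> * ennreal \<bar>D n \<omega>\<bar> \<partial>M)"
      by (intro nn_integral_cong) (simp add: abs_mult ennreal_mult)
    finally have c1: "ennreal \<bar>c\<bar> \<le> (\<integral>\<^sup>+\<omega>. ennreal \<bar>Y \<omega>\<bar> * ennreal \<bar>D n \<omega>\<bar> \<partial>M)" .
    have "(ennreal \<bar>c\<bar>)\<^sup>2 \<le> (\<integral>\<^sup>+\<omega>. ennreal \<bar>Y \<omega>\<bar> * ennreal \<bar>D n \<omega>\<bar> \<partial>M)\<^sup>2"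
      using c1 by (intro power_mono) auto
    also have "\<dots> \<le> (\<integral>\<^sup>+\<omega>. (ennreal \<bar>Y \<omega>\<bar>) ^ 2 \<partial>M) * (\<integral>\<^sup>+\<omega>. (ennreal \<bar>D n \<omega>\<bar>) ^ 2 \<partial>M)"
      using YM Dm by (intro Cauchy_Schwarz_nn_integral) auto
    also have "(\<integral>\<^sup>+\<omega>. (ennreal \<bar>Y \<omega>\<bar>) ^ 2 \<partial>M) = QY"
      unfolding QY_def by (intro nn_integral_cong) (simp add: ennreal_power)
    also have "(\<integral>\<^sup>+\<omega>. (ennreal \<bar>D n \<omega>\<bar>) ^ 2 \<partial>M) \<le> 2 * dn n"
    proof -
      have "(\<integral>\<^sup>+\<omega>. (ennreal \<bar>D n \<omega>\<bar>) ^ 2 \<partial>M) \<le> (\<integral>\<^sup>+\<omega>. 2 * ennreal ((In n T \<omega> - J T \<omega>)\<^sup>2) + 2 * ennreal ((In n r \<omega> - J r \<omega>)\<^sup>2) \<partial>M)"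
      proof (intro nn_integral_mono)
        fix \<omega>
        have "(ennreal \<bar>D n \<omega>\<bar>) ^ 2 = ennreal ((D n \<omega>)\<^sup>2)" by (simp add: ennreal_power)
        also have "\<dots> \<le> 2 * ennreal ((D n \<omega> - (In n r \<omega> - J r \<omega>))\<^sup>2) + 2 * ennreal ((In n r \<omega> - J r \<omega>)\<^sup>2)"
          by (rule sq_le_ennreal)
        also have "(D n \<omega> - (In n r \<omega> - J r \<omega>))\<^sup>2 = (In n T \<omega> - J T \<omega>)\<^sup>2"
          unfolding D_def by (simp add: power2_commute algebra_simps)
        finally show "(ennreal \<bar>D n \<omega>\<bar>) ^ 2 \<le> 2 * ennreal ((In n T \<omega> - J T \<omega>)\<^sup>2) + 2 * ennreal ((In n r \<omega> - J r \<omega>)\<^sup>2)" .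
      qed
      also have "\<dots> = 2 * dn n"
        unfolding dn_def using InTm Jm[OF TT] Jm[OF r]
        by (simp add: nn_integral_add nn_integral_cmult distrib_left)
      finally show ?thesis .
    qed
    finally show ?thesis by (simp add: mult_left_mono)
  qed
  have "(\<lambda>n. dn n) \<longlonglongrightarrow> 0 + 0" unfolding dn_def by (intro tendsto_add c2'[OF TT] c2'[OF r])
  then have "(\<lambda>n. QY * (2 * dn n)) \<longlonglongrightarrow> QY * (2 * 0)"
    using QYf by (intro ennreal_tendsto_cmult) (auto intro: ennreal_tendsto_cmult)
  then have "(ennreal \<bar>c\<bar>)\<^sup>2 \<le> QY * (2 * 0)"
    using bound by (intro tendsto_lowerbound) (auto intro: always_eventually)
  then have "(ennreal \<bar>c\<bar>)\<^sup>2 = 0" by simp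
  then show "expectation (\<lambda>\<omega>. Y \<omega> * (J T \<omega> - J r \<omega>)) = 0" unfolding c_def by simp
qed

end

lemma integrable_prod_lborel:
  fixes F G :: "real \<Rightarrow> real"
  assumes F: "integrable lborel F" and G: "integrable lborel G"
  shows "integrable (lborel \<Otimes>\<^sub>M lborel) (\<lambda>(x, y). F x * G y)"
proof -
  have [measurable]: "F \<in> borel_measurable borel" "G \<in> borel_measurable borel" using F G by auto
  have m: "(\<lambda>z. ennreal (norm (F (fst z) * G (snd z)))) \<in> borel_measurable (lborel \<Otimes>\<^sub>M lborel)"
    by measurable
  have "(\<integral>\<^sup>+z. ennreal (norm (F (fst z) * G (snd z))) \<partial>(lborel \<Otimes>\<^sub>M lborel))
      = (\<integral>\<^sup>+x. (\<integral>\<^sup>+y. ennreal (norm (F x * G y)) \<partial>lborel) \<partial>lborel)"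
    using lborel.nn_integral_fst[OF m] by simp
  also have "\<dots> = (\<integral>\<^sup>+x. ennreal (norm (F x)) * (\<integral>\<^sup>+y. ennreal (norm (G y)) \<partial>lborel) \<partial>lborel)"
    by (intro nn_integral_cong) (auto simp: abs_mult ennreal_mult nn_integral_cmult)
  also have "\<dots> = (\<integral>\<^sup>+x. ennreal (norm (F x)) \<partial>lborel) * (\<integral>\<^sup>+y. ennreal (norm (G y)) \<partial>lborel)"
    by (simp add: nn_integral_multc)
  also have "\<dots> < \<infinity>" using F G by (auto simp: integrable_iff_bounded ennreal_mult_less_top)
  finally show ?thesis by (subst integrable_iff_bounded) (auto simp: split_beta')
qed

lemma ibp:
  fixes f g :: "real \<Rightarrow> real"
  assumes f: "set_integrable lborel {0..T} f" and g: "set_integrable lborel {0..T} g"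
  shows "(LINT r:{0..T}|lborel. g r * (LINT s:{0..r}|lborel. f s))
       = (LINT s:{0..T}|lborel. f s) * (LINT r:{0..T}|lborel. g r) - (LINT s:{0..T}|lborel. f s * (LINT r:{0..s}|lborel. g r))"
proof -
  define F' where "F' x = indicator {0..T} x * f x" for x
  define G' where "G' x = indicator {0..T} x * g x" for x
  have Fi: "integrable lborel F'" using f unfolding F'_def set_integrable_def by simp
  have Gi: "integrable lborel G'" using g unfolding G'_def set_integrable_def by simp
  have [measurable]: "F' \<in> borel_measurable borel" "G' \<in> borel_measurable borel" using Fi Gi by auto
  define hh where "hh x y = (if x \<le> y then F' x * G' y else 0)" for x y
  have hint: "integrable (lborel \<Otimes>\<^sub>M lborel) (\<lambda>(x, y). hh x y)"
  proof (rule Bochner_Integration.integrable_bound[OF integrable_prod_lborel[OF Fi Gi]])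
    show "(\<lambda>(x, y). hh x y) \<in> borel_measurable (lborel \<Otimes>\<^sub>M lborel)" unfolding hh_def by measurable
    show "AE z in lborel \<Otimes>\<^sub>M lborel. norm ((\<lambda>(x, y). hh x y) z) \<le> norm ((\<lambda>(x, y). F' x * G' y) z)"
      by (intro AE_I2) (auto simp: hh_def)
  qed
  have fub: "(LBINT y. LBINT x. hh x y) = (LBINT x. LBINT y. hh x y)"
    using lborel_pair.Fubini_integral[OF hint] .
  define Fi' where "Fi' r = (LINT s:{0..r}|lborel. f s)" for r
  define Gi' where "Gi' r = (LINT s:{0..r}|lborel. g s)" for r
  have inner1: "(LBINT x. hh x y) = G' y * Fi' y" for y
  proof (cases "y \<in> {0..T}")
    case True
    have "(LBINT x. hh x y) = (LBINT x. G' y * (indicator {0..y} x * f x))"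
      using True by (intro Bochner_Integration.integral_cong) (auto simp: hh_def F'_def indicator_def)
    also have "\<dots> = G' y * Fi' y" unfolding Fi'_def set_lebesgue_integral_def by simp
    finally show ?thesis .
  next
    case False
    then have "G' y = 0" by (simp add: G'_def)
    then have "(\<lambda>x. hh x y) = (\<lambda>x. 0)" by (auto simp: hh_def fun_eq_iff)
    then show ?thesis using \<open>G' y = 0\<close> by simp
  qed
  have inner2: "(LBINT y. hh x y) = F' x * (Gi' T - Gi' x)" for x
  proof (cases "x \<in> {0..T}")
    case True
    have gsi: "set_integrable lborel {0..x} g" "set_integrable lborel {0..<x} g"
      using True by (auto intro: set_integrable_subset[OF g])
    have m1: "(\<lambda>y. indicator {0..<x} y * g y) \<in> borel_measurable lborel"
      "(\<lambda>y. indicator {0..x} y * g y) \<in> borel_measurable lborel"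
      using gsi unfolding set_integrable_def by auto
    have "AE y in lborel. indicator {0..<x} y * g y = indicator {0..x} y * g y"
      by (rule eventually_mono[OF AE_lborel_singleton[of x]]) (auto simp: indicator_def)
    then have e: "(LBINT y. indicator {0..<x} y * g y) = Gi' x"
      unfolding Gi'_def set_lebesgue_integral_def
      by (subst integral_cong_AE[OF m1]) auto
    have "(LBINT y. hh x y) = (LBINT y. F' x * (indicator {0..T} y * g y - indicator {0..<x} y * g y))"
      using True by (intro Bochner_Integration.integral_cong) (auto simp: hh_def G'_def indicator_def)
    also have "\<dots> = F' x * ((LBINT y. indicator {0..T} y * g y) - (LBINT y. indicator {0..<x} y * g y))"
      using g gsi unfolding set_integrable_def by simp
    also note e
    finally show ?thesis unfolding Gi'_def set_lebesgue_integral_def by simp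
  next
    case False
    then have "F' x = 0" by (simp add: F'_def)
    then have "(\<lambda>y. hh x y) = (\<lambda>y. 0)" by (auto simp: hh_def fun_eq_iff)
    then show ?thesis using \<open>F' x = 0\<close> by simp
  qed
  define Gc where "Gc r = (LBINT s. (if 0 \<le> s \<and> s \<le> r then G' s else 0))" for r
  have Gcm[measurable]: "Gc \<in> borel_measurable borel" unfolding Gc_def by measurable
  have GcG: "Gc r = Gi' r" if "r \<in> {0..T}" for r
    unfolding Gc_def Gi'_def set_lebesgue_integral_def using that
    by (intro Bochner_Integration.integral_cong) (auto simp: G'_def indicator_def)
  define KK where "KK = (LBINT y. \<bar>G' y\<bar>)"
  have Gcr_int: "integrable lborel (\<lambda>s. if 0 \<le> s \<and> s \<le> r then G' s else 0)" for r
    by (rule Bochner_Integration.integrable_bound[OF Gi]) (auto intro!: AE_I2)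
  have Gcb: "\<bar>Gc r\<bar> \<le> KK" for r
  proof -
    have "\<bar>Gc r\<bar> \<le> (LBINT s. norm (if 0 \<le> s \<and> s \<le> r then G' s else 0))"
      unfolding Gc_def using integral_norm_bound[of lborel "\<lambda>s. if 0 \<le> s \<and> s \<le> r then G' s else 0"] by simp
    also have "\<dots> \<le> KK" unfolding KK_def
      using Gcr_int[of r] Gi by (intro integral_mono) auto
    finally show ?thesis .
  qed
  have FGc_int: "integrable lborel (\<lambda>x. F' x * Gc x)"
  proof (rule Bochner_Integration.integrable_bound[of _ "\<lambda>x. F' x * KK"])
    show "integrable lborel (\<lambda>x. F' x * KK)" using Fi by simp
    show "(\<lambda>x. F' x * Gc x) \<in> borel_measurable lborel" by measurable
    show "AE x in lborel. norm (F' x * Gc x) \<le> norm (F' x * KK)"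
    proof (intro AE_I2)
      fix x
      have "\<bar>F' x\<bar> * \<bar>Gc x\<bar> \<le> \<bar>F' x\<bar> * KK" using Gcb by (intro mult_left_mono) auto
      moreover have "0 \<le> KK" unfolding KK_def by simp
      ultimately show "norm (F' x * Gc x) \<le> norm (F' x * KK)" by (simp add: abs_mult)
    qed
  qed
  have L: "(LBINT y. LBINT x. hh x y) = (LINT r:{0..T}|lborel. g r * Fi' r)"
    unfolding inner1 set_lebesgue_integral_def G'_def by (simp add: mult_ac)
  have "(LBINT x. LBINT y. hh x y) = (LBINT x. F' x * (Gc T - Gc x))"
  proof (intro Bochner_Integration.integral_cong refl)
    fix x show "(LBINT y. hh x y) = F' x * (Gc T - Gc x)"
      unfolding inner2
    proof (cases "x \<in> {0..T}")
      case True
      then have "T \<in> {0..T}" by auto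
      then show "F' x * (Gi' T - Gi' x) = F' x * (Gc T - Gc x)" using True GcG by simp
    next
      case False then show "F' x * (Gi' T - Gi' x) = F' x * (Gc T - Gc x)" by (simp add: F'_def)
    qed
  qed
  also have "\<dots> = Gc T * (LBINT x. F' x) - (LBINT x. F' x * Gc x)"
    using Fi FGc_int by (simp add: algebra_simps)
  also have "(LBINT x. F' x * Gc x) = (LINT s:{0..T}|lborel. f s * Gi' s)"
    unfolding set_lebesgue_integral_def F'_def using GcG
    by (intro Bochner_Integration.integral_cong) (auto simp: indicator_def)
  finally have R: "(LBINT x. LBINT y. hh x y) = Gc T * (LINT s:{0..T}|lborel. f s) - (LINT s:{0..T}|lborel. f s * Gi' s)"
    unfolding F'_def set_lebesgue_integral_def by simp
  have GT: "Gc T = (LINT r:{0..T}|lborel. g r)"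
  proof (cases "0 \<le> T")
    case True then show ?thesis using GcG[of T] unfolding Gi'_def by simp
  next
    case False
    then have "Gc T = 0" unfolding Gc_def by (intro integral_eq_zero_AE) auto
    moreover have "(LINT r:{0..T}|lborel. g r) = 0" using False unfolding set_lebesgue_integral_def by simp
    ultimately show ?thesis by simp
  qed
  show ?thesis using fub L R GT unfolding Fi'_def Gi'_def by (simp add: mult.commute)
qed


lemma path_cmp:
  fixes Ls Lv R :: "real \<Rightarrow> real" and Ps Pv q :: real
  assumes Lsm: "Ls \<in> borel_measurable borel" and Lvm: "Lv \<in> borel_measurable borel"
    and nn: "\<And>t. 0 \<le> Ls t" "\<And>t. 0 \<le> Lv t" "0 \<le> Ps" "0 \<le> Pv"
    and R: "set_integrable lborel {0..T} R"
    and le: "\<And>t. t \<in> {0..T} \<Longrightarrow> Ls t \<le> Lv t + R t"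
    and P: "Ps + q \<le> Pv"
  shows "(\<integral>\<^sup>+t. ennreal (Ls t) * indicator {0..T} t \<partial>lborel) + ennreal Ps + ennreal (max 0 (q - (LINT t:{0..T}|lborel. R t)))
     \<le> (\<integral>\<^sup>+t. ennreal (Lv t) * indicator {0..T} t \<partial>lborel) + ennreal Pv + ennreal (max 0 (- (q - (LINT t:{0..T}|lborel. R t))))"
proof (cases "(\<integral>\<^sup>+t. ennreal (Lv t) * indicator {0..T} t \<partial>lborel) = \<infinity>")
  case True then show ?thesis by simp
next
  case False
  have [measurable]: "Ls \<in> borel_measurable borel" "Lv \<in> borel_measurable borel" using Lsm Lvm by auto
  have Ri: "integrable lborel (\<lambda>t. indicator {0..T} t * R t)" using R unfolding set_integrable_def by simp
  have eqv: "(\<integral>\<^sup>+t. ennreal (norm (indicator {0..T} t * Lv t)) \<partial>lborel) = (\<integral>\<^sup>+t. ennreal (Lv t) * indicator {0..T} t \<partial>lborel)"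
    using nn by (intro nn_integral_cong) (auto simp: indicator_def)
  have Lvi: "integrable lborel (\<lambda>t. indicator {0..T} t * Lv t)"
    using False eqv by (subst integrable_iff_bounded) (auto simp: top.not_eq_extremum)
  have Lsi: "integrable lborel (\<lambda>t. indicator {0..T} t * Ls t)"
  proof (rule Bochner_Integration.integrable_bound[of _ "\<lambda>t. indicator {0..T} t * Lv t + \<bar>indicator {0..T} t * R t\<bar>"])
    show "integrable lborel (\<lambda>t. indicator {0..T} t * Lv t + \<bar>indicator {0..T} t * R t\<bar>)" using Lvi Ri by auto
    show "(\<lambda>t. indicator {0..T} t * Ls t) \<in> borel_measurable lborel" by measurable
    show "AE t in lborel. norm (indicator {0..T} t * Ls t) \<le> norm (indicator {0..T} t * Lv t + \<bar>indicator {0..T} t * R t\<bar>)"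
    proof (intro AE_I2)
      fix t
      show "norm (indicator {0..T} t * Ls t) \<le> norm (indicator {0..T} t * Lv t + \<bar>indicator {0..T} t * R t\<bar>)"
      proof (cases "t \<in> {0..T}")
        case True
        then have "Ls t \<le> Lv t + \<bar>R t\<bar>" using le[OF True] by linarith
        then show ?thesis using True nn by simp
      qed (simp)
    qed
  qed
  have ile: "(LBINT t. indicator {0..T} t * Ls t) \<le> (LBINT t. indicator {0..T} t * Lv t) + (LBINT t. indicator {0..T} t * R t)"
  proof -
    have "(LBINT t. indicator {0..T} t * Ls t) \<le> (LBINT t. indicator {0..T} t * Lv t + indicator {0..T} t * R t)"
      using Lsi Lvi Ri le by (intro integral_mono) (auto simp: indicator_def)
    also have "\<dots> = (LBINT t. indicator {0..T} t * Lv t) + (LBINT t. indicator {0..T} t * R t)"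
      using Lvi Ri by simp
    finally show ?thesis .
  qed
  have eqs: "(\<integral>\<^sup>+t. ennreal (Ls t) * indicator {0..T} t \<partial>lborel) = ennreal (LBINT t. indicator {0..T} t * Ls t)"
  proof -
    have "(\<integral>\<^sup>+t. ennreal (Ls t) * indicator {0..T} t \<partial>lborel) = (\<integral>\<^sup>+t. ennreal (indicator {0..T} t * Ls t) \<partial>lborel)"
      by (intro nn_integral_cong) (auto simp: indicator_def)
    also have "\<dots> = ennreal (LBINT t. indicator {0..T} t * Ls t)"
      using Lsi nn by (intro nn_integral_eq_integral) auto
    finally show ?thesis .
  qed
  have eqv2: "(\<integral>\<^sup>+t. ennreal (Lv t) * indicator {0..T} t \<partial>lborel) = ennreal (LBINT t. indicator {0..T} t * Lv t)"
  proof -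
    have "(\<integral>\<^sup>+t. ennreal (Lv t) * indicator {0..T} t \<partial>lborel) = (\<integral>\<^sup>+t. ennreal (indicator {0..T} t * Lv t) \<partial>lborel)"
      by (intro nn_integral_cong) (auto simp: indicator_def)
    also have "\<dots> = ennreal (LBINT t. indicator {0..T} t * Lv t)"
      using Lvi nn by (intro nn_integral_eq_integral) auto
    finally show ?thesis .
  qed
  define a where "a = (LBINT t. indicator {0..T} t * Ls t)"
  define b where "b = (LBINT t. indicator {0..T} t * Lv t)"
  define c where "c = q - (LINT t:{0..T}|lborel. R t)"
  have a0: "0 \<le> a" unfolding a_def using nn by (intro integral_nonneg_AE) (auto simp: indicator_def)
  have b0: "0 \<le> b" unfolding b_def using nn by (intro integral_nonneg_AE) (auto simp: indicator_def)
  have "a + Ps + c \<le> b + Pv" using ile P unfolding a_def b_def c_def set_lebesgue_integral_def by simp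
  then have real: "a + Ps + max 0 c \<le> b + Pv + max 0 (- c)" by linarith
  have "ennreal a + ennreal Ps + ennreal (max 0 c) = ennreal (a + Ps + max 0 c)"
    using a0 nn by (simp add: ennreal_plus)
  also have "\<dots> \<le> ennreal (b + Pv + max 0 (- c))" using real by (rule ennreal_leI)
  also have "\<dots> = ennreal b + ennreal Pv + ennreal (max 0 (- c))"
    using b0 nn by (simp add: ennreal_plus)
  finally show ?thesis unfolding eqs eqv2 a_def[symmetric] b_def[symmetric] c_def[symmetric] .
qed


locale ctrlset = bm M W for M :: "'a measure" and W +
  fixes T :: real
  assumes Tpos: "T > 0"
begin

interpretation P: pair_sigma_finite lborel M
  by (intro pair_sigma_finite.intro lborel.sigma_finite_measure_axioms sigma_finite_measure_axioms)

definition cl :: "real \<Rightarrow> real" where "cl t = max 0 (min T t)"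

lemma cl_in: "cl t \<in> {0..T}" unfolding cl_def using Tpos by auto
lemma cl_id: "t \<in> {0..T} \<Longrightarrow> cl t = t" unfolding cl_def by auto
lemma cl_meas[measurable]: "cl \<in> borel_measurable borel" unfolding cl_def by measurable

definition NN :: "(real \<Rightarrow> 'a \<Rightarrow> real) \<Rightarrow> ennreal" where
  "NN p = (\<integral>\<^sup>+\<omega>. (\<integral>\<^sup>+t. ennreal ((p t \<omega>)\<^sup>2) * indicator {0..T} t \<partial>lborel) \<partial>M)"

lemma NN_cong: "(\<And>t \<omega>. t \<in> {0..T} \<Longrightarrow> p t \<omega> = q t \<omega>) \<Longrightarrow> NN p = NN q"
  unfolding NN_def by (intro nn_integral_cong) (auto simp: indicator_def)

lemma HF_meas:
  assumes "p \<in> HF M W T"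
  shows "(\<lambda>z. p (cl (fst z)) (snd z)) \<in> borel_measurable (lborel \<Otimes>\<^sub>M M)"
proof -
  have pm: "(\<lambda>(t, \<omega>). p t \<omega>) \<in> borel_measurable (restrict_space lborel {0..T} \<Otimes>\<^sub>M M)"
    using assms unfolding HF_def by blast
  have g1: "(\<lambda>z. cl (fst z)) \<in> measurable (lborel \<Otimes>\<^sub>M M) (restrict_space lborel {0..T})"
    by (rule measurable_restrict_space2) (use cl_in in auto)
  have g: "(\<lambda>z. (cl (fst z), snd z)) \<in> measurable (lborel \<Otimes>\<^sub>M M) (restrict_space lborel {0..T} \<Otimes>\<^sub>M M)"
    by (rule measurable_Pair[OF g1]) measurable
  from measurable_compose[OF g pm] show ?thesis by simp
qed

lemma HF_adapt:
  assumes "p \<in> HF M W T" "t \<in> {0..T}"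
  shows "p t \<in> borel_measurable (Fm t)"
  using assms unfolding HF_def adapted_to_def Fm_meas_iff by blast

lemma HF_NN: "p \<in> HF M W T \<Longrightarrow> NN p < \<infinity>"
  unfolding HF_def NN_def by blast

lemma prod_L2:
  fixes f :: "real \<times> 'a \<Rightarrow> real"
  assumes fm: "f \<in> borel_measurable (lborel \<Otimes>\<^sub>M M)"
    and fin: "(\<integral>\<^sup>+\<omega>. (\<integral>\<^sup>+t. ennreal ((f (t, \<omega>))\<^sup>2) * indicator {0..T} t \<partial>lborel) \<partial>M) < \<infinity>"
  shows "integrable (lborel \<Otimes>\<^sub>M M) (\<lambda>z. (indicator {0..T} (fst z) * f z)\<^sup>2)"
proof -
  have [measurable]: "f \<in> borel_measurable (lborel \<Otimes>\<^sub>M M)" by (rule fm)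
  have m: "(\<lambda>z. ennreal ((f z)\<^sup>2) * indicator {0..T} (fst z)) \<in> borel_measurable (lborel \<Otimes>\<^sub>M M)" by measurable
  have "(\<integral>\<^sup>+z. ennreal (norm ((indicator {0..T} (fst z) * f z)\<^sup>2)) \<partial>(lborel \<Otimes>\<^sub>M M))
      = (\<integral>\<^sup>+z. ennreal ((f z)\<^sup>2) * indicator {0..T} (fst z) \<partial>(lborel \<Otimes>\<^sub>M M))"
    by (intro nn_integral_cong) (auto simp: indicator_def)
  also have "\<dots> = (\<integral>\<^sup>+\<omega>. (\<integral>\<^sup>+t. ennreal ((f (t, \<omega>))\<^sup>2) * indicator {0..T} t \<partial>lborel) \<partial>M)"
    using P.nn_integral_snd[OF m] by simp
  finally show ?thesis using fin by (subst integrable_iff_bounded) auto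
qed

lemma HF_L2prod:
  assumes "p \<in> HF M W T"
  shows "integrable (lborel \<Otimes>\<^sub>M M) (\<lambda>z. (indicator {0..T} (fst z) * p (cl (fst z)) (snd z))\<^sup>2)"
proof -
  have "NN (\<lambda>t \<omega>. p (cl t) \<omega>) = NN p" using cl_id by (intro NN_cong) auto
  then have "NN (\<lambda>t \<omega>. p (cl t) \<omega>) < \<infinity>" using HF_NN[OF assms] by simp
  then show ?thesis
    using prod_L2[of "\<lambda>z. p (cl (fst z)) (snd z)"] HF_meas[OF assms] unfolding NN_def by simp
qed

lemma ind_int: "integrable (lborel \<Otimes>\<^sub>M M) (\<lambda>z. indicator {0..T} (fst z) :: real)"
proof -
  have "emeasure (lborel \<Otimes>\<^sub>M M) ({0..T} \<times> space M) = emeasure lborel {0..T} * emeasure M (space M)"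
    by (rule emeasure_pair_measure_Times) auto
  then have "emeasure (lborel \<Otimes>\<^sub>M M) ({0..T} \<times> space M) < \<infinity>"
    using Tpos by (simp add: emeasure_space_1)
  then have "integrable (lborel \<Otimes>\<^sub>M M) (indicator ({0..T} \<times> space M) :: real \<times> 'a \<Rightarrow> real)"
    by (intro integrable_real_indicator) auto
  moreover have "integrable (lborel \<Otimes>\<^sub>M M) (\<lambda>z. indicator {0..T} (fst z) :: real) \<longleftrightarrow>
      integrable (lborel \<Otimes>\<^sub>M M) (indicator ({0..T} \<times> space M) :: real \<times> 'a \<Rightarrow> real)"
    by (intro Bochner_Integration.integrable_cong) (auto simp: indicator_def space_pair_measure)
  ultimately show ?thesis by simp
qed

lemma sec_L2:
  fixes f :: "real \<times> 'a \<Rightarrow> real"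
  assumes fm: "f \<in> borel_measurable (lborel \<Otimes>\<^sub>M M)"
    and fin: "(\<integral>\<^sup>+\<omega>. (\<integral>\<^sup>+t. ennreal ((f (t, \<omega>))\<^sup>2) * indicator {0..T} t \<partial>lborel) \<partial>M) < \<infinity>"
  shows "AE \<omega> in M. integrable lborel (\<lambda>t. (indicator {0..T} t * f (t, \<omega>))\<^sup>2)"
proof -
  have [measurable]: "f \<in> borel_measurable (lborel \<Otimes>\<^sub>M M)" by (rule fm)
  have "AE \<omega> in M. (\<integral>\<^sup>+t. ennreal ((f (t, \<omega>))\<^sup>2) * indicator {0..T} t \<partial>lborel) \<noteq> \<infinity>"
    using fin by (intro nn_integral_PInf_AE) auto
  then show ?thesis
  proof (rule AE_mp[OF _ AE_I2], intro impI)
    fix \<omega> assume \<omega>: "\<omega> \<in> space M" and fin: "(\<integral>\<^sup>+t. ennreal ((f (t, \<omega>))\<^sup>2) * indicator {0..T} t \<partial>lborel) \<noteq> \<infinity>"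
    have "(\<integral>\<^sup>+t. ennreal (norm ((indicator {0..T} t * f (t, \<omega>))\<^sup>2)) \<partial>lborel) = (\<integral>\<^sup>+t. ennreal ((f (t, \<omega>))\<^sup>2) * indicator {0..T} t \<partial>lborel)"
      by (intro nn_integral_cong) (auto simp: indicator_def)
    moreover have "(\<lambda>t. (indicator {0..T} t * f (t, \<omega>))\<^sup>2) \<in> borel_measurable lborel" using \<omega> by measurable
    ultimately show "integrable lborel (\<lambda>t. (indicator {0..T} t * f (t, \<omega>))\<^sup>2)"
      using fin by (subst integrable_iff_bounded) (auto simp: top.not_eq_extremum)
  qed
qed

end

locale mainloc = ctrlset M W T + lag L L' \<alpha> \<beta>
  for M :: "'a measure" and W T L L' \<alpha> \<beta> +
  fixes \<Psi> :: "real \<Rightarrow> real" and C x0 :: real and \<theta> X P Z :: "real \<Rightarrow> 'a \<Rightarrow> real"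
  assumes A2_C1: "\<Psi> C1_differentiable_on UNIV"
    and A2_nonneg: "\<And>x. \<Psi> x \<ge> 0"
    and A2_convex: "convex_on UNIV \<Psi>"
    and A7: "C > 0" "\<And>x p. \<bar>Ham_p L x p\<bar> \<le> C * (1 + \<bar>p\<bar>)"
    and varpi: "\<theta> \<in> HF M W T"
    and XPZ: "X \<in> HF M W T" "P \<in> HF M W T" "Z \<in> HF M W T"
    and fwd: "AE \<omega> in M. \<forall>t\<in>{0..T}.
                set_integrable lborel {0..t} (\<lambda>s. Ham_p L (X s \<omega>) (P s \<omega> + \<theta> s \<omega>)) \<and>
                X t \<omega> = x0 - (LINT s:{0..t}|lborel. Ham_p L (X s \<omega>) (P s \<omega> + \<theta> s \<omega>))"
    and bwd: "\<exists>I. ito_integral M W T Z I \<and>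
                (\<forall>t\<in>{0..T}. AE \<omega> in M.
                   set_integrable lborel {0..t} (\<lambda>s. Ham_x L (X s \<omega>) (P s \<omega> + \<theta> s \<omega>)) \<and>
                   P t \<omega> = P 0 \<omega> + (LINT s:{0..t}|lborel. Ham_x L (X s \<omega>) (P s \<omega> + \<theta> s \<omega>)) + I t \<omega>)"
    and terminal: "AE \<omega> in M. P T \<omega> = deriv \<Psi> (X T \<omega>)"
begin

interpretation P: pair_sigma_finite lborel M
  by (intro pair_sigma_finite.intro lborel.sigma_finite_measure_axioms sigma_finite_measure_axioms)

definition vs :: "real \<Rightarrow> 'a \<Rightarrow> real" where
  "vs t \<omega> = - Ham_p L (X t \<omega>) (P t \<omega> + \<theta> t \<omega>)"

lemma vs_eq: "vs t \<omega> = vo (X t \<omega>) (P t \<omega> + \<theta> t \<omega>)"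
  unfolding vs_def Ham_p_eq by simp

lemma Hp_meas: "(\<lambda>z. Ham_p L (fst z) (snd z)) \<in> borel_measurable borel"
  by (rule borel_measurable_continuous_onI[OF Ham_p_cont])

lemma Hx_meas: "(\<lambda>z. Ham_x L (fst z) (snd z)) \<in> borel_measurable borel"
  by (rule borel_measurable_continuous_onI[OF Ham_x_cont])

lemma vs_bound: "(vs t \<omega>)\<^sup>2 \<le> 3 * C\<^sup>2 * (1 + (P t \<omega>)\<^sup>2 + (\<theta> t \<omega>)\<^sup>2)"
proof -
  have "\<bar>vs t \<omega>\<bar> \<le> C * (1 + \<bar>P t \<omega> + \<theta> t \<omega>\<bar>)" unfolding vs_def using A7(2) by simp
  also have "\<dots> \<le> C * (1 + \<bar>P t \<omega>\<bar> + \<bar>\<theta> t \<omega>\<bar>)" using A7(1) by (intro mult_left_mono) auto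
  finally have a: "\<bar>vs t \<omega>\<bar> \<le> C * (1 + \<bar>P t \<omega>\<bar> + \<bar>\<theta> t \<omega>\<bar>)" .
  have "(vs t \<omega>)\<^sup>2 = \<bar>vs t \<omega>\<bar>\<^sup>2" by simp
  also have "\<dots> \<le> (C * (1 + \<bar>P t \<omega>\<bar> + \<bar>\<theta> t \<omega>\<bar>))\<^sup>2" using a by (intro power_mono) auto
  also have "\<dots> = C\<^sup>2 * (1 + \<bar>P t \<omega>\<bar> + \<bar>\<theta> t \<omega>\<bar>)\<^sup>2" by (simp add: power_mult_distrib)
  also have "\<dots> \<le> C\<^sup>2 * (3 * (1 + (P t \<omega>)\<^sup>2 + (\<theta> t \<omega>)\<^sup>2))"
  proof (intro mult_left_mono)
    define a b where "a = \<bar>P t \<omega>\<bar>" and "b = \<bar>\<theta> t \<omega>\<bar>"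
    have "0 \<le> (1 - a)\<^sup>2 + (1 - b)\<^sup>2 + (a - b)\<^sup>2" by simp
    then have "(1 + a + b)\<^sup>2 \<le> 3 * (1 + a\<^sup>2 + b\<^sup>2)" by (simp add: power2_eq_square algebra_simps)
    then show "(1 + \<bar>P t \<omega>\<bar> + \<bar>\<theta> t \<omega>\<bar>)\<^sup>2 \<le> 3 * (1 + (P t \<omega>)\<^sup>2 + (\<theta> t \<omega>)\<^sup>2)" unfolding a_def b_def by simp
  qed simp
  finally show ?thesis by (simp add: algebra_simps)
qed

lemma vs_HF: "vs \<in> HF M W T"
  unfolding HF_def
proof (intro CollectI conjI)
  have Xm: "(\<lambda>(t, \<omega>). X t \<omega>) \<in> borel_measurable (restrict_space lborel {0..T} \<Otimes>\<^sub>M M)"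
    "(\<lambda>(t, \<omega>). P t \<omega>) \<in> borel_measurable (restrict_space lborel {0..T} \<Otimes>\<^sub>M M)"
    "(\<lambda>(t, \<omega>). \<theta> t \<omega>) \<in> borel_measurable (restrict_space lborel {0..T} \<Otimes>\<^sub>M M)"
    using XPZ varpi unfolding HF_def by auto
  have g: "(\<lambda>z. (X (fst z) (snd z), P (fst z) (snd z) + \<theta> (fst z) (snd z))) \<in> borel_measurable (restrict_space lborel {0..T} \<Otimes>\<^sub>M M)"
    using Xm by (simp add: split_beta') measurable
  show "(\<lambda>(t, \<omega>). vs t \<omega>) \<in> borel_measurable (restrict_space lborel {0..T} \<Otimes>\<^sub>M M)"
    using borel_measurable_continuous_on[OF Ham_p_cont g] unfolding vs_def split_beta'
    by (simp add: borel_measurable_uminus)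
  show "adapted_to M W T vs"
    unfolding adapted_to_def
  proof (intro ballI)
    fix t B assume t: "t \<in> {0..T}" and B: "B \<in> sets (borel :: real measure)"
    have "X t \<in> borel_measurable (Fm t)" "P t \<in> borel_measurable (Fm t)" "\<theta> t \<in> borel_measurable (Fm t)"
      using HF_adapt XPZ varpi t by auto
    then have g: "(\<lambda>\<omega>. (X t \<omega>, P t \<omega> + \<theta> t \<omega>)) \<in> borel_measurable (Fm t)" by measurable
    have "vs t \<in> borel_measurable (Fm t)"
      using borel_measurable_continuous_on[OF Ham_p_cont g] unfolding vs_def by simp
    then show "vs t -` B \<inter> space M \<in> std_filtration M W t" using B unfolding Fm_meas_iff by blast
  qed
  define F where "F z = 3 * C\<^sup>2 * (indicator {0..T} (fst z) + (indicator {0..T} (fst z) * P (cl (fst z)) (snd z))\<^sup>2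
     + (indicator {0..T} (fst z) * \<theta> (cl (fst z)) (snd z))\<^sup>2)" for z
  have Fi: "integrable (lborel \<Otimes>\<^sub>M M) F"
    unfolding F_def using ind_int HF_L2prod[OF XPZ(2)] HF_L2prod[OF varpi] by auto
  have Fm: "F \<in> borel_measurable (lborel \<Otimes>\<^sub>M M)" using Fi by auto
  have "(\<integral>\<^sup>+\<omega>. (\<integral>\<^sup>+t. ennreal ((vs t \<omega>)\<^sup>2) * indicator {0..T} t \<partial>lborel) \<partial>M)
     \<le> (\<integral>\<^sup>+\<omega>. (\<integral>\<^sup>+t. ennreal (F (t, \<omega>)) \<partial>lborel) \<partial>M)"
  proof (intro nn_integral_mono)
    fix \<omega> t
    show "ennreal ((vs t \<omega>)\<^sup>2) * indicator {0..T} t \<le> ennreal (F (t, \<omega>))"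
    proof (cases "t \<in> {0..T}")
      case True
      then show ?thesis using vs_bound[of t \<omega>] cl_id[OF True] unfolding F_def by (simp add: ennreal_leI)
    qed simp
  qed
  also have "\<dots> = (\<integral>\<^sup>+z. ennreal (F z) \<partial>(lborel \<Otimes>\<^sub>M M))"
  proof (intro P.nn_integral_snd)
    show "(\<lambda>z. ennreal (F z)) \<in> borel_measurable (lborel \<Otimes>\<^sub>M M)"
      using Fm by (rule measurable_compose) simp
  qed
  also have "\<dots> = ennreal (integral\<^sup>L (lborel \<Otimes>\<^sub>M M) F)"
  proof -
    have F0: "0 \<le> F z" for z unfolding F_def by (intro mult_nonneg_nonneg add_nonneg_nonneg) auto
    show ?thesis using Fi F0 by (intro nn_integral_eq_integral) auto
  qed
  also have "\<dots> < \<infinity>" by simp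
  finally show "(\<integral>\<^sup>+\<omega>. (\<integral>\<^sup>+t. ennreal ((vs t \<omega>)\<^sup>2) * indicator {0..T} t \<partial>lborel) \<partial>M) < \<infinity>" .
qed

end

context mainloc begin

interpretation P: pair_sigma_finite lborel M
  by (intro pair_sigma_finite.intro lborel.sigma_finite_measure_axioms sigma_finite_measure_axioms)

lemma Psi_deriv: "(\<Psi> has_real_derivative deriv \<Psi> x) (at x)"
proof -
  obtain D where D: "\<And>x. (\<Psi> has_vector_derivative D x) (at x)"
    using A2_C1 unfolding C1_differentiable_on_def by blast
  then have "(\<Psi> has_real_derivative D x) (at x)" by (simp add: has_real_derivative_iff_has_vector_derivative)
  moreover then have "deriv \<Psi> x = D x" by (rule DERIV_imp_deriv)
  ultimately show ?thesis by simp
qed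

lemma Psi_tangent: "\<Psi> x + deriv \<Psi> x * (y - x) \<le> \<Psi> y"
proof -
  have "(\<Psi> has_real_derivative deriv \<Psi> x) (at x within UNIV)" using Psi_deriv by simp
  from convex_on_imp_above_tangent[OF A2_convex _ _ _ this]
  have "deriv \<Psi> x * (y - x) \<le> \<Psi> y - \<Psi> x" by simp
  then show ?thesis by linarith
qed

lemma Psi_cont: "continuous_on UNIV \<Psi>"
  using Psi_deriv by (intro continuous_at_imp_continuous_on ballI DERIV_isCont) auto

lemma Psi_meas[measurable]: "\<Psi> \<in> borel_measurable borel"
  by (rule borel_measurable_continuous_onI[OF Psi_cont])

lemma L_meas[measurable]: "(\<lambda>(x, y). L x y) \<in> borel_measurable (borel \<Otimes>\<^sub>M borel)"
  using borel_measurable_continuous_onI[OF Lcont2] by (simp add: borel_prod split_beta')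

lemma Hx2_meas[measurable]: "(\<lambda>(x, y). Ham_x L x y) \<in> borel_measurable (borel \<Otimes>\<^sub>M borel)"
  using Hx_meas by (simp add: borel_prod split_beta')

lemma HF_meas2: "p \<in> HF M W T \<Longrightarrow> (\<lambda>(t, \<omega>). p (cl t) \<omega>) \<in> borel_measurable (lborel \<Otimes>\<^sub>M M)"
  using HF_meas by (simp add: split_beta')

end

lemma LINT_if: "(LINT s:{0..t}|lborel. f s) = (LBINT s. (if 0 \<le> s \<and> s \<le> t then f s else 0))"
  unfolding set_lebesgue_integral_def by (intro Bochner_Integration.integral_cong) (auto simp: indicator_def)

context mainloc begin

interpretation P: pair_sigma_finite lborel M
  by (intro pair_sigma_finite.intro lborel.sigma_finite_measure_axioms sigma_finite_measure_axioms)

lemma combine: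
  fixes lv ls :: "'a \<Rightarrow> ennreal" and c G bs bv :: "'a \<Rightarrow> real"
  assumes m: "lv \<in> borel_measurable M" "ls \<in> borel_measurable M" "c \<in> borel_measurable M"
    and ints: "integrable M G" "integrable M bs" "integrable M bv"
    and EG: "expectation G = 0"
    and ae1: "AE \<omega> in M. ls \<omega> + ennreal (max 0 (c \<omega>)) \<le> lv \<omega> + ennreal (max 0 (- c \<omega>))"
    and ae2: "AE \<omega> in M. c \<omega> = G \<omega> + bs \<omega> - bv \<omega>"
  shows "enn2ereal (\<integral>\<^sup>+\<omega>. ls \<omega> \<partial>M) + ereal (expectation bs) \<le> enn2ereal (\<integral>\<^sup>+\<omega>. lv \<omega> \<partial>M) + ereal (expectation bv)"
proof -
  have ci: "integrable M c"
    using ae2 ints m(3) by (subst integrable_cong_AE[of c _ "\<lambda>\<omega>. G \<omega> + bs \<omega> - bv \<omega>"]) auto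
  have Ec: "expectation c = expectation bs - expectation bv"
  proof -
    have "expectation c = expectation (\<lambda>\<omega>. G \<omega> + bs \<omega> - bv \<omega>)"
      using ae2 ints m(3) by (intro integral_cong_AE) auto
    also have "\<dots> = expectation G + expectation bs - expectation bv" using ints by simp
    finally show ?thesis using EG by simp
  qed
  have cp: "integrable M (\<lambda>\<omega>. max 0 (c \<omega>))" "integrable M (\<lambda>\<omega>. max 0 (- c \<omega>))" using ci by auto
  have Ec2: "expectation c = expectation (\<lambda>\<omega>. max 0 (c \<omega>)) - expectation (\<lambda>\<omega>. max 0 (- c \<omega>))"
  proof -
    have "expectation c = expectation (\<lambda>\<omega>. max 0 (c \<omega>) - max 0 (- c \<omega>))"
      by (intro Bochner_Integration.integral_cong) auto
    then show ?thesis using cp by simp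
  qed
  define a where "a = expectation (\<lambda>\<omega>. max 0 (c \<omega>))"
  define b where "b = expectation (\<lambda>\<omega>. max 0 (- c \<omega>))"
  have ea: "(\<integral>\<^sup>+\<omega>. ennreal (max 0 (c \<omega>)) \<partial>M) = ennreal a"
    unfolding a_def using cp by (intro nn_integral_eq_integral) auto
  have eb: "(\<integral>\<^sup>+\<omega>. ennreal (max 0 (- c \<omega>)) \<partial>M) = ennreal b"
    unfolding b_def using cp by (intro nn_integral_eq_integral) auto
  have a0: "0 \<le> a" "0 \<le> b" unfolding a_def b_def by auto
  have "(\<integral>\<^sup>+\<omega>. ls \<omega> + ennreal (max 0 (c \<omega>)) \<partial>M) = (\<integral>\<^sup>+\<omega>. ls \<omega> \<partial>M) + (\<integral>\<^sup>+\<omega>. ennreal (max 0 (c \<omega>)) \<partial>M)"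
    by (rule nn_integral_add) (use m in auto)
  then have "(\<integral>\<^sup>+\<omega>. ls \<omega> \<partial>M) + ennreal a = (\<integral>\<^sup>+\<omega>. ls \<omega> + ennreal (max 0 (c \<omega>)) \<partial>M)"
    unfolding ea by simp
  also have "\<dots> \<le> (\<integral>\<^sup>+\<omega>. lv \<omega> + ennreal (max 0 (- c \<omega>)) \<partial>M)"
    using ae1 by (rule nn_integral_mono_AE)
  also have "\<dots> = (\<integral>\<^sup>+\<omega>. lv \<omega> \<partial>M) + (\<integral>\<^sup>+\<omega>. ennreal (max 0 (- c \<omega>)) \<partial>M)"
    by (rule nn_integral_add) (use m in auto)
  also have "\<dots> = (\<integral>\<^sup>+\<omega>. lv \<omega> \<partial>M) + ennreal b" unfolding eb ..
  finally have main: "(\<integral>\<^sup>+\<omega>. ls \<omega> \<partial>M) + ennreal a \<le> (\<integral>\<^sup>+\<omega>. lv \<omega> \<partial>M) + ennreal b" .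
  show ?thesis
  proof (cases "(\<integral>\<^sup>+\<omega>. lv \<omega> \<partial>M) = \<infinity>")
    case True then show ?thesis by simp
  next
    case False
    then obtain V where V: "(\<integral>\<^sup>+\<omega>. lv \<omega> \<partial>M) = ennreal V" "0 \<le> V"
      by (cases "(\<integral>\<^sup>+\<omega>. lv \<omega> \<partial>M)") auto
    have "ennreal V + ennreal b = ennreal (V + b)" using V a0 by (simp add: ennreal_plus)
    have "(\<integral>\<^sup>+\<omega>. ls \<omega> \<partial>M) \<le> (\<integral>\<^sup>+\<omega>. ls \<omega> \<partial>M) + ennreal a" by (rule add_increasing2) auto
    also have "\<dots> \<le> ennreal (V + b)" using main V \<open>ennreal V + ennreal b = ennreal (V + b)\<close> by simp
    finally have "(\<integral>\<^sup>+\<omega>. ls \<omega> \<partial>M) \<le> ennreal (V + b)" .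
    then have "(\<integral>\<^sup>+\<omega>. ls \<omega> \<partial>M) \<noteq> \<infinity>" by (auto simp: top_unique)
    then obtain S where S: "(\<integral>\<^sup>+\<omega>. ls \<omega> \<partial>M) = ennreal S" "0 \<le> S"
      by (cases "(\<integral>\<^sup>+\<omega>. ls \<omega> \<partial>M)") auto
    have e1: "ennreal (S + a) = (\<integral>\<^sup>+\<omega>. ls \<omega> \<partial>M) + ennreal a" using S a0 by (simp add: ennreal_plus)
    have e2: "ennreal (V + b) = (\<integral>\<^sup>+\<omega>. lv \<omega> \<partial>M) + ennreal b" using V a0 by (simp add: ennreal_plus)
    have "ennreal (S + a) \<le> ennreal (V + b)" unfolding e1 e2 by (rule main)
    then have "S + a \<le> V + b" using V a0 by (subst (asm) ennreal_le_iff) auto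
    then have "S + expectation bs \<le> V + expectation bv" using Ec Ec2 a_def b_def by linarith
    then show ?thesis using S V by simp
  qed
qed

end

lemma si_if:
  fixes f :: "real \<Rightarrow> real"
  shows "set_integrable lborel {0..T} f \<Longrightarrow> 0 \<le> t \<Longrightarrow> t \<le> T \<Longrightarrow> integrable lborel (\<lambda>s. if 0 \<le> s \<and> s \<le> t then f s else 0)"
proof -
  assume a: "set_integrable lborel {0..T} f" "0 \<le> t" "t \<le> T"
  have "set_integrable lborel {0..t} f" by (rule set_integrable_subset[OF a(1)]) (use a in auto)
  then show ?thesis unfolding set_integrable_def
    by (rule Bochner_Integration.integrable_cong[THEN iffD1, rotated 2]) (auto simp: indicator_def)
qed

lemma LBINT_if_eq:
  fixes f :: "real \<Rightarrow> real"
  shows "(LBINT s. (if 0 \<le> s \<and> s \<le> t then f s else 0)) = (LINT s:{0..t}|lborel. f s)"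
  unfolding set_lebesgue_integral_def by (intro Bochner_Integration.integral_cong) (auto simp: indicator_def)

lemma path_identity:
  fixes a b th p h :: "real \<Rightarrow> real" and x0 T :: real
  assumes T0: "0 \<le> T"
    and ia: "set_integrable lborel {0..T} a" and ib: "set_integrable lborel {0..T} b"
    and ih: "set_integrable lborel {0..T} h"
    and ipd: "set_integrable lborel {0..T} (\<lambda>t. p t * (a t - b t))"
    and ita: "set_integrable lborel {0..T} (\<lambda>t. th t * a t)" and itb: "set_integrable lborel {0..T} (\<lambda>t. th t * b t)"
    and ihD: "set_integrable lborel {0..T} (\<lambda>t. h t * ((x0 + (LBINT s. (if 0 \<le> s \<and> s \<le> t then a s else 0))) - (x0 + (LBINT s. (if 0 \<le> s \<and> s \<le> t then b s else 0)))))"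
  shows "p T * ((x0 + (LBINT s. (if 0 \<le> s \<and> s \<le> T then a s else 0))) - (x0 + (LBINT s. (if 0 \<le> s \<and> s \<le> T then b s else 0))))
      - (LBINT t. indicator {0..T} t * (th t * (a t - b t) + p t * (a t - b t)
           + h t * ((x0 + (LBINT s. (if 0 \<le> s \<and> s \<le> t then a s else 0))) - (x0 + (LBINT s. (if 0 \<le> s \<and> s \<le> t then b s else 0))))))
    = (LBINT r. indicator {0..T} r * ((a r - b r) * ((p T - (LBINT s. (if 0 \<le> s \<and> s \<le> T then h s else 0)))
                                                   - (p r - (LBINT s. (if 0 \<le> s \<and> s \<le> r then h s else 0))))))
      + (LBINT t. indicator {0..T} t * (th t * b t)) - (LBINT t. indicator {0..T} t * (th t * a t))"
proof -
  define II where "II f = (LBINT t. indicator {0..T} t * f t)" for f :: "real \<Rightarrow> real"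
  define SI where "SI f = set_integrable lborel {0..T} f" for f :: "real \<Rightarrow> real"
  have SIi: "SI f \<Longrightarrow> integrable lborel (\<lambda>t. indicator {0..T} t * f t)" for f unfolding SI_def set_integrable_def by simp
  have Int_add: "SI f \<Longrightarrow> SI g \<Longrightarrow> II (\<lambda>t. f t + g t) = II f + II g" for f g
    unfolding II_def using SIi[of f] SIi[of g] by (simp add: distrib_left)
  have Int_diff: "SI f \<Longrightarrow> SI g \<Longrightarrow> II (\<lambda>t. f t - g t) = II f - II g" for f g
    unfolding II_def using SIi[of f] SIi[of g] by (simp add: right_diff_distrib)
  have Int_cm: "II (\<lambda>t. f t * c) = II f * c" for f c
  proof -
    have "II (\<lambda>t. f t * c) = (LBINT t. indicator {0..T} t * f t * c)" unfolding II_def by (simp add: mult.assoc)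
    also have "\<dots> = II f * c" unfolding II_def by (rule integral_mult_left_zero)
    finally show ?thesis .
  qed
  have SI_add: "SI f \<Longrightarrow> SI g \<Longrightarrow> SI (\<lambda>t. f t + g t)" for f g unfolding SI_def by (rule set_integral_add)
  have SI_diff: "SI f \<Longrightarrow> SI g \<Longrightarrow> SI (\<lambda>t. f t - g t)" for f g unfolding SI_def by (rule set_integral_diff)
  have SI_cm: "SI f \<Longrightarrow> SI (\<lambda>t. f t * c)" for f c unfolding SI_def by simp
  define g where "g t = a t - b t" for t
  define D where "D t = (x0 + (LBINT s. (if 0 \<le> s \<and> s \<le> t then a s else 0))) - (x0 + (LBINT s. (if 0 \<le> s \<and> s \<le> t then b s else 0)))" for t
  define A where "A t = (LBINT s. (if 0 \<le> s \<and> s \<le> t then h s else 0))" for t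
  have Sg: "SI g" unfolding g_def SI_def using ia ib by (rule set_integral_diff)
  have Dg: "D t = (LINT s:{0..t}|lborel. g s)" if "0 \<le> t" "t \<le> T" for t
  proof -
    have "D t = (LBINT s. (if 0 \<le> s \<and> s \<le> t then a s else 0)) - (LBINT s. (if 0 \<le> s \<and> s \<le> t then b s else 0))"
      unfolding D_def by simp
    also have "\<dots> = (LBINT s. (if 0 \<le> s \<and> s \<le> t then a s else 0) - (if 0 \<le> s \<and> s \<le> t then b s else 0))"
      using si_if[OF ia that] si_if[OF ib that] by simp
    also have "\<dots> = (LBINT s. (if 0 \<le> s \<and> s \<le> t then g s else 0))"
      unfolding g_def by (intro Bochner_Integration.integral_cong) auto
    finally show ?thesis unfolding LBINT_if_eq .
  qed
  have IntG: "II g = D T" unfolding Dg[OF T0 order_refl] II_def set_lebesgue_integral_def by simp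
  have IntH: "II h = A T" unfolding A_def LBINT_if_eq II_def set_lebesgue_integral_def by simp
  have ibp': "II (\<lambda>r. g r * A r) = II h * II g - II (\<lambda>s. h s * D s)"
  proof -
    have "II (\<lambda>r. g r * A r) = (LINT r:{0..T}|lborel. g r * (LINT s:{0..r}|lborel. h s))"
      unfolding II_def set_lebesgue_integral_def A_def LBINT_if_eq by simp
    also have "\<dots> = (LINT s:{0..T}|lborel. h s) * (LINT r:{0..T}|lborel. g r) - (LINT s:{0..T}|lborel. h s * (LINT r:{0..s}|lborel. g r))"
      using ibp[OF ih Sg[unfolded SI_def]] .
    also have "(LINT s:{0..T}|lborel. h s * (LINT r:{0..s}|lborel. g r)) = II (\<lambda>s. h s * D s)"
      unfolding set_lebesgue_integral_def II_def using Dg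
      by (intro Bochner_Integration.integral_cong) (auto simp: indicator_def set_lebesgue_integral_def)
    finally show ?thesis unfolding II_def set_lebesgue_integral_def by simp
  qed
  have ShD: "SI (\<lambda>t. h t * D t)" using ihD unfolding SI_def D_def .
  have SgA: "SI (\<lambda>r. g r * A r)"
  proof -
    define K where "K = (LBINT s. \<bar>indicator {0..T} s * h s\<bar>)"
    have hi: "integrable lborel (\<lambda>s. indicator {0..T} s * h s)" using ih unfolding set_integrable_def by simp
    have hm[measurable]: "(\<lambda>s. indicator {0..T} s * h s) \<in> borel_measurable borel" using hi by auto
    define Ac where "Ac r = (LBINT s. (if 0 \<le> s \<and> s \<le> r then indicator {0..T} s * h s else 0))" for r
    have Acm[measurable]: "Ac \<in> borel_measurable borel" unfolding Ac_def by measurable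
    have AcA: "A r = Ac r" if "r \<in> {0..T}" for r
      unfolding A_def Ac_def using that by (intro Bochner_Integration.integral_cong) (auto simp: indicator_def)
    have Acb: "\<bar>Ac r\<bar> \<le> K" for r
    proof -
      have ii: "integrable lborel (\<lambda>s. if 0 \<le> s \<and> s \<le> r then indicator {0..T} s * h s else 0)"
        by (rule Bochner_Integration.integrable_bound[OF hi]) (auto intro!: AE_I2)
      have "\<bar>Ac r\<bar> \<le> (LBINT s. norm (if 0 \<le> s \<and> s \<le> r then indicator {0..T} s * h s else 0))"
        unfolding Ac_def using integral_norm_bound[of lborel "\<lambda>s. if 0 \<le> s \<and> s \<le> r then indicator {0..T} s * h s else 0"] by simp
      also have "\<dots> \<le> K" unfolding K_def using ii hi by (intro integral_mono) auto
      finally show ?thesis .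
    qed
    have gi: "integrable lborel (\<lambda>t. indicator {0..T} t * g t)" using SIi[OF Sg] .
    have eq: "(\<lambda>r. indicator {0..T} r * (g r * A r)) = (\<lambda>r. (indicator {0..T} r * g r) * Ac r)"
      by (auto simp: fun_eq_iff indicator_def AcA)
    have "integrable lborel (\<lambda>r. (indicator {0..T} r * g r) * Ac r)"
    proof (rule Bochner_Integration.integrable_bound[of _ "\<lambda>r. \<bar>indicator {0..T} r * g r\<bar> * K"])
      show "integrable lborel (\<lambda>r. \<bar>indicator {0..T} r * g r\<bar> * K)" using gi by auto
      show "(\<lambda>r. indicator {0..T} r * g r * Ac r) \<in> borel_measurable lborel" using gi by measurable
      show "AE r in lborel. norm (indicator {0..T} r * g r * Ac r) \<le> norm (\<bar>indicator {0..T} r * g r\<bar> * K)"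
      proof (intro AE_I2)
        fix r
        have "\<bar>indicator {0..T} r * g r\<bar> * \<bar>Ac r\<bar> \<le> \<bar>indicator {0..T} r * g r\<bar> * K" using Acb by (intro mult_left_mono) auto
        moreover have "0 \<le> K" unfolding K_def by simp
        ultimately show "norm (indicator {0..T} r * g r * Ac r) \<le> norm (\<bar>indicator {0..T} r * g r\<bar> * K)"
          by (simp add: abs_mult)
      qed
    qed
    then show ?thesis unfolding SI_def set_integrable_def using eq by simp
  qed
  have eqG: "(LBINT r. indicator {0..T} r * ((a r - b r) * ((p T - A T) - (p r - A r))))
     = (p T - A T) * II g - II (\<lambda>r. p r * g r) + II (\<lambda>r. g r * A r)"
  proof -
    have "II (\<lambda>r. g r * (p T - A T) - p r * g r + g r * A r) = II (\<lambda>r. g r * (p T - A T) - p r * g r) + II (\<lambda>r. g r * A r)"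
      using SI_diff[OF SI_cm[OF Sg] ipd[folded g_def SI_def]] SgA by (rule Int_add)
    also have "\<dots> = II (\<lambda>r. g r * (p T - A T)) - II (\<lambda>r. p r * g r) + II (\<lambda>r. g r * A r)"
      using SI_cm[OF Sg] ipd[folded g_def SI_def] by (simp add: Int_diff)
    finally have "II (\<lambda>r. g r * (p T - A T) - p r * g r + g r * A r) = (p T - A T) * II g - II (\<lambda>r. p r * g r) + II (\<lambda>r. g r * A r)"
      by (simp add: Int_cm mult.commute)
    moreover have "(LBINT r. indicator {0..T} r * ((a r - b r) * ((p T - A T) - (p r - A r)))) = II (\<lambda>r. g r * (p T - A T) - p r * g r + g r * A r)"
      unfolding II_def g_def by (intro Bochner_Integration.integral_cong) (auto simp: algebra_simps)
    ultimately show ?thesis by simp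
  qed
  have eqR: "(LBINT t. indicator {0..T} t * (th t * (a t - b t) + p t * (a t - b t) + h t * D t))
      = II (\<lambda>t. th t * a t) - II (\<lambda>t. th t * b t) + II (\<lambda>t. p t * g t) + II (\<lambda>t. h t * D t)"
  proof -
    have S1: "SI (\<lambda>t. th t * a t - th t * b t)" using ita itb unfolding SI_def by (rule set_integral_diff)
    have "(LBINT t. indicator {0..T} t * (th t * (a t - b t) + p t * (a t - b t) + h t * D t))
        = II (\<lambda>t. (th t * a t - th t * b t) + p t * g t + h t * D t)"
      unfolding II_def g_def by (simp add: algebra_simps)
    also have "\<dots> = II (\<lambda>t. (th t * a t - th t * b t) + p t * g t) + II (\<lambda>t. h t * D t)"
      using SI_add[OF S1 ipd[folded g_def SI_def]] ShD by (rule Int_add)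
    also have "\<dots> = II (\<lambda>t. th t * a t - th t * b t) + II (\<lambda>t. p t * g t) + II (\<lambda>t. h t * D t)"
      using S1 ipd[folded g_def SI_def] by (simp add: Int_add)
    also have "\<dots> = II (\<lambda>t. th t * a t) - II (\<lambda>t. th t * b t) + II (\<lambda>t. p t * g t) + II (\<lambda>t. h t * D t)"
      using ita itb unfolding SI_def[symmetric] by (simp add: Int_diff)
    finally show ?thesis .
  qed
  have main: "p T * D T - (LBINT t. indicator {0..T} t * (th t * (a t - b t) + p t * (a t - b t) + h t * D t))
      = (LBINT r. indicator {0..T} r * ((a r - b r) * ((p T - A T) - (p r - A r))))
        + II (\<lambda>t. th t * b t) - II (\<lambda>t. th t * a t)"
    unfolding eqG eqR ibp' IntG IntH by (simp add: algebra_simps)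
  show ?thesis using main unfolding D_def A_def II_def .
qed


lemma ind_integrable: "integrable lborel (indicator {0..T} :: real \<Rightarrow> real)"
proof (intro integrable_real_indicator)
  show "emeasure lborel {0..T} < \<infinity>"
    by (cases "0 \<le> T") auto
qed auto

lemma L2_L1:
  fixes f :: "real \<Rightarrow> real"
  assumes fm: "f \<in> borel_measurable borel" and f2: "integrable lborel (\<lambda>t. (indicator {0..T} t * f t)\<^sup>2)"
  shows "set_integrable lborel {0..T} f"
  unfolding set_integrable_def
proof (rule Bochner_Integration.integrable_bound[of _ "\<lambda>t. indicator {0..T} t + (indicator {0..T} t * f t)\<^sup>2"])
  show "integrable lborel (\<lambda>t. indicator {0..T} t + (indicator {0..T} t * f t)\<^sup>2)" using ind_integrable f2 by auto
  show "(\<lambda>t. indicator {0..T} t *\<^sub>R f t) \<in> borel_measurable lborel" using fm by measurable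
  show "AE t in lborel. norm (indicator {0..T} t *\<^sub>R f t) \<le> norm (indicator {0..T} t + (indicator {0..T} t * f t)\<^sup>2)"
  proof (intro AE_I2)
    fix t
    have "\<bar>f t\<bar> \<le> 1 + (f t)\<^sup>2"
    proof (cases "\<bar>f t\<bar> \<le> 1")
      case True then show ?thesis by (simp add: add_increasing2)
    next
      case False
      then have "\<bar>f t\<bar> * 1 \<le> \<bar>f t\<bar> * \<bar>f t\<bar>" by (intro mult_left_mono) auto
      then show ?thesis by (simp add: power2_eq_square abs_mult_self)
    qed
    then show "norm (indicator {0..T} t *\<^sub>R f t) \<le> norm (indicator {0..T} t + (indicator {0..T} t * f t)\<^sup>2)"
      by (auto simp: indicator_def)
  qed
qed

lemma L2_prod:
  fixes f g :: "real \<Rightarrow> real"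
  assumes fm: "f \<in> borel_measurable borel" and gm: "g \<in> borel_measurable borel"
    and f2: "integrable lborel (\<lambda>t. (indicator {0..T} t * f t)\<^sup>2)"
    and g2: "integrable lborel (\<lambda>t. (indicator {0..T} t * g t)\<^sup>2)"
  shows "set_integrable lborel {0..T} (\<lambda>t. f t * g t)"
proof -
  have "integrable lborel (\<lambda>t. (indicator {0..T} t * f t) * (indicator {0..T} t * g t))"
    by (rule L2_mult_integrable[OF _ _ f2 g2]) (use fm gm in measurable)
  moreover have "(\<lambda>t. (indicator {0..T} t * f t) * (indicator {0..T} t * g t)) = (\<lambda>t. indicator {0..T} t *\<^sub>R (f t * g t))"
    by (auto simp: fun_eq_iff indicator_def)
  ultimately show ?thesis unfolding set_integrable_def by simp
qed

lemma L2_diff':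
  fixes f g :: "real \<Rightarrow> real"
  assumes fm: "f \<in> borel_measurable borel" and gm: "g \<in> borel_measurable borel"
    and f2: "integrable lborel (\<lambda>t. (indicator {0..T} t * f t)\<^sup>2)"
    and g2: "integrable lborel (\<lambda>t. (indicator {0..T} t * g t)\<^sup>2)"
  shows "integrable lborel (\<lambda>t. (indicator {0..T} t * (f t - g t))\<^sup>2)"
proof -
  have "integrable lborel (\<lambda>t. (indicator {0..T} t * f t - indicator {0..T} t * g t)\<^sup>2)"
    by (rule L2_diff_sq_integrable[OF _ _ f2 g2]) (use fm gm in measurable)
  then show ?thesis by (simp add: right_diff_distrib)
qed

lemma prim_bound:
  fixes f :: "real \<Rightarrow> real"
  assumes f: "set_integrable lborel {0..T} f" and t: "t \<in> {0..T}"
  shows "\<bar>LBINT s. (if 0 \<le> s \<and> s \<le> t then f s else 0)\<bar> \<le> (LBINT s. \<bar>indicator {0..T} s * f s\<bar>)"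
proof -
  have fi: "integrable lborel (\<lambda>s. indicator {0..T} s * f s)" using f unfolding set_integrable_def by simp
  have ii: "integrable lborel (\<lambda>s. if 0 \<le> s \<and> s \<le> t then f s else 0)" using si_if[OF f] t by auto
  have "\<bar>LBINT s. (if 0 \<le> s \<and> s \<le> t then f s else 0)\<bar> \<le> (LBINT s. norm (if 0 \<le> s \<and> s \<le> t then f s else 0))"
    using integral_norm_bound[of lborel "\<lambda>s. if 0 \<le> s \<and> s \<le> t then f s else 0"] by simp
  also have "\<dots> \<le> (LBINT s. \<bar>indicator {0..T} s * f s\<bar>)"
    using ii fi t by (intro integral_mono) (auto simp: indicator_def)
  finally show ?thesis .
qed

lemma bounded_mult:
  fixes h D :: "real \<Rightarrow> real"
  assumes h: "set_integrable lborel {0..T} h" and Dm: "D \<in> borel_measurable borel"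
    and Db: "\<And>t. t \<in> {0..T} \<Longrightarrow> \<bar>D t\<bar> \<le> K"
  shows "set_integrable lborel {0..T} (\<lambda>t. h t * D t)"
  unfolding set_integrable_def
proof (rule Bochner_Integration.integrable_bound[of _ "\<lambda>t. \<bar>indicator {0..T} t * h t\<bar> * K"])
  have hi: "integrable lborel (\<lambda>t. indicator {0..T} t * h t)" using h unfolding set_integrable_def by simp
  then show "integrable lborel (\<lambda>t. \<bar>indicator {0..T} t * h t\<bar> * K)" by auto
  show "(\<lambda>t. indicator {0..T} t *\<^sub>R (h t * D t)) \<in> borel_measurable lborel"
    using hi Dm by (simp add: mult.assoc[symmetric]) measurable
  show "AE t in lborel. norm (indicator {0..T} t *\<^sub>R (h t * D t)) \<le> norm (\<bar>indicator {0..T} t * h t\<bar> * K)"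
  proof (intro AE_I2)
    fix t
    show "norm (indicator {0..T} t *\<^sub>R (h t * D t)) \<le> norm (\<bar>indicator {0..T} t * h t\<bar> * K)"
    proof (cases "t \<in> {0..T}")
      case True
      have K0: "0 \<le> K" using Db[OF True] by linarith
      have "\<bar>h t\<bar> * \<bar>D t\<bar> \<le> \<bar>h t\<bar> * K" using Db[OF True] by (intro mult_left_mono) auto
      then show ?thesis using True K0 by (simp add: abs_mult)
    qed simp
  qed
qed


context mainloc begin

interpretation P: pair_sigma_finite lborel M
  by (intro pair_sigma_finite.intro lborel.sigma_finite_measure_axioms sigma_finite_measure_axioms)

lemma HF_M: "p \<in> HF M W T \<Longrightarrow> t \<in> {0..T} \<Longrightarrow> p t \<in> borel_measurable M"
  using HF_adapt Fm_sub_M by blast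

lemma main_ineq:
  assumes v: "v \<in> HF M W T"
  shows "cost M T L \<Psi> x0 \<theta> vs \<le> cost M T L \<Psi> x0 \<theta> v"
proof -
  define vc where "vc t \<omega> = v (cl t) \<omega>" for t \<omega>
  define vsc where "vsc t \<omega> = vs (cl t) \<omega>" for t \<omega>
  define Pc where "Pc t \<omega> = P (cl t) \<omega>" for t \<omega>
  define \<theta>c where "\<theta>c t \<omega> = \<theta> (cl t) \<omega>" for t \<omega>
  define Xc where "Xc t \<omega> = X (cl t) \<omega>" for t \<omega>
  have mv[measurable]: "(\<lambda>(t, \<omega>). vc t \<omega>) \<in> borel_measurable (lborel \<Otimes>\<^sub>M M)" unfolding vc_def by (rule HF_meas2[OF v])
  have mvs[measurable]: "(\<lambda>(t, \<omega>). vsc t \<omega>) \<in> borel_measurable (lborel \<Otimes>\<^sub>M M)" unfolding vsc_def by (rule HF_meas2[OF vs_HF])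
  have mP[measurable]: "(\<lambda>(t, \<omega>). Pc t \<omega>) \<in> borel_measurable (lborel \<Otimes>\<^sub>M M)" unfolding Pc_def by (rule HF_meas2[OF XPZ(2)])
  have m\<theta>[measurable]: "(\<lambda>(t, \<omega>). \<theta>c t \<omega>) \<in> borel_measurable (lborel \<Otimes>\<^sub>M M)" unfolding \<theta>c_def by (rule HF_meas2[OF varpi])
  have mX[measurable]: "(\<lambda>(t, \<omega>). Xc t \<omega>) \<in> borel_measurable (lborel \<Otimes>\<^sub>M M)" unfolding Xc_def by (rule HF_meas2[OF XPZ(1)])
  have mP0[measurable]: "P 0 \<in> borel_measurable M" "P T \<in> borel_measurable M"
    using HF_M[OF XPZ(2)] Tpos by auto
  define hc where "hc t \<omega> = Ham_x L (Xc t \<omega>) (Pc t \<omega> + \<theta>c t \<omega>)" for t \<omega>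
  have mh[measurable]: "(\<lambda>(t, \<omega>). hc t \<omega>) \<in> borel_measurable (lborel \<Otimes>\<^sub>M M)" unfolding hc_def by measurable
  define xv where "xv t \<omega> = x0 + (LBINT s. (if 0 \<le> s \<and> s \<le> t then vc s \<omega> else 0))" for t \<omega>
  define xs where "xs t \<omega> = x0 + (LBINT s. (if 0 \<le> s \<and> s \<le> t then vsc s \<omega> else 0))" for t \<omega>
  define A where "A t \<omega> = (LBINT s. (if 0 \<le> s \<and> s \<le> t then hc s \<omega> else 0))" for t \<omega>
  have mxv[measurable]: "(\<lambda>(t, \<omega>). xv t \<omega>) \<in> borel_measurable (lborel \<Otimes>\<^sub>M M)" unfolding xv_def by measurable
  have mxs[measurable]: "(\<lambda>(t, \<omega>). xs t \<omega>) \<in> borel_measurable (lborel \<Otimes>\<^sub>M M)" unfolding xs_def by measurable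
  have mA[measurable]: "(\<lambda>(t, \<omega>). A t \<omega>) \<in> borel_measurable (lborel \<Otimes>\<^sub>M M)" unfolding A_def by measurable
  define \<delta> where "\<delta> t \<omega> = vc t \<omega> - vsc t \<omega>" for t \<omega>
  define J where "J t \<omega> = Pc t \<omega> - P 0 \<omega> - A t \<omega>" for t \<omega>
  have mJ[measurable]: "(\<lambda>(t, \<omega>). J t \<omega>) \<in> borel_measurable (lborel \<Otimes>\<^sub>M M)" unfolding J_def by measurable
  define lv where "lv \<omega> = (\<integral>\<^sup>+t. ennreal (L (xv t \<omega>) (vc t \<omega>)) * indicator {0..T} t \<partial>lborel) + ennreal (\<Psi> (xv T \<omega>))" for \<omega>
  define ls where "ls \<omega> = (\<integral>\<^sup>+t. ennreal (L (xs t \<omega>) (vsc t \<omega>)) * indicator {0..T} t \<partial>lborel) + ennreal (\<Psi> (xs T \<omega>))" for \<omega>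
  define bv where "bv \<omega> = (LBINT t. indicator {0..T} t * (\<theta>c t \<omega> * vc t \<omega>))" for \<omega>
  define bs where "bs \<omega> = (LBINT t. indicator {0..T} t * (\<theta>c t \<omega> * vsc t \<omega>))" for \<omega>
  define R where "R t \<omega> = \<theta>c t \<omega> * \<delta> t \<omega> + Pc t \<omega> * \<delta> t \<omega> + hc t \<omega> * (xv t \<omega> - xs t \<omega>)" for t \<omega>
  define c where "c \<omega> = P T \<omega> * (xv T \<omega> - xs T \<omega>) - (LBINT t. indicator {0..T} t * R t \<omega>)" for \<omega>
  define G where "G \<omega> = (LBINT r. indicator {0..T} r * (\<delta> r \<omega> * (J T \<omega> - J r \<omega>)))" for \<omega>
  have TT: "T \<in> {0..T}" using Tpos by simp
  have cost_gen: "cost M T L \<Psi> x0 \<theta> u = enn2ereal (\<integral>\<^sup>+\<omega>. ((\<integral>\<^sup>+t. ennreal (L (xu t \<omega>) (u (cl t) \<omega>)) * indicator {0..T} t \<partial>lborel) + ennreal (\<Psi> (xu T \<omega>))) \<partial>M)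
      + ereal (expectation (\<lambda>\<omega>. LBINT t. indicator {0..T} t * (\<theta>c t \<omega> * u (cl t) \<omega>)))"
    if xu: "\<And>t \<omega>. xu t \<omega> = x0 + (LBINT s. (if 0 \<le> s \<and> s \<le> t then u (cl s) \<omega> else 0))" for u xu
  proof -
    have st: "state x0 u t \<omega> = xu t \<omega>" if "t \<in> {0..T}" for t \<omega>
      unfolding state_def xu LINT_if using that
      by (intro arg_cong[where f="\<lambda>x. x0 + x"] Bochner_Integration.integral_cong) (auto simp: cl_id)
    have nn: "(\<integral>\<^sup>+\<omega>. ((\<integral>\<^sup>+t. ennreal (L (state x0 u t \<omega>) (u t \<omega>)) * indicator {0..T} t \<partial>lborel) + ennreal (\<Psi> (state x0 u T \<omega>))) \<partial>M)
       = (\<integral>\<^sup>+\<omega>. ((\<integral>\<^sup>+t. ennreal (L (xu t \<omega>) (u (cl t) \<omega>)) * indicator {0..T} t \<partial>lborel) + ennreal (\<Psi> (xu T \<omega>))) \<partial>M)"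
    proof (rule nn_integral_cong)
      fix \<omega>
      have "(\<integral>\<^sup>+t. ennreal (L (state x0 u t \<omega>) (u t \<omega>)) * indicator {0..T} t \<partial>lborel)
          = (\<integral>\<^sup>+t. ennreal (L (xu t \<omega>) (u (cl t) \<omega>)) * indicator {0..T} t \<partial>lborel)"
        by (intro nn_integral_cong) (auto simp: indicator_def st cl_id)
      moreover have "ennreal (\<Psi> (state x0 u T \<omega>)) = ennreal (\<Psi> (xu T \<omega>))" using st[OF TT] by simp
      ultimately show "(\<integral>\<^sup>+t. ennreal (L (state x0 u t \<omega>) (u t \<omega>)) * indicator {0..T} t \<partial>lborel) + ennreal (\<Psi> (state x0 u T \<omega>))
          = (\<integral>\<^sup>+t. ennreal (L (xu t \<omega>) (u (cl t) \<omega>)) * indicator {0..T} t \<partial>lborel) + ennreal (\<Psi> (xu T \<omega>))"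
        by simp
    qed
    have b: "(LINT t:{0..T}|lborel. \<theta> t \<omega> * u t \<omega>) = (LBINT t. indicator {0..T} t * (\<theta>c t \<omega> * u (cl t) \<omega>))" for \<omega>
      unfolding set_lebesgue_integral_def
      by (intro Bochner_Integration.integral_cong) (auto simp: indicator_def \<theta>c_def cl_id)
    show ?thesis unfolding cost_def nn b by simp
  qed
  have cost_v: "cost M T L \<Psi> x0 \<theta> v = enn2ereal (\<integral>\<^sup>+\<omega>. lv \<omega> \<partial>M) + ereal (expectation bv)"
    using cost_gen[of xv v] unfolding lv_def bv_def xv_def vc_def by simp
  have cost_vs: "cost M T L \<Psi> x0 \<theta> vs = enn2ereal (\<integral>\<^sup>+\<omega>. ls \<omega> \<partial>M) + ereal (expectation bs)"
    using cost_gen[of xs vs] unfolding ls_def bs_def xs_def vsc_def by simp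
  have mlv: "lv \<in> borel_measurable M" unfolding lv_def by measurable
  have mls: "ls \<in> borel_measurable M" unfolding ls_def by measurable
  have mc: "c \<in> borel_measurable M" unfolding c_def R_def \<delta>_def by measurable
  have sqv: "integrable (lborel \<Otimes>\<^sub>M M) (\<lambda>z. (indicator {0..T} (fst z) * vc (fst z) (snd z))\<^sup>2)"
    unfolding vc_def by (rule HF_L2prod[OF v])
  have sqvs: "integrable (lborel \<Otimes>\<^sub>M M) (\<lambda>z. (indicator {0..T} (fst z) * vsc (fst z) (snd z))\<^sup>2)"
    unfolding vsc_def by (rule HF_L2prod[OF vs_HF])
  have sq\<theta>: "integrable (lborel \<Otimes>\<^sub>M M) (\<lambda>z. (indicator {0..T} (fst z) * \<theta>c (fst z) (snd z))\<^sup>2)"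
    unfolding \<theta>c_def by (rule HF_L2prod[OF varpi])
  have sq\<delta>: "integrable (lborel \<Otimes>\<^sub>M M) (\<lambda>z. (indicator {0..T} (fst z) * \<delta> (fst z) (snd z))\<^sup>2)"
  proof -
    have "integrable (lborel \<Otimes>\<^sub>M M) (\<lambda>z. (indicator {0..T} (fst z) * vc (fst z) (snd z) - indicator {0..T} (fst z) * vsc (fst z) (snd z))\<^sup>2)"
      by (rule L2_diff_sq_integrable[OF _ _ sqv sqvs]) measurable
    then show ?thesis unfolding \<delta>_def by (simp add: right_diff_distrib)
  qed
  have prodint: "integrable (lborel \<Otimes>\<^sub>M M) (\<lambda>(t, \<omega>). indicator {0..T} t * (f t \<omega> * g t \<omega>))"
    if "(\<lambda>(t, \<omega>). f t \<omega>) \<in> borel_measurable (lborel \<Otimes>\<^sub>M M)" "(\<lambda>(t, \<omega>). g t \<omega>) \<in> borel_measurable (lborel \<Otimes>\<^sub>M M)"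
      "integrable (lborel \<Otimes>\<^sub>M M) (\<lambda>z. (indicator {0..T} (fst z) * f (fst z) (snd z))\<^sup>2)"
      "integrable (lborel \<Otimes>\<^sub>M M) (\<lambda>z. (indicator {0..T} (fst z) * g (fst z) (snd z))\<^sup>2)"
    for f g :: "real \<Rightarrow> 'a \<Rightarrow> real"
  proof -
    note [measurable] = that(1,2)
    have "integrable (lborel \<Otimes>\<^sub>M M) (\<lambda>z. (indicator {0..T} (fst z) * f (fst z) (snd z)) * (indicator {0..T} (fst z) * g (fst z) (snd z)))"
      by (rule L2_mult_integrable[where f="\<lambda>z. indicator {0..T} (fst z) * f (fst z) (snd z)"
            and g="\<lambda>z. indicator {0..T} (fst z) * g (fst z) (snd z)" and M="lborel \<Otimes>\<^sub>M M"])
         (use that(3,4) in \<open>measurable\<close>)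
    moreover have "(\<lambda>z. (indicator {0..T} (fst z) * f (fst z) (snd z)) * (indicator {0..T} (fst z) * g (fst z) (snd z)))
        = (\<lambda>(t, \<omega>). indicator {0..T} t * (f t \<omega> * g t \<omega>))"
      by (auto simp: fun_eq_iff indicator_def)
    ultimately show ?thesis by simp
  qed
  have bvi: "integrable M bv" unfolding bv_def
    using P.integrable_snd[OF prodint[OF m\<theta> mv sq\<theta> sqv]] .
  have bsi: "integrable M bs" unfolding bs_def
    using P.integrable_snd[OF prodint[OF m\<theta> mvs sq\<theta> sqvs]] .
  obtain I where ito: "ito_integral M W T Z I" and bI: "\<forall>t\<in>{0..T}. AE \<omega> in M.
                   set_integrable lborel {0..t} (\<lambda>s. Ham_x L (X s \<omega>) (P s \<omega> + \<theta> s \<omega>)) \<and>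
                   P t \<omega> = P 0 \<omega> + (LINT s:{0..t}|lborel. Ham_x L (X s \<omega>) (P s \<omega> + \<theta> s \<omega>)) + I t \<omega>"
    using bwd by blast
  have Aeq: "(LINT s:{0..t}|lborel. Ham_x L (X s \<omega>) (P s \<omega> + \<theta> s \<omega>)) = A t \<omega>" if "t \<in> {0..T}" for t \<omega>
    unfolding LINT_if A_def hc_def Xc_def Pc_def \<theta>c_def using that
    by (intro Bochner_Integration.integral_cong) (auto simp: cl_id)
  have Jm: "J t \<in> borel_measurable M" for t by measurable
  have JI: "AE \<omega> in M. I t \<omega> = J t \<omega>" if t: "t \<in> {0..T}" for t
  proof -
    have "AE \<omega> in M. P t \<omega> = P 0 \<omega> + (LINT s:{0..t}|lborel. Ham_x L (X s \<omega>) (P s \<omega> + \<theta> s \<omega>)) + I t \<omega>"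
      using bI t by auto
    then show ?thesis
    proof (rule AE_mp[OF _ AE_I2], intro impI)
      fix \<omega> assume "P t \<omega> = P 0 \<omega> + (LINT s:{0..t}|lborel. Ham_x L (X s \<omega>) (P s \<omega> + \<theta> s \<omega>)) + I t \<omega>"
      then show "I t \<omega> = J t \<omega>" unfolding J_def Aeq[OF t] Pc_def cl_id[OF t] by simp
    qed
  qed
  have Zm: "(\<lambda>(t, \<omega>). Z (cl t) \<omega>) \<in> borel_measurable (lborel \<Otimes>\<^sub>M M)" by (rule HF_meas2[OF XPZ(3)])
  have Zf: "(\<integral>\<^sup>+\<omega>. (\<integral>\<^sup>+t. ennreal ((Z t \<omega>)\<^sup>2) * indicator {0..T} t \<partial>lborel) \<partial>M) < \<infinity>"
    using XPZ(3) unfolding HF_def by blast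
  have Zc: "\<And>t \<omega>. t \<in> {0..T} \<Longrightarrow> Z (cl t) \<omega> = Z t \<omega>" by (simp add: cl_id)
  have "\<exists>B. \<forall>r\<in>{0..T}. integrable M (\<lambda>\<omega>. (J r \<omega>)\<^sup>2) \<and> expectation (\<lambda>\<omega>. (J r \<omega>)\<^sup>2) \<le> B"
    by (rule ito_L2(1)[OF ito Zm Zc Zf Jm JI])
  then obtain B where B: "\<And>r. r \<in> {0..T} \<Longrightarrow> integrable M (\<lambda>\<omega>. (J r \<omega>)\<^sup>2) \<and> expectation (\<lambda>\<omega>. (J r \<omega>)\<^sup>2) \<le> B"
    by blast
  have orthJ: "expectation (\<lambda>\<omega>. Y \<omega> * (J T \<omega> - J r \<omega>)) = 0"
    if "r \<in> {0..T}" "Y \<in> borel_measurable (Fm r)" "integrable M (\<lambda>\<omega>. (Y \<omega>)\<^sup>2)" for r Y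
    by (rule ito_L2(2)[OF ito Zm Zc Zf Jm JI that])
  have B0: "0 \<le> B"
  proof -
    have "0 \<le> expectation (\<lambda>\<omega>. (J T \<omega>)\<^sup>2)" by simp
    then show ?thesis using B[OF TT] by linarith
  qed
  have EJ: "(\<integral>\<^sup>+\<omega>. ennreal ((J T \<omega> - J t \<omega>)\<^sup>2) \<partial>M) \<le> ennreal (4 * B)" if t: "t \<in> {0..T}" for t
  proof -
    have iT: "integrable M (\<lambda>\<omega>. (J T \<omega>)\<^sup>2)" "expectation (\<lambda>\<omega>. (J T \<omega>)\<^sup>2) \<le> B" using B[OF TT] by auto
    have it: "integrable M (\<lambda>\<omega>. (J t \<omega>)\<^sup>2)" "expectation (\<lambda>\<omega>. (J t \<omega>)\<^sup>2) \<le> B" using B[OF t] by auto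
    have id: "integrable M (\<lambda>\<omega>. (J T \<omega> - J t \<omega>)\<^sup>2)" by (rule L2_diff_sq_integrable[OF Jm Jm iT(1) it(1)])
    have "(\<integral>\<^sup>+\<omega>. ennreal ((J T \<omega> - J t \<omega>)\<^sup>2) \<partial>M) = ennreal (expectation (\<lambda>\<omega>. (J T \<omega> - J t \<omega>)\<^sup>2))"
      using id by (intro nn_integral_eq_integral) auto
    also have "expectation (\<lambda>\<omega>. (J T \<omega> - J t \<omega>)\<^sup>2) \<le> expectation (\<lambda>\<omega>. 2 * (J T \<omega>)\<^sup>2 + 2 * (J t \<omega>)\<^sup>2)"
    proof (rule integral_mono[OF id])
      show "integrable M (\<lambda>\<omega>. 2 * (J T \<omega>)\<^sup>2 + 2 * (J t \<omega>)\<^sup>2)" using iT it by auto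
      fix \<omega>
      have "0 \<le> (J T \<omega> + J t \<omega>)\<^sup>2" by simp
      then show "(J T \<omega> - J t \<omega>)\<^sup>2 \<le> 2 * (J T \<omega>)\<^sup>2 + 2 * (J t \<omega>)\<^sup>2" by (simp add: power2_eq_square algebra_simps)
    qed
    also have "\<dots> = 2 * expectation (\<lambda>\<omega>. (J T \<omega>)\<^sup>2) + 2 * expectation (\<lambda>\<omega>. (J t \<omega>)\<^sup>2)" using iT it by simp
    also have "\<dots> \<le> 4 * B" using iT it by simp
    finally show ?thesis by (simp add: ennreal_leI)
  qed
  have sqJ: "integrable (lborel \<Otimes>\<^sub>M M) (\<lambda>z. (indicator {0..T} (fst z) * (J T (snd z) - J (fst z) (snd z)))\<^sup>2)"
  proof (subst integrable_iff_bounded, intro conjI)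
    show m: "(\<lambda>z. (indicator {0..T} (fst z) * (J T (snd z) - J (fst z) (snd z)))\<^sup>2) \<in> borel_measurable (lborel \<Otimes>\<^sub>M M)"
      by measurable
    have m2: "(\<lambda>z. ennreal (norm ((indicator {0..T} (fst z) * (J T (snd z) - J (fst z) (snd z)))\<^sup>2))) \<in> borel_measurable (lborel \<Otimes>\<^sub>M M)"
      by measurable
    have "(\<integral>\<^sup>+z. ennreal (norm ((indicator {0..T} (fst z) * (J T (snd z) - J (fst z) (snd z)))\<^sup>2)) \<partial>(lborel \<Otimes>\<^sub>M M))
        = (\<integral>\<^sup>+t. (\<integral>\<^sup>+\<omega>. ennreal (norm ((indicator {0..T} t * (J T \<omega> - J t \<omega>))\<^sup>2)) \<partial>M) \<partial>lborel)"
      using nn_integral_fst[OF m2] by simp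
    also have "\<dots> \<le> (\<integral>\<^sup>+t. ennreal (4 * B) * indicator {0..T} t \<partial>lborel)"
    proof (intro nn_integral_mono)
      fix t
      show "(\<integral>\<^sup>+\<omega>. ennreal (norm ((indicator {0..T} t * (J T \<omega> - J t \<omega>))\<^sup>2)) \<partial>M) \<le> ennreal (4 * B) * indicator {0..T} t"
      proof (cases "t \<in> {0..T}")
        case True then show ?thesis using EJ[OF True] by simp
      qed simp
    qed
    also have "\<dots> = ennreal (4 * B) * ennreal T" using Tpos by (simp add: nn_integral_cmult_indicator)
    also have "\<dots> < \<infinity>" by (simp add: ennreal_mult_less_top)
    finally show "(\<integral>\<^sup>+z. ennreal (norm ((indicator {0..T} (fst z) * (J T (snd z) - J (fst z) (snd z)))\<^sup>2)) \<partial>(lborel \<Otimes>\<^sub>M M)) < \<infinity>" .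
  qed
  have Gprod: "integrable (lborel \<Otimes>\<^sub>M M) (\<lambda>(r, \<omega>). indicator {0..T} r * (\<delta> r \<omega> * (J T \<omega> - J r \<omega>)))"
    by (rule prodint[OF _ _ sq\<delta> sqJ]) (unfold \<delta>_def, measurable)
  have Gi: "integrable M G" unfolding G_def using P.integrable_snd[OF Gprod] .
  have ints: "integrable M G" "integrable M bs" "integrable M bv" using Gi bsi bvi by auto
  have EG: "expectation G = 0"
  proof -
    have "expectation G = (LBINT r. (\<integral>\<omega>. indicator {0..T} r * (\<delta> r \<omega> * (J T \<omega> - J r \<omega>)) \<partial>M))"
      unfolding G_def using P.Fubini_integral[OF Gprod] by simp
    also have "\<dots> = 0"
    proof (rule integral_eq_zero_AE)
      have sq\<delta>': "integrable (lborel \<Otimes>\<^sub>M M) (\<lambda>(r, \<omega>). (indicator {0..T} r * \<delta> r \<omega>)\<^sup>2)"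
        using sq\<delta> by (simp add: split_beta')
      show "AE r in lborel. (\<integral>\<omega>. indicator {0..T} r * (\<delta> r \<omega> * (J T \<omega> - J r \<omega>)) \<partial>M) = 0"
        using P.AE_integrable_fst[OF sq\<delta>']
      proof (rule AE_mp[OF _ AE_I2], intro impI)
        fix r assume ir: "integrable M (\<lambda>\<omega>. (indicator {0..T} r * \<delta> r \<omega>)\<^sup>2)"
        show "(\<integral>\<omega>. indicator {0..T} r * (\<delta> r \<omega> * (J T \<omega> - J r \<omega>)) \<partial>M) = 0"
        proof (cases "r \<in> {0..T}")
          case True
          have ir': "integrable M (\<lambda>\<omega>. (\<delta> r \<omega>)\<^sup>2)" using ir True by simp
          have "\<delta> r = (\<lambda>\<omega>. v r \<omega> - vs r \<omega>)" unfolding \<delta>_def vc_def vsc_def using cl_id[OF True] by auto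
          moreover have "(\<lambda>\<omega>. v r \<omega> - vs r \<omega>) \<in> borel_measurable (Fm r)"
            using HF_adapt[OF v True] HF_adapt[OF vs_HF True] by measurable
          ultimately have "\<delta> r \<in> borel_measurable (Fm r)" by simp
          then have "expectation (\<lambda>\<omega>. \<delta> r \<omega> * (J T \<omega> - J r \<omega>)) = 0" by (rule orthJ[OF True _ ir'])
          then show ?thesis using True by simp
        qed simp
      qed
    qed
    finally show ?thesis .
  qed
  have secfin: "(\<integral>\<^sup>+\<omega>. (\<integral>\<^sup>+t. ennreal ((p (cl t) \<omega>)\<^sup>2) * indicator {0..T} t \<partial>lborel) \<partial>M) < \<infinity>"
    if "p \<in> HF M W T" for p
  proof -
    have "NN (\<lambda>t \<omega>. p (cl t) \<omega>) = NN p" using cl_id by (intro NN_cong) auto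
    then show ?thesis using HF_NN[OF that] unfolding NN_def by simp
  qed
  have secL2: "AE \<omega> in M. integrable lborel (\<lambda>t. (indicator {0..T} t * p (cl t) \<omega>)\<^sup>2)" if "p \<in> HF M W T" for p
    using sec_L2[of "\<lambda>z. p (cl (fst z)) (snd z)"] HF_meas[OF that] secfin[OF that] by simp
  have aeB: "AE \<omega> in M. set_integrable lborel {0..T} (\<lambda>s. Ham_x L (X s \<omega>) (P s \<omega> + \<theta> s \<omega>))"
    using bI TT by auto
  have aeAll: "AE \<omega> in M. (\<forall>t\<in>{0..T}.
                set_integrable lborel {0..t} (\<lambda>s. Ham_p L (X s \<omega>) (P s \<omega> + \<theta> s \<omega>)) \<and>
                X t \<omega> = x0 - (LINT s:{0..t}|lborel. Ham_p L (X s \<omega>) (P s \<omega> + \<theta> s \<omega>)))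
     \<and> set_integrable lborel {0..T} (\<lambda>s. Ham_x L (X s \<omega>) (P s \<omega> + \<theta> s \<omega>))
     \<and> P T \<omega> = deriv \<Psi> (X T \<omega>)
     \<and> integrable lborel (\<lambda>t. (indicator {0..T} t * vc t \<omega>)\<^sup>2)
     \<and> integrable lborel (\<lambda>t. (indicator {0..T} t * vsc t \<omega>)\<^sup>2)
     \<and> integrable lborel (\<lambda>t. (indicator {0..T} t * \<theta>c t \<omega>)\<^sup>2)
     \<and> integrable lborel (\<lambda>t. (indicator {0..T} t * Pc t \<omega>)\<^sup>2)"
    using fwd aeB terminal secL2[OF v] secL2[OF vs_HF] secL2[OF varpi] secL2[OF XPZ(2)]
    unfolding vc_def vsc_def \<theta>c_def Pc_def by eventually_elim blast
  have pw: "ls \<omega> + ennreal (max 0 (c \<omega>)) \<le> lv \<omega> + ennreal (max 0 (- c \<omega>)) \<and> c \<omega> = G \<omega> + bs \<omega> - bv \<omega>"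
    if \<omega>: "\<omega> \<in> space M" and
      F: "\<forall>t\<in>{0..T}.
                set_integrable lborel {0..t} (\<lambda>s. Ham_p L (X s \<omega>) (P s \<omega> + \<theta> s \<omega>)) \<and>
                X t \<omega> = x0 - (LINT s:{0..t}|lborel. Ham_p L (X s \<omega>) (P s \<omega> + \<theta> s \<omega>))"
      and HB: "set_integrable lborel {0..T} (\<lambda>s. Ham_x L (X s \<omega>) (P s \<omega> + \<theta> s \<omega>))"
      and TR: "P T \<omega> = deriv \<Psi> (X T \<omega>)"
      and Lv2: "integrable lborel (\<lambda>t. (indicator {0..T} t * vc t \<omega>)\<^sup>2)"
      and Ls2: "integrable lborel (\<lambda>t. (indicator {0..T} t * vsc t \<omega>)\<^sup>2)"
      and Lt2: "integrable lborel (\<lambda>t. (indicator {0..T} t * \<theta>c t \<omega>)\<^sup>2)"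
      and Lp2: "integrable lborel (\<lambda>t. (indicator {0..T} t * Pc t \<omega>)\<^sup>2)"
    for \<omega>
  proof -
    have mvw[measurable]: "(\<lambda>t. vc t \<omega>) \<in> borel_measurable borel" using \<omega> by measurable
    have mvsw[measurable]: "(\<lambda>t. vsc t \<omega>) \<in> borel_measurable borel" using \<omega> by measurable
    have mtw[measurable]: "(\<lambda>t. \<theta>c t \<omega>) \<in> borel_measurable borel" using \<omega> by measurable
    have mpw[measurable]: "(\<lambda>t. Pc t \<omega>) \<in> borel_measurable borel" using \<omega> by measurable
    have mhw[measurable]: "(\<lambda>t. hc t \<omega>) \<in> borel_measurable borel" using \<omega> by measurable
    have mxvw[measurable]: "(\<lambda>t. xv t \<omega>) \<in> borel_measurable borel" using \<omega> by measurable
    have mxsw[measurable]: "(\<lambda>t. xs t \<omega>) \<in> borel_measurable borel" using \<omega> by measurable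
    have ia: "set_integrable lborel {0..T} (\<lambda>t. vc t \<omega>)" by (rule L2_L1[OF mvw Lv2])
    have ib: "set_integrable lborel {0..T} (\<lambda>t. vsc t \<omega>)" by (rule L2_L1[OF mvsw Ls2])
    have ih: "set_integrable lborel {0..T} (\<lambda>t. hc t \<omega>)"
      using HB by (rule set_integrable_cong[THEN iffD1, rotated -1]) (auto simp: hc_def Xc_def Pc_def \<theta>c_def cl_id)
    have Ld2: "integrable lborel (\<lambda>t. (indicator {0..T} t * (vc t \<omega> - vsc t \<omega>))\<^sup>2)"
      by (rule L2_diff'[OF mvw mvsw Lv2 Ls2])
    have ipd: "set_integrable lborel {0..T} (\<lambda>t. Pc t \<omega> * (vc t \<omega> - vsc t \<omega>))"
      by (rule L2_prod[OF mpw _ Lp2 Ld2]) measurable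
    have ita: "set_integrable lborel {0..T} (\<lambda>t. \<theta>c t \<omega> * vc t \<omega>)" by (rule L2_prod[OF mtw mvw Lt2 Lv2])
    have itb: "set_integrable lborel {0..T} (\<lambda>t. \<theta>c t \<omega> * vsc t \<omega>)" by (rule L2_prod[OF mtw mvsw Lt2 Ls2])
    define Kv where "Kv = (LBINT s. \<bar>indicator {0..T} s * vc s \<omega>\<bar>)"
    define Ks where "Ks = (LBINT s. \<bar>indicator {0..T} s * vsc s \<omega>\<bar>)"
    have Db: "\<bar>xv t \<omega> - xs t \<omega>\<bar> \<le> Kv + Ks" if "t \<in> {0..T}" for t
      using prim_bound[OF ia that] prim_bound[OF ib that] unfolding xv_def xs_def Kv_def Ks_def by linarith
    have ihD: "set_integrable lborel {0..T} (\<lambda>t. hc t \<omega> * (xv t \<omega> - xs t \<omega>))"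
      by (rule bounded_mult[OF ih _ Db]) measurable
    have xsX: "xs t \<omega> = X t \<omega>" if t: "t \<in> {0..T}" for t
    proof -
      have "xs t \<omega> = x0 + (LBINT s. (if 0 \<le> s \<and> s \<le> t then - Ham_p L (X s \<omega>) (P s \<omega> + \<theta> s \<omega>) else 0))"
        unfolding xs_def vsc_def vs_def using t by (intro arg_cong[where f="\<lambda>x. x0 + x"] Bochner_Integration.integral_cong) (auto simp: cl_id)
      also have "\<dots> = x0 - (LBINT s. (if 0 \<le> s \<and> s \<le> t then Ham_p L (X s \<omega>) (P s \<omega> + \<theta> s \<omega>) else 0))"
      proof -
        have "(\<lambda>s. if 0 \<le> s \<and> s \<le> t then - Ham_p L (X s \<omega>) (P s \<omega> + \<theta> s \<omega>) else 0)
            = (\<lambda>s. - (if 0 \<le> s \<and> s \<le> t then Ham_p L (X s \<omega>) (P s \<omega> + \<theta> s \<omega>) else 0))" by auto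
        then show ?thesis by simp
      qed
      also have "\<dots> = X t \<omega>" using F t unfolding LBINT_if_eq by auto
      finally show ?thesis .
    qed
    have key: "L (xs t \<omega>) (vsc t \<omega>) \<le> L (xv t \<omega>) (vc t \<omega>) + R t \<omega>" if t: "t \<in> {0..T}" for t
    proof -
      have k: "L (X t \<omega>) (vo (X t \<omega>) (P t \<omega> + \<theta> t \<omega>)) + (P t \<omega> + \<theta> t \<omega>) * vo (X t \<omega>) (P t \<omega> + \<theta> t \<omega>)
          - Ham_x L (X t \<omega>) (P t \<omega> + \<theta> t \<omega>) * (xv t \<omega> - X t \<omega>) \<le> L (xv t \<omega>) (vc t \<omega>) + (P t \<omega> + \<theta> t \<omega>) * vc t \<omega>"
        by (rule key_ineq)
      have e1: "vo (X t \<omega>) (P t \<omega> + \<theta> t \<omega>) = vsc t \<omega>" unfolding vsc_def vs_eq cl_id[OF t] ..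
      have e2: "Ham_x L (X t \<omega>) (P t \<omega> + \<theta> t \<omega>) = hc t \<omega>" unfolding hc_def Xc_def Pc_def \<theta>c_def cl_id[OF t] ..
      have e3: "Pc t \<omega> = P t \<omega>" "\<theta>c t \<omega> = \<theta> t \<omega>" unfolding Pc_def \<theta>c_def cl_id[OF t] by auto
      have k': "L (X t \<omega>) (vsc t \<omega>) + (P t \<omega> + \<theta> t \<omega>) * vsc t \<omega> - hc t \<omega> * (xv t \<omega> - X t \<omega>)
          \<le> L (xv t \<omega>) (vc t \<omega>) + (P t \<omega> + \<theta> t \<omega>) * vc t \<omega>" using k unfolding e1 e2 .
      show ?thesis using k' unfolding xsX[OF t] R_def \<delta>_def e3 by (simp add: algebra_simps)
    qed
    have RI: "set_integrable lborel {0..T} (\<lambda>t. R t \<omega>)"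
    proof -
      have "set_integrable lborel {0..T} (\<lambda>t. (\<theta>c t \<omega> * vc t \<omega> - \<theta>c t \<omega> * vsc t \<omega>) + Pc t \<omega> * (vc t \<omega> - vsc t \<omega>) + hc t \<omega> * (xv t \<omega> - xs t \<omega>))"
        using ita itb ipd ihD by (intro set_integral_add set_integral_diff) auto
      then show ?thesis unfolding R_def \<delta>_def by (simp add: algebra_simps)
    qed
    have Psi: "\<Psi> (xs T \<omega>) + P T \<omega> * (xv T \<omega> - xs T \<omega>) \<le> \<Psi> (xv T \<omega>)"
      using Psi_tangent[of "xs T \<omega>" "xv T \<omega>"] TR xsX[OF TT] by simp
    have cR: "c \<omega> = P T \<omega> * (xv T \<omega> - xs T \<omega>) - (LINT t:{0..T}|lborel. R t \<omega>)"
      unfolding c_def set_lebesgue_integral_def by simp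
    have "(\<integral>\<^sup>+t. ennreal (L (xs t \<omega>) (vsc t \<omega>)) * indicator {0..T} t \<partial>lborel) + ennreal (\<Psi> (xs T \<omega>))
          + ennreal (max 0 (P T \<omega> * (xv T \<omega> - xs T \<omega>) - (LINT t:{0..T}|lborel. R t \<omega>)))
        \<le> (\<integral>\<^sup>+t. ennreal (L (xv t \<omega>) (vc t \<omega>)) * indicator {0..T} t \<partial>lborel) + ennreal (\<Psi> (xv T \<omega>))
          + ennreal (max 0 (- (P T \<omega> * (xv T \<omega> - xs T \<omega>) - (LINT t:{0..T}|lborel. R t \<omega>))))"
      by (rule path_cmp[OF _ _ _ _ _ _ RI key Psi]) (auto simp: Lnn A2_nonneg)
    then have I1: "ls \<omega> + ennreal (max 0 (c \<omega>)) \<le> lv \<omega> + ennreal (max 0 (- c \<omega>))"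
      unfolding ls_def lv_def cR .
    have I2: "c \<omega> = G \<omega> + bs \<omega> - bv \<omega>"
    proof -
      have PT: "Pc T \<omega> = P T \<omega>" unfolding Pc_def cl_id[OF TT] ..
      have "c \<omega> = (LBINT r. indicator {0..T} r * ((vc r \<omega> - vsc r \<omega>) * ((Pc T \<omega> - A T \<omega>) - (Pc r \<omega> - A r \<omega>))))
          + bs \<omega> - bv \<omega>"
        using path_identity[OF _ ia ib ih ipd ita itb, of x0] ihD Tpos PT
        unfolding c_def R_def \<delta>_def xv_def xs_def A_def bs_def bv_def by simp
      also have "(LBINT r. indicator {0..T} r * ((vc r \<omega> - vsc r \<omega>) * ((Pc T \<omega> - A T \<omega>) - (Pc r \<omega> - A r \<omega>)))) = G \<omega>"
        unfolding G_def J_def \<delta>_def by (intro Bochner_Integration.integral_cong) (auto simp: algebra_simps)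
      finally show ?thesis .
    qed
    show ?thesis using I1 I2 by blast
  qed
  have ae1: "AE \<omega> in M. ls \<omega> + ennreal (max 0 (c \<omega>)) \<le> lv \<omega> + ennreal (max 0 (- c \<omega>))"
    using aeAll by (rule AE_mp[OF _ AE_I2]) (use pw in blast)
  have ae2: "AE \<omega> in M. c \<omega> = G \<omega> + bs \<omega> - bv \<omega>"
    using aeAll by (rule AE_mp[OF _ AE_I2]) (use pw in blast)
  show ?thesis unfolding cost_v cost_vs by (rule combine[OF mlv mls mc ints EG ae1 ae2])
qed

end

theorem proposition3p7:
  fixes M :: "'a measure" and W :: "real \<Rightarrow> 'a \<Rightarrow> real" and T :: real
    and L :: "real \<Rightarrow> real \<Rightarrow> real" and \<Psi> :: "real \<Rightarrow> real"
    and \<alpha> \<beta> C x0 :: real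
    and \<theta> X P Z :: "real \<Rightarrow> 'a \<Rightarrow> real"
  assumes T_pos: "T > 0"
    and complete: "complete_measure M"
    and BM: "brownian_motion M W"
    \<comment> \<open>(A1)\<close>
    and A1_C1: "\<exists>L'. (\<forall>z. ((\<lambda>z. L (fst z) (snd z)) has_derivative blinfun_apply (L' z)) (at z))
                    \<and> continuous_on UNIV L'"
    and A1_nonneg: "\<And>x v. L x v \<ge> 0"
    and A1_convex: "convex_on UNIV (\<lambda>z. L (fst z) (snd z))"
    \<comment> \<open>(A2)\<close>
    and A2_C1: "\<Psi> C1_differentiable_on UNIV"
    and A2_nonneg: "\<And>x. \<Psi> x \<ge> 0"
    and A2_convex: "convex_on UNIV \<Psi>"
    \<comment> \<open>(A5)\<close>
    and A5: "\<alpha> > 0" "\<beta> \<ge> 0" "\<And>x v. \<alpha> * v\<^sup>2 - \<beta> \<le> L x v"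
    \<comment> \<open>(A7)\<close>
    and A7: "C > 0" "\<And>x p. \<bar>Ham_p L x p\<bar> \<le> C * (1 + \<bar>p\<bar>)"
    \<comment> \<open>strict convexity of L in v\<close>
    and strict: "\<And>x u w t. u \<noteq> w \<Longrightarrow> 0 < t \<Longrightarrow> t < 1 \<Longrightarrow>
                   L x (t * u + (1 - t) * w) < t * L x u + (1 - t) * L x w"
    and varpi: "\<theta> \<in> HF M W T"
    and XPZ: "X \<in> HF M W T" "P \<in> HF M W T" "Z \<in> HF M W T"
    \<comment> \<open>forward equation dX = -H_p(X, P + varpi) dt, X_0 = x0\<close>
    and fwd: "AE \<omega> in M. \<forall>t\<in>{0..T}.
                set_integrable lborel {0..t} (\<lambda>s. Ham_p L (X s \<omega>) (P s \<omega> + \<theta> s \<omega>)) \<and>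
                X t \<omega> = x0 - (LINT s:{0..t}|lborel. Ham_p L (X s \<omega>) (P s \<omega> + \<theta> s \<omega>))"
    \<comment> \<open>backward equation dP = H_x(X, P + varpi) dt + Z dW, P_T = Psi'(X_T)\<close>
    and bwd: "\<exists>I. ito_integral M W T Z I \<and>
                (\<forall>t\<in>{0..T}. AE \<omega> in M.
                   set_integrable lborel {0..t} (\<lambda>s. Ham_x L (X s \<omega>) (P s \<omega> + \<theta> s \<omega>)) \<and>
                   P t \<omega> = P 0 \<omega> + (LINT s:{0..t}|lborel. Ham_x L (X s \<omega>) (P s \<omega> + \<theta> s \<omega>)) + I t \<omega>)"
    and terminal: "AE \<omega> in M. P T \<omega> = deriv \<Psi> (X T \<omega>)"
  shows "(\<lambda>t \<omega>. - Ham_p L (X t \<omega>) (P t \<omega> + \<theta> t \<omega>)) \<in> HF M W T \<and>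
         (\<forall>v \<in> HF M W T. cost M T L \<Psi> x0 \<theta> (\<lambda>t \<omega>. - Ham_p L (X t \<omega>) (P t \<omega> + \<theta> t \<omega>))
                           \<le> cost M T L \<Psi> x0 \<theta> v)"
proof -
  obtain L' where L': "\<forall>z. ((\<lambda>z. L (fst z) (snd z)) has_derivative blinfun_apply (L' z)) (at z)"
    "continuous_on UNIV L'" using A1_C1 by blast
  interpret mainloc M W T L L' \<alpha> \<beta> \<Psi> C x0 \<theta> X P Z
  proof (unfold_locales)
    show "brownian_motion M W" by (rule BM)
    show "0 < T" by (rule T_pos)
    show "\<And>z. ((\<lambda>z. L (fst z) (snd z)) has_derivative blinfun_apply (L' z)) (at z)" using L'(1) by blast
    show "continuous_on UNIV L'" by (rule L'(2))
  qed (use A1_nonneg A1_convex A5 strict A2_C1 A2_nonneg A2_convex A7 varpi XPZ fwd bwd terminal in auto)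
  show ?thesis using vs_HF main_ineq unfolding vs_def by blast
qed

end
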